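(* Let $(\mathfrak g_1,J_1,\omega_1)$ be a hermitian Lie algebra, let $(\mathfrak g_2,J_2,\omega_2)$ be a hermitian abelian Lie algebra (i.e. $\mathfrak g_2$ has zero bracket, $J_2$ is a complex structure on the vector space $\mathfrak g_2$ and $\omega_2$ a hermitian form for it), and let $\theta:\mathfrak g_1\to\mathrm{End}(\mathfrak g_2)$ be a representation. Form the semidirect product Lie algebra $\mathfrak g=\mathfrak g_1\ltimes_\theta\mathfrak g_2$ (bracket of $\mathfrak g_1$ on $\mathfrak g_1$, $[X,Z]=\theta(X)Z$ for $X\in\mathfrak g_1$, $Z\in\mathfrak g_2$, and $[\mathfrak g_2,\mathfrak g_2]=0$), with $J=J_1\oplus J_2$ and $\omega=\omega_1\oplus\omega_2$. Define $P_\theta\in\mathrm{End}(\mathfrak g_1)$ by $$\omega_1(P_\theta X,Y)=-\tfrac12\operatorname{tr}\big(J_2\theta([X,Y])\big)+\tfrac12\operatorname{tr}\big(\theta(J_1[X,Y])\big),\qquad X,Y\in\mathfrak g_1,$$ and let $P_1$ be the Chern-Ricci operator of $(\mathfrak g_1,J_1,\omega_1)$. Suppose that (1) $[\theta(J_1X),J_2]=J_2[\theta(X),J_2]$ for all $X\in\mathfrak g_1$, and (2) $P_1=cI-P_\theta$ for some $c\in\mathbb R$. Then $(\mathfrak g,J,\omega)$ is a hermitian Lie algebra which is a Chern-Ricci soliton, with Chern-Ricci operator $P$ satisfying $P|_{\mathfrak g_1}=cI$ and $P|_{\mathfrak g_2}=0$. Conversely, every Chern-Ricci soliton $(\mathfrak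 g,J,\omega)$ can be constructed in this way from such data $(\mathfrak g_1,J_1,\omega_1)$, $(\mathfrak g_2,J_2,\omega_2)$, $\theta$ satisfying (1) and (2). Moreover, the constructed $(\mathfrak g,J,\omega)$ is Kähler (and hence a Kähler-Ricci soliton) if and only if $\omega_1$ is closed (i.e. $(\mathfrak g_1,J_1,\omega_1)$ is Kähler) and $\theta(\mathfrak g_1)\subset\mathfrak{sp}(\mathfrak g_2,\omega_2)$, i.e. $\theta(X)^t=J_2\theta(X)J_2$ for all $X\in\mathfrak g_1$.
   Context: A hermitian Lie algebra $(\mathfrak g,J,\omega)$ consists of a real Lie algebra $\mathfrak g$ (of even dimension), a linear map $J$ with $J^2=-I$ which is integrable, i.e. $[JX,JY]=[X,Y]+J[JX,Y]+J[X,JY]$ for all $X,Y\in\mathfrak g$, and a nondegenerate 2-form $\omega$ with $\omega(J\cdot,J\cdot)=\omega$ such that $g=\omega(\cdot,J\cdot)$ is an inner product; it corresponds to a left-invariant hermitian structure on the simply connected Lie group with Lie algebra $\mathfrak g$. Its Chern-Ricci form is $p(X,Y)=-\tfrac12\operatorname{tr}(J\,\mathrm{ad}_{[X,Y]})+\tfrac12\operatorname{tr}(\mathrm{ad}_{J[X,Y]})$ and its Chern-Ricci operator $P$ is defined by $p=\omega(P\cdot,\cdot)$. $(\mathfrak g,J,\omega)$ is a Chern-Ricci soliton if $P=cI+\tfrac12(D+D^t)$ for some $c\in\mathbb R$ and some derivation $D$ of $\mathfrak g$ with $DJ=JD$, where $D^t$ is the transpose with respect to $g$. Transposes in $\mathfrak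 g_2$ are with respect to $\omega_2(\cdot,J_2\cdot)$; $\mathfrak{sp}(\mathfrak g_2,\omega_2)$ is the Lie algebra of $\omega_2$-skew endomorphisms. *)

theory Defs
  imports Complex_Main
begin

text \<open>A finite-dimensional real vector space of dimension n is modelled
as the set fvec n of functions nat => real vanishing at all indices >= n (i.e. R^n).
All maps are only required to behave well on these carriers.\<close>

type_synonym vec = "nat \<Rightarrow> real"

definition fvec :: "nat \<Rightarrow> vec set" where
  "fvec n = {v. \<forall>i\<ge>n. v i = 0}"

definition vzero :: vec where "vzero = (\<lambda>i. 0)"
definition vadd :: "vec \<Rightarrow> vec \<Rightarrow> vec" where "vadd v w = (\<lambda>i. v i + w i)"
definition vsub :: "vec \<Rightarrow> vec \<Rightarrow> vec" where "vsub v w = (\<lambda>i. v i - w i)"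
definition vsmul :: "real \<Rightarrow> vec \<Rightarrow> vec" where "vsmul a v = (\<lambda>i. a * v i)"

definition ebas :: "nat \<Rightarrow> vec" where
  "ebas k = (\<lambda>i. if i = k then 1 else 0)"

definition lin_on :: "nat \<Rightarrow> nat \<Rightarrow> (vec \<Rightarrow> vec) \<Rightarrow> bool" where
  "lin_on n m f \<longleftrightarrow>
     (\<forall>x\<in>fvec n. f x \<in> fvec m) \<and>
     (\<forall>x\<in>fvec n. \<forall>y\<in>fvec n. f (vadd x y) = vadd (f x) (f y)) \<and>
     (\<forall>a. \<forall>x\<in>fvec n. f (vsmul a x) = vsmul a (f x))"

definition bilin_on :: "nat \<Rightarrow> (vec \<Rightarrow> vec \<Rightarrow> real) \<Rightarrow> bool" where
  "bilin_on n b \<longleftrightarrow>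
     (\<forall>x\<in>fvec n. \<forall>y\<in>fvec n. \<forall>z\<in>fvec n. b (vadd x y) z = b x z + b y z \<and> b z (vadd x y) = b z x + b z y) \<and>
     (\<forall>a. \<forall>x\<in>fvec n. \<forall>y\<in>fvec n. b (vsmul a x) y = a * b x y \<and> b x (vsmul a y) = a * b x y)"

definition tr :: "nat \<Rightarrow> (vec \<Rightarrow> vec) \<Rightarrow> real" where
  "tr n A = (\<Sum>i<n. A (ebas i) i)"

definition lie_algebra :: "nat \<Rightarrow> (vec \<Rightarrow> vec \<Rightarrow> vec) \<Rightarrow> bool" where
  "lie_algebra n br \<longleftrightarrow>
     (\<forall>x\<in>fvec n. lin_on n n (br x)) \<and>
     (\<forall>x\<in>fvec n. \<forall>y\<in>fvec n. br x y = vsmul (-1) (br y x)) \<and>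
     (\<forall>x\<in>fvec n. \<forall>y\<in>fvec n. \<forall>z\<in>fvec n.
        vadd (br x (br y z)) (vadd (br y (br z x)) (br z (br x y))) = vzero)"

definition metric :: "(vec \<Rightarrow> vec \<Rightarrow> real) \<Rightarrow> (vec \<Rightarrow> vec) \<Rightarrow> vec \<Rightarrow> vec \<Rightarrow> real" where
  "metric \<omega> J x y = \<omega> x (J y)"

definition hermitian_lie :: "nat \<Rightarrow> (vec \<Rightarrow> vec \<Rightarrow> vec) \<Rightarrow> (vec \<Rightarrow> vec) \<Rightarrow> (vec \<Rightarrow> vec \<Rightarrow> real) \<Rightarrow> bool" where
  "hermitian_lie n br J \<omega> \<longleftrightarrow>
     even n \<and> lie_algebra n br \<and>
     lin_on n n J \<and> (\<forall>x\<in>fvec n. J (J x) = vsmul (-1) x) \<and>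
     (\<forall>x\<in>fvec n. \<forall>y\<in>fvec n.
        br (J x) (J y) = vadd (br x y) (vadd (J (br (J x) y)) (J (br x (J y))))) \<and>
     bilin_on n \<omega> \<and> (\<forall>x\<in>fvec n. \<forall>y\<in>fvec n. \<omega> x y = - \<omega> y x) \<and>
     (\<forall>x\<in>fvec n. (\<forall>y\<in>fvec n. \<omega> x y = 0) \<longrightarrow> x = vzero) \<and>
     (\<forall>x\<in>fvec n. \<forall>y\<in>fvec n. \<omega> (J x) (J y) = \<omega> x y) \<and>
     (\<forall>x\<in>fvec n. \<forall>y\<in>fvec n. metric \<omega> J x y = metric \<omega> J y x) \<and>
     (\<forall>x\<in>fvec n. x \<noteq> vzero \<longrightarrow> metric \<omega> J x x > 0)"

definition closed_form :: "nat \<Rightarrow> (vec \<Rightarrow> vec \<Rightarrow> vec) \<Rightarrow> (vec \<Rightarrow> vec \<Rightarrow> real) \<Rightarrow> bool" where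
  "closed_form n br \<omega> \<longleftrightarrow>
     (\<forall>x\<in>fvec n. \<forall>y\<in>fvec n. \<forall>z\<in>fvec n.
        \<omega> (br x y) z + \<omega> (br y z) x + \<omega> (br z x) y = 0)"

definition kaehler :: "nat \<Rightarrow> (vec \<Rightarrow> vec \<Rightarrow> vec) \<Rightarrow> (vec \<Rightarrow> vec) \<Rightarrow> (vec \<Rightarrow> vec \<Rightarrow> real) \<Rightarrow> bool" where
  "kaehler n br J \<omega> \<longleftrightarrow> hermitian_lie n br J \<omega> \<and> closed_form n br \<omega>"

definition cr_form :: "nat \<Rightarrow> (vec \<Rightarrow> vec \<Rightarrow> vec) \<Rightarrow> (vec \<Rightarrow> vec) \<Rightarrow> vec \<Rightarrow> vec \<Rightarrow> real" where
  "cr_form n br J x y = - (1/2) * tr n (J \<circ> br (br x y)) + (1/2) * tr n (br (J (br x y)))"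

definition cr_operator :: "nat \<Rightarrow> (vec \<Rightarrow> vec \<Rightarrow> vec) \<Rightarrow> (vec \<Rightarrow> vec) \<Rightarrow> (vec \<Rightarrow> vec \<Rightarrow> real) \<Rightarrow> (vec \<Rightarrow> vec) \<Rightarrow> bool" where
  "cr_operator n br J \<omega> P \<longleftrightarrow> lin_on n n P \<and>
     (\<forall>x\<in>fvec n. \<forall>y\<in>fvec n. \<omega> (P x) y = cr_form n br J x y)"

definition derivation :: "nat \<Rightarrow> (vec \<Rightarrow> vec \<Rightarrow> vec) \<Rightarrow> (vec \<Rightarrow> vec) \<Rightarrow> bool" where
  "derivation n br D \<longleftrightarrow> lin_on n n D \<and>
     (\<forall>x\<in>fvec n. \<forall>y\<in>fvec n. D (br x y) = vadd (br (D x) y) (br x (D y)))"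

definition is_transpose :: "nat \<Rightarrow> (vec \<Rightarrow> vec \<Rightarrow> real) \<Rightarrow> (vec \<Rightarrow> vec) \<Rightarrow> (vec \<Rightarrow> vec) \<Rightarrow> bool" where
  "is_transpose n gg A At \<longleftrightarrow> lin_on n n At \<and>
     (\<forall>x\<in>fvec n. \<forall>y\<in>fvec n. gg (A x) y = gg x (At y))"

definition cr_soliton :: "nat \<Rightarrow> (vec \<Rightarrow> vec \<Rightarrow> vec) \<Rightarrow> (vec \<Rightarrow> vec) \<Rightarrow> (vec \<Rightarrow> vec \<Rightarrow> real) \<Rightarrow> bool" where
  "cr_soliton n br J \<omega> \<longleftrightarrow>
     (\<exists>P c D Dt. cr_operator n br J \<omega> P \<and> derivation n br D \<and>
        (\<forall>x\<in>fvec n. D (J x) = J (D x)) \<and>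
        is_transpose n (metric \<omega> J) D Dt \<and>
        (\<forall>x\<in>fvec n. P x = vadd (vsmul c x) (vsmul (1/2) (vadd (D x) (Dt x)))))"

definition representation :: "nat \<Rightarrow> nat \<Rightarrow> (vec \<Rightarrow> vec \<Rightarrow> vec) \<Rightarrow> (vec \<Rightarrow> vec \<Rightarrow> vec) \<Rightarrow> bool" where
  "representation n1 n2 br1 \<theta> \<longleftrightarrow>
     (\<forall>X\<in>fvec n1. lin_on n2 n2 (\<theta> X)) \<and>
     (\<forall>X\<in>fvec n1. \<forall>Y\<in>fvec n1. \<forall>z\<in>fvec n2. \<theta> (vadd X Y) z = vadd (\<theta> X z) (\<theta> Y z)) \<and>
     (\<forall>a. \<forall>X\<in>fvec n1. \<forall>z\<in>fvec n2. \<theta> (vsmul a X) z = vsmul a (\<theta> X z)) \<and>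
     (\<forall>X\<in>fvec n1. \<forall>Y\<in>fvec n1. \<forall>z\<in>fvec n2.
        \<theta> (br1 X Y) z = vsub (\<theta> X (\<theta> Y z)) (\<theta> Y (\<theta> X z)))"

definition zero_br :: "vec \<Rightarrow> vec \<Rightarrow> vec" where "zero_br x y = vzero"

definition P_theta_op :: "nat \<Rightarrow> nat \<Rightarrow> (vec \<Rightarrow> vec \<Rightarrow> vec) \<Rightarrow> (vec \<Rightarrow> vec) \<Rightarrow> (vec \<Rightarrow> vec \<Rightarrow> real)
     \<Rightarrow> (vec \<Rightarrow> vec) \<Rightarrow> (vec \<Rightarrow> vec \<Rightarrow> vec) \<Rightarrow> (vec \<Rightarrow> vec) \<Rightarrow> bool" where
  "P_theta_op n1 n2 br1 J1 \<omega>1 J2 \<theta> P \<longleftrightarrow> lin_on n1 n1 P \<and>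
     (\<forall>X\<in>fvec n1. \<forall>Y\<in>fvec n1.
        \<omega>1 (P X) Y = - (1/2) * tr n2 (J2 \<circ> \<theta> (br1 X Y)) + (1/2) * tr n2 (\<theta> (J1 (br1 X Y))))"

text \<open>direct sum g1 (+) g2 realised on fvec (n1+n2): first n1 coordinates for g1\<close>
definition join :: "nat \<Rightarrow> vec \<Rightarrow> vec \<Rightarrow> vec" where
  "join n1 x z = (\<lambda>i. if i < n1 then x i else z (i - n1))"
definition pr1 :: "nat \<Rightarrow> vec \<Rightarrow> vec" where
  "pr1 n1 v = (\<lambda>i. if i < n1 then v i else 0)"
definition pr2 :: "nat \<Rightarrow> vec \<Rightarrow> vec" where
  "pr2 n1 v = (\<lambda>i. v (i + n1))"

definition sd_br :: "nat \<Rightarrow> (vec \<Rightarrow> vec \<Rightarrow> vec) \<Rightarrow> (vec \<Rightarrow> vec \<Rightarrow> vec) \<Rightarrow> vec \<Rightarrow> vec \<Rightarrow> vec" where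
  "sd_br n1 br1 \<theta> v w = join n1 (br1 (pr1 n1 v) (pr1 n1 w))
      (vsub (\<theta> (pr1 n1 v) (pr2 n1 w)) (\<theta> (pr1 n1 w) (pr2 n1 v)))"
definition sd_J :: "nat \<Rightarrow> (vec \<Rightarrow> vec) \<Rightarrow> (vec \<Rightarrow> vec) \<Rightarrow> vec \<Rightarrow> vec" where
  "sd_J n1 J1 J2 v = join n1 (J1 (pr1 n1 v)) (J2 (pr2 n1 v))"
definition sd_\<omega> :: "nat \<Rightarrow> (vec \<Rightarrow> vec \<Rightarrow> real) \<Rightarrow> (vec \<Rightarrow> vec \<Rightarrow> real) \<Rightarrow> vec \<Rightarrow> vec \<Rightarrow> real" where
  "sd_\<omega> n1 \<omega>1 \<omega>2 v w = \<omega>1 (pr1 n1 v) (pr1 n1 w) + \<omega>2 (pr2 n1 v) (pr2 n1 w)"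

definition herm_iso :: "nat \<Rightarrow> (vec \<Rightarrow> vec \<Rightarrow> vec) \<Rightarrow> (vec \<Rightarrow> vec) \<Rightarrow> (vec \<Rightarrow> vec \<Rightarrow> real)
   \<Rightarrow> nat \<Rightarrow> (vec \<Rightarrow> vec \<Rightarrow> vec) \<Rightarrow> (vec \<Rightarrow> vec) \<Rightarrow> (vec \<Rightarrow> vec \<Rightarrow> real) \<Rightarrow> (vec \<Rightarrow> vec) \<Rightarrow> bool" where
  "herm_iso n br J \<omega> m br' J' \<omega>' \<phi> \<longleftrightarrow>
     lin_on n m \<phi> \<and> bij_betw \<phi> (fvec n) (fvec m) \<and>
     (\<forall>x\<in>fvec n. \<forall>y\<in>fvec n. \<phi> (br x y) = br' (\<phi> x) (\<phi> y)) \<and>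
     (\<forall>x\<in>fvec n. \<phi> (J x) = J' (\<phi> x)) \<and>
     (\<forall>x\<in>fvec n. \<forall>y\<in>fvec n. \<omega>' (\<phi> x) (\<phi> y) = \<omega> x y)"

definition cond1 :: "nat \<Rightarrow> nat \<Rightarrow> (vec \<Rightarrow> vec) \<Rightarrow> (vec \<Rightarrow> vec) \<Rightarrow> (vec \<Rightarrow> vec \<Rightarrow> vec) \<Rightarrow> bool" where
  "cond1 n1 n2 J1 J2 \<theta> \<longleftrightarrow>
     (\<forall>X\<in>fvec n1. \<forall>z\<in>fvec n2.
        vsub (\<theta> (J1 X) (J2 z)) (J2 (\<theta> (J1 X) z)) = J2 (vsub (\<theta> X (J2 z)) (J2 (\<theta> X z))))"

definition cond2 :: "nat \<Rightarrow> nat \<Rightarrow> (vec \<Rightarrow> vec \<Rightarrow> vec) \<Rightarrow> (vec \<Rightarrow> vec) \<Rightarrow> (vec \<Rightarrow> vec \<Rightarrow> real)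
     \<Rightarrow> (vec \<Rightarrow> vec) \<Rightarrow> (vec \<Rightarrow> vec \<Rightarrow> vec) \<Rightarrow> real \<Rightarrow> bool" where
  "cond2 n1 n2 br1 J1 \<omega>1 J2 \<theta> c \<longleftrightarrow>
     (\<exists>P1 P\<theta>. cr_operator n1 br1 J1 \<omega>1 P1 \<and> P_theta_op n1 n2 br1 J1 \<omega>1 J2 \<theta> P\<theta> \<and>
        (\<forall>X\<in>fvec n1. P1 X = vsub (vsmul c X) (P\<theta> X)))"

definition in_sp :: "nat \<Rightarrow> (vec \<Rightarrow> vec \<Rightarrow> real) \<Rightarrow> (vec \<Rightarrow> vec) \<Rightarrow> bool" where
  "in_sp n \<omega> A \<longleftrightarrow> (\<forall>x\<in>fvec n. \<forall>y\<in>fvec n. \<omega> (A x) y + \<omega> x (A y) = 0)"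

end

theory Submission
  imports Defs
begin


lemmas vdefs = vadd_def vsub_def vsmul_def vzero_def

lemma fvec_iff: "v \<in> fvec n \<longleftrightarrow> (\<forall>i\<ge>n. v i = 0)" by (simp add: fvec_def)

lemma fvec_zero[simp]: "vzero \<in> fvec n" by (simp add: fvec_def vzero_def)
lemma fvec_add[simp]: "x \<in> fvec n \<Longrightarrow> y \<in> fvec n \<Longrightarrow> vadd x y \<in> fvec n" by (simp add: fvec_def vadd_def)
lemma fvec_sub[simp]: "x \<in> fvec n \<Longrightarrow> y \<in> fvec n \<Longrightarrow> vsub x y \<in> fvec n" by (simp add: fvec_def vsub_def)
lemma fvec_smul[simp]: "x \<in> fvec n \<Longrightarrow> vsmul a x \<in> fvec n" by (simp add: fvec_def vsmul_def)
lemma fvec_ebas[simp]: "k < n \<Longrightarrow> ebas k \<in> fvec n" by (simp add: fvec_def ebas_def)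

definition vsum :: "'a set \<Rightarrow> ('a \<Rightarrow> real) \<Rightarrow> ('a \<Rightarrow> vec) \<Rightarrow> vec" where
  "vsum K a v = (\<lambda>i. \<Sum>k\<in>K. a k * v k i)"

lemma fvec_vsum[simp]: "(\<And>k. k \<in> K \<Longrightarrow> v k \<in> fvec n) \<Longrightarrow> vsum K a v \<in> fvec n"
  by (auto simp: fvec_def vsum_def intro!: sum.neutral)

lemma vsum_empty[simp]: "vsum {} a v = vzero" by (simp add: vsum_def vzero_def)
lemma vsum_insert: "finite K \<Longrightarrow> k \<notin> K \<Longrightarrow> vsum (insert k K) a v = vadd (vsmul (a k) (v k)) (vsum K a v)"
  by (simp add: vsum_def vadd_def vsmul_def)

lemma lin_in: "lin_on n m f \<Longrightarrow> x \<in> fvec n \<Longrightarrow> f x \<in> fvec m" by (simp add: lin_on_def)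
lemma lin_add: "lin_on n m f \<Longrightarrow> x \<in> fvec n \<Longrightarrow> y \<in> fvec n \<Longrightarrow> f (vadd x y) = vadd (f x) (f y)" by (simp add: lin_on_def)
lemma lin_smul: "lin_on n m f \<Longrightarrow> x \<in> fvec n \<Longrightarrow> f (vsmul a x) = vsmul a (f x)" by (simp add: lin_on_def)
lemma lin_zero: "lin_on n m f \<Longrightarrow> f vzero = vzero"
proof -
  assume l: "lin_on n m f"
  have "vzero = vsmul 0 vzero" by (simp add: vdefs)
  hence "f vzero = vsmul 0 (f vzero)" using lin_smul[OF l, of vzero 0] by simp
  thus ?thesis by (simp add: vdefs)
qed
lemma vsub_eq: "vsub x y = vadd x (vsmul (-1) y)" by (simp add: vdefs)
lemma lin_sub: "lin_on n m f \<Longrightarrow> x \<in> fvec n \<Longrightarrow> y \<in> fvec n \<Longrightarrow> f (vsub x y) = vsub (f x) (f y)"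
  by (simp add: vsub_eq lin_add lin_smul)

lemma lin_vsum: assumes l: "lin_on n m f" shows "finite K \<Longrightarrow> (\<And>k. k \<in> K \<Longrightarrow> v k \<in> fvec n) \<Longrightarrow>
   f (vsum K a v) = vsum K a (\<lambda>k. f (v k))"
proof (induction K rule: finite_induct)
  case empty thus ?case by (simp add: lin_zero[OF l])
next
  case (insert k K)
  thus ?case by (simp add: vsum_insert lin_add[OF l] lin_smul[OF l])
qed

lemma fvec_expand: "x \<in> fvec n \<Longrightarrow> x = vsum {..<n} x ebas"
proof
  fix i assume x: "x \<in> fvec n"
  have "(\<Sum>k<n. x k * ebas k i) = (if i < n then x i else 0)"
    by (auto simp: ebas_def if_distrib cong: if_cong)
  thus "x i = vsum {..<n} x ebas i" using x by (auto simp: vsum_def fvec_def)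
qed

lemma lin_expand: "lin_on n m f \<Longrightarrow> x \<in> fvec n \<Longrightarrow> f x i = (\<Sum>k<n. x k * f (ebas k) i)"
proof -
  assume l: "lin_on n m f" and x: "x \<in> fvec n"
  have "f x = f (vsum {..<n} x ebas)" using fvec_expand[OF x] by simp
  also have "\<dots> = vsum {..<n} x (\<lambda>k. f (ebas k))" by (rule lin_vsum[OF l]) auto
  finally show ?thesis by (simp add: vsum_def)
qed

lemma tr_cyc: assumes F: "lin_on n m F" and G: "lin_on m n G"
  shows "tr m (F \<circ> G) = tr n (G \<circ> F)"
proof -
  have "tr m (F \<circ> G) = (\<Sum>k<m. \<Sum>i<n. G (ebas k) i * F (ebas i) k)"
    unfolding tr_def comp_def
    by (rule sum.cong, simp, rule lin_expand[OF F], rule lin_in[OF G], simp)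
  also have "\<dots> = (\<Sum>i<n. \<Sum>k<m. F (ebas i) k * G (ebas k) i)"
    by (subst sum.swap) (simp add: mult.commute)
  also have "\<dots> = tr n (G \<circ> F)"
    unfolding tr_def comp_def
    by (rule sum.cong, simp, rule lin_expand[OF G, symmetric], rule lin_in[OF F], simp)
  finally show ?thesis .
qed

lemma tr_cong: "(\<And>x. x \<in> fvec n \<Longrightarrow> A x = B x) \<Longrightarrow> tr n A = tr n B"
  by (simp add: tr_def)
lemma tr_add: "tr n (\<lambda>x. vadd (A x) (B x)) = tr n A + tr n B"
  by (simp add: tr_def vadd_def sum.distrib)
lemma tr_sub: "tr n (\<lambda>x. vsub (A x) (B x)) = tr n A - tr n B"
  by (simp add: tr_def vsub_def sum_subtractf)
lemma tr_smul: "tr n (\<lambda>x. vsmul a (A x)) = a * tr n A"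
  by (simp add: tr_def vsmul_def sum_distrib_left)

lemma lin_comp: "lin_on n m f \<Longrightarrow> lin_on m k g \<Longrightarrow> lin_on n k (g \<circ> f)"
  by (simp add: lin_on_def)

lemma vsub_zero[simp]: "vsub x vzero = x" by (simp add: vdefs)
lemma vadd_zero[simp]: "vadd x vzero = x" "vadd vzero x = x" by (simp_all add: vdefs)
lemma vsmul_vzero[simp]: "vsmul a vzero = vzero" by (simp add: vdefs)
lemma vec_eqI: "(\<And>i. v i = w i) \<Longrightarrow> v = w" by (rule ext)



lemma pr1_in[simp]: "pr1 n1 v \<in> fvec n1" by (simp add: fvec_def pr1_def)
lemma pr2_in[simp]: "v \<in> fvec (n1+n2) \<Longrightarrow> pr2 n1 v \<in> fvec n2" by (simp add: fvec_def pr2_def)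
lemma join_in[simp]: "Z \<in> fvec n2 \<Longrightarrow> join n1 X Z \<in> fvec (n1+n2)"
  by (auto simp: fvec_def join_def)
lemma pr1_join[simp]: "X \<in> fvec n1 \<Longrightarrow> pr1 n1 (join n1 X Z) = X"
  by (auto simp: fvec_def join_def pr1_def)
lemma pr2_join[simp]: "pr2 n1 (join n1 X Z) = Z"
  by (auto simp: join_def pr2_def)
lemma join_pr[simp]: "join n1 (pr1 n1 v) (pr2 n1 v) = v"
  by (auto simp: join_def pr1_def pr2_def)
lemma join_add: "vadd (join n1 X Z) (join n1 Y W) = join n1 (vadd X Y) (vadd Z W)"
  by (auto simp: join_def vadd_def)
lemma join_sub: "vsub (join n1 X Z) (join n1 Y W) = join n1 (vsub X Y) (vsub Z W)"
  by (auto simp: join_def vsub_def)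
lemma join_smul: "vsmul a (join n1 X Z) = join n1 (vsmul a X) (vsmul a Z)"
  by (auto simp: join_def vsmul_def)
lemma join_zero: "join n1 vzero vzero = vzero"
  by (auto simp: join_def vzero_def)
lemma join_eq_iff: "X \<in> fvec n1 \<Longrightarrow> Y \<in> fvec n1 \<Longrightarrow> join n1 X Z = join n1 Y W \<longleftrightarrow> X = Y \<and> Z = W"
  by (metis pr1_join pr2_join)
lemma fvec_sum_split: "v \<in> fvec (n1+n2) \<Longrightarrow> (\<exists>X Z. X \<in> fvec n1 \<and> Z \<in> fvec n2 \<and> v = join n1 X Z)"
  by (rule exI[of _ "pr1 n1 v"], rule exI[of _ "pr2 n1 v"]) simp
lemma ball_sum: "(\<forall>v\<in>fvec (n1+n2). P v) \<longleftrightarrow> (\<forall>X\<in>fvec n1. \<forall>Z\<in>fvec n2. P (join n1 X Z))"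
proof
  assume "\<forall>v\<in>fvec (n1+n2). P v" thus "\<forall>X\<in>fvec n1. \<forall>Z\<in>fvec n2. P (join n1 X Z)" by simp
next
  assume a: "\<forall>X\<in>fvec n1. \<forall>Z\<in>fvec n2. P (join n1 X Z)"
  show "\<forall>v\<in>fvec (n1+n2). P v"
  proof
    fix v assume "v \<in> fvec (n1+n2)"
    hence "P (join n1 (pr1 n1 v) (pr2 n1 v))" using a pr1_in pr2_in by blast
    thus "P v" by simp
  qed
qed

lemmas joinops = join_add join_sub join_smul join_zero

locale sdata =
  fixes n1 n2 :: nat and br1 :: "vec \<Rightarrow> vec \<Rightarrow> vec" and J1 :: "vec \<Rightarrow> vec" and \<omega>1 :: "vec \<Rightarrow> vec \<Rightarrow> real"
    and J2 :: "vec \<Rightarrow> vec" and \<omega>2 :: "vec \<Rightarrow> vec \<Rightarrow> real" and \<theta> :: "vec \<Rightarrow> vec \<Rightarrow> vec"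
  assumes H1: "hermitian_lie n1 br1 J1 \<omega>1" and H2: "hermitian_lie n2 zero_br J2 \<omega>2"
    and R: "representation n1 n2 br1 \<theta>"
begin

abbreviation "V1 \<equiv> fvec n1"
abbreviation "V2 \<equiv> fvec n2"
abbreviation "sbr \<equiv> sd_br n1 br1 \<theta>"
abbreviation "sJ \<equiv> sd_J n1 J1 J2"
abbreviation "s\<omega> \<equiv> sd_\<omega> n1 \<omega>1 \<omega>2"

lemma L1: "lie_algebra n1 br1" using H1 unfolding hermitian_lie_def by blast
lemma brlin: "X \<in> V1 \<Longrightarrow> lin_on n1 n1 (br1 X)" using L1 unfolding lie_algebra_def by blast
lemma br_anti: "X \<in> V1 \<Longrightarrow> Y \<in> V1 \<Longrightarrow> br1 X Y = vsmul (-1) (br1 Y X)" using L1 unfolding lie_algebra_def by blast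
lemma br_jac: "X \<in> V1 \<Longrightarrow> Y \<in> V1 \<Longrightarrow> Z \<in> V1 \<Longrightarrow>
   vadd (br1 X (br1 Y Z)) (vadd (br1 Y (br1 Z X)) (br1 Z (br1 X Y))) = vzero" using L1 unfolding lie_algebra_def by blast
lemma br_in[simp]: "X \<in> V1 \<Longrightarrow> Y \<in> V1 \<Longrightarrow> br1 X Y \<in> V1" using brlin lin_in by blast
lemma br_add2[simp]: "X \<in> V1 \<Longrightarrow> Y \<in> V1 \<Longrightarrow> Z \<in> V1 \<Longrightarrow> br1 X (vadd Y Z) = vadd (br1 X Y) (br1 X Z)"
  using brlin lin_add by blast
lemma br_smul2[simp]: "X \<in> V1 \<Longrightarrow> Y \<in> V1 \<Longrightarrow> br1 X (vsmul a Y) = vsmul a (br1 X Y)"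
  using brlin lin_smul by blast
lemma br_sub2[simp]: "X \<in> V1 \<Longrightarrow> Y \<in> V1 \<Longrightarrow> Z \<in> V1 \<Longrightarrow> br1 X (vsub Y Z) = vsub (br1 X Y) (br1 X Z)"
  using brlin lin_sub by blast
lemma br_zero2[simp]: "X \<in> V1 \<Longrightarrow> br1 X vzero = vzero"
  using brlin lin_zero by blast
lemma br_add1[simp]: "X \<in> V1 \<Longrightarrow> Y \<in> V1 \<Longrightarrow> Z \<in> V1 \<Longrightarrow> br1 (vadd Y Z) X = vadd (br1 Y X) (br1 Z X)"
proof -
  assume a: "X \<in> V1" "Y \<in> V1" "Z \<in> V1"
  have "br1 (vadd Y Z) X = vsmul (-1) (br1 X (vadd Y Z))" using a by (intro br_anti) simp_all
  also have "\<dots> = vadd (vsmul (-1) (br1 X Y)) (vsmul (-1) (br1 X Z))" using a by (simp, simp add: vdefs)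
  also have "\<dots> = vadd (br1 Y X) (br1 Z X)" using a br_anti[of Y X] br_anti[of Z X] by simp
  finally show ?thesis .
qed
lemma br_smul1[simp]: "X \<in> V1 \<Longrightarrow> Y \<in> V1 \<Longrightarrow> br1 (vsmul a Y) X = vsmul a (br1 Y X)"
proof -
  assume a: "X \<in> V1" "Y \<in> V1"
  have "br1 (vsmul a Y) X = vsmul (-1) (br1 X (vsmul a Y))" using a by (intro br_anti) simp_all
  also have "\<dots> = vsmul a (vsmul (-1) (br1 X Y))" using a by (simp, simp add: vdefs)
  also have "\<dots> = vsmul a (br1 Y X)" using a br_anti[of Y X] by simp
  finally show ?thesis .
qed
lemma br_sub1[simp]: "X \<in> V1 \<Longrightarrow> Y \<in> V1 \<Longrightarrow> Z \<in> V1 \<Longrightarrow> br1 (vsub Y Z) X = vsub (br1 Y X) (br1 Z X)"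
  by (simp add: vsub_eq)
lemma br_zero1[simp]: "X \<in> V1 \<Longrightarrow> br1 vzero X = vzero"
proof -
  assume X: "X \<in> V1"
  have "br1 vzero X = br1 (vsmul 0 vzero) X" by (simp add: vdefs)
  also have "\<dots> = vzero" using X by (subst br_smul1) (simp_all add: vdefs fvec_def)
  finally show ?thesis .
qed

lemma J1lin: "lin_on n1 n1 J1" using H1 unfolding hermitian_lie_def by blast
lemma J1J1: "X \<in> V1 \<Longrightarrow> J1 (J1 X) = vsmul (-1) X" using H1 unfolding hermitian_lie_def by blast
lemma J1_in[simp]: "X \<in> V1 \<Longrightarrow> J1 X \<in> V1" using J1lin lin_in by blast
lemma J1_add[simp]: "X \<in> V1 \<Longrightarrow> Y \<in> V1 \<Longrightarrow> J1 (vadd X Y) = vadd (J1 X) (J1 Y)" using J1lin lin_add by blast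
lemma J1_sub[simp]: "X \<in> V1 \<Longrightarrow> Y \<in> V1 \<Longrightarrow> J1 (vsub X Y) = vsub (J1 X) (J1 Y)" using J1lin lin_sub by blast
lemma J1_smul[simp]: "X \<in> V1 \<Longrightarrow> J1 (vsmul a X) = vsmul a (J1 X)" using J1lin lin_smul by blast
lemma J1_zero[simp]: "J1 vzero = vzero" using J1lin lin_zero by blast
lemma J1int: "X \<in> V1 \<Longrightarrow> Y \<in> V1 \<Longrightarrow>
        br1 (J1 X) (J1 Y) = vadd (br1 X Y) (vadd (J1 (br1 (J1 X) Y)) (J1 (br1 X (J1 Y))))"
  using H1 unfolding hermitian_lie_def by blast

lemma J2lin: "lin_on n2 n2 J2" using H2 unfolding hermitian_lie_def by blast
lemma J2J2: "X \<in> V2 \<Longrightarrow> J2 (J2 X) = vsmul (-1) X" using H2 unfolding hermitian_lie_def by blast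
lemma J2_in[simp]: "X \<in> V2 \<Longrightarrow> J2 X \<in> V2" using J2lin lin_in by blast
lemma J2_add[simp]: "X \<in> V2 \<Longrightarrow> Y \<in> V2 \<Longrightarrow> J2 (vadd X Y) = vadd (J2 X) (J2 Y)" using J2lin lin_add by blast
lemma J2_sub[simp]: "X \<in> V2 \<Longrightarrow> Y \<in> V2 \<Longrightarrow> J2 (vsub X Y) = vsub (J2 X) (J2 Y)" using J2lin lin_sub by blast
lemma J2_smul[simp]: "X \<in> V2 \<Longrightarrow> J2 (vsmul a X) = vsmul a (J2 X)" using J2lin lin_smul by blast
lemma J2_zero[simp]: "J2 vzero = vzero" using J2lin lin_zero by blast

lemma thlin: "X \<in> V1 \<Longrightarrow> lin_on n2 n2 (\<theta> X)" using R unfolding representation_def by blast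
lemma th_in[simp]: "X \<in> V1 \<Longrightarrow> z \<in> V2 \<Longrightarrow> \<theta> X z \<in> V2" using thlin lin_in by blast
lemma th_add2[simp]: "X \<in> V1 \<Longrightarrow> z \<in> V2 \<Longrightarrow> w \<in> V2 \<Longrightarrow> \<theta> X (vadd z w) = vadd (\<theta> X z) (\<theta> X w)" using thlin lin_add by blast
lemma th_sub2[simp]: "X \<in> V1 \<Longrightarrow> z \<in> V2 \<Longrightarrow> w \<in> V2 \<Longrightarrow> \<theta> X (vsub z w) = vsub (\<theta> X z) (\<theta> X w)" using thlin lin_sub by blast
lemma th_smul2[simp]: "X \<in> V1 \<Longrightarrow> z \<in> V2 \<Longrightarrow> \<theta> X (vsmul a z) = vsmul a (\<theta> X z)" using thlin lin_smul by blast
lemma th_zero2[simp]: "X \<in> V1 \<Longrightarrow> \<theta> X vzero = vzero" using thlin lin_zero by blast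
lemma th_add1[simp]: "X \<in> V1 \<Longrightarrow> Y \<in> V1 \<Longrightarrow> z \<in> V2 \<Longrightarrow> \<theta> (vadd X Y) z = vadd (\<theta> X z) (\<theta> Y z)" using R unfolding representation_def by blast
lemma th_smul1[simp]: "X \<in> V1 \<Longrightarrow> z \<in> V2 \<Longrightarrow> \<theta> (vsmul a X) z = vsmul a (\<theta> X z)" using R unfolding representation_def by blast
lemma th_sub1[simp]: "X \<in> V1 \<Longrightarrow> Y \<in> V1 \<Longrightarrow> z \<in> V2 \<Longrightarrow> \<theta> (vsub X Y) z = vsub (\<theta> X z) (\<theta> Y z)" by (simp add: vsub_eq)
lemma th_zero1[simp]: "z \<in> V2 \<Longrightarrow> \<theta> vzero z = vzero"
proof -
  assume X: "z \<in> V2"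
  have "\<theta> vzero z = \<theta> (vsmul 0 vzero) z" by (simp add: vdefs)
  also have "\<dots> = vzero" using X by (subst th_smul1) (simp_all add: vdefs fvec_def)
  finally show ?thesis .
qed
lemma th_hom: "X \<in> V1 \<Longrightarrow> Y \<in> V1 \<Longrightarrow> z \<in> V2 \<Longrightarrow> \<theta> (br1 X Y) z = vsub (\<theta> X (\<theta> Y z)) (\<theta> Y (\<theta> X z))"
  using R unfolding representation_def by blast

lemma sbr_join[simp]: "X \<in> V1 \<Longrightarrow> Y \<in> V1 \<Longrightarrow>
   sbr (join n1 X a) (join n1 Y b) = join n1 (br1 X Y) (vsub (\<theta> X b) (\<theta> Y a))"
  by (simp add: sd_br_def)
lemma sJ_join[simp]: "X \<in> V1 \<Longrightarrow> sJ (join n1 X a) = join n1 (J1 X) (J2 a)"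
  by (simp add: sd_J_def)
lemma s\<omega>_join[simp]: "X \<in> V1 \<Longrightarrow> Y \<in> V1 \<Longrightarrow> s\<omega> (join n1 X a) (join n1 Y b) = \<omega>1 X Y + \<omega>2 a b"
  by (simp add: sd_\<omega>_def)


lemma B1: "bilin_on n1 \<omega>1" using H1 unfolding hermitian_lie_def by blast
lemma B2: "bilin_on n2 \<omega>2" using H2 unfolding hermitian_lie_def by blast
lemma om1_add1[simp]: "X \<in> V1 \<Longrightarrow> Y \<in> V1 \<Longrightarrow> Z \<in> V1 \<Longrightarrow> \<omega>1 (vadd X Y) Z = \<omega>1 X Z + \<omega>1 Y Z" using B1 unfolding bilin_on_def by blast
lemma om1_add2[simp]: "X \<in> V1 \<Longrightarrow> Y \<in> V1 \<Longrightarrow> Z \<in> V1 \<Longrightarrow> \<omega>1 Z (vadd X Y) = \<omega>1 Z X + \<omega>1 Z Y" using B1 unfolding bilin_on_def by blast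
lemma om1_smul1[simp]: "X \<in> V1 \<Longrightarrow> Y \<in> V1 \<Longrightarrow> \<omega>1 (vsmul a X) Y = a * \<omega>1 X Y" using B1 unfolding bilin_on_def by blast
lemma om1_smul2[simp]: "X \<in> V1 \<Longrightarrow> Y \<in> V1 \<Longrightarrow> \<omega>1 X (vsmul a Y) = a * \<omega>1 X Y" using B1 unfolding bilin_on_def by blast
lemma om1_sub1[simp]: "X \<in> V1 \<Longrightarrow> Y \<in> V1 \<Longrightarrow> Z \<in> V1 \<Longrightarrow> \<omega>1 (vsub X Y) Z = \<omega>1 X Z - \<omega>1 Y Z" by (simp add: vsub_eq)
lemma om1_sub2[simp]: "X \<in> V1 \<Longrightarrow> Y \<in> V1 \<Longrightarrow> Z \<in> V1 \<Longrightarrow> \<omega>1 Z (vsub X Y) = \<omega>1 Z X - \<omega>1 Z Y" by (simp add: vsub_eq)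
lemma om1_zero1[simp]: "X \<in> V1 \<Longrightarrow> \<omega>1 vzero X = 0"
  using om1_smul1[of vzero X 0] by (simp add: vdefs fvec_def)
lemma om1_zero2[simp]: "X \<in> V1 \<Longrightarrow> \<omega>1 X vzero = 0"
  using om1_smul2[of X vzero 0] by (simp add: vdefs fvec_def)
lemma om2_add1[simp]: "X \<in> V2 \<Longrightarrow> Y \<in> V2 \<Longrightarrow> Z \<in> V2 \<Longrightarrow> \<omega>2 (vadd X Y) Z = \<omega>2 X Z + \<omega>2 Y Z" using B2 unfolding bilin_on_def by blast
lemma om2_add2[simp]: "X \<in> V2 \<Longrightarrow> Y \<in> V2 \<Longrightarrow> Z \<in> V2 \<Longrightarrow> \<omega>2 Z (vadd X Y) = \<omega>2 Z X + \<omega>2 Z Y" using B2 unfolding bilin_on_def by blast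
lemma om2_smul1[simp]: "X \<in> V2 \<Longrightarrow> Y \<in> V2 \<Longrightarrow> \<omega>2 (vsmul a X) Y = a * \<omega>2 X Y" using B2 unfolding bilin_on_def by blast
lemma om2_smul2[simp]: "X \<in> V2 \<Longrightarrow> Y \<in> V2 \<Longrightarrow> \<omega>2 X (vsmul a Y) = a * \<omega>2 X Y" using B2 unfolding bilin_on_def by blast
lemma om2_sub1[simp]: "X \<in> V2 \<Longrightarrow> Y \<in> V2 \<Longrightarrow> Z \<in> V2 \<Longrightarrow> \<omega>2 (vsub X Y) Z = \<omega>2 X Z - \<omega>2 Y Z" by (simp add: vsub_eq)
lemma om2_sub2[simp]: "X \<in> V2 \<Longrightarrow> Y \<in> V2 \<Longrightarrow> Z \<in> V2 \<Longrightarrow> \<omega>2 Z (vsub X Y) = \<omega>2 Z X - \<omega>2 Z Y" by (simp add: vsub_eq)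
lemma om2_zero1[simp]: "X \<in> V2 \<Longrightarrow> \<omega>2 vzero X = 0"
  using om2_smul1[of vzero X 0] by (simp add: vdefs fvec_def)
lemma om2_zero2[simp]: "X \<in> V2 \<Longrightarrow> \<omega>2 X vzero = 0"
  using om2_smul2[of X vzero 0] by (simp add: vdefs fvec_def)
lemma om1_anti: "X \<in> V1 \<Longrightarrow> Y \<in> V1 \<Longrightarrow> \<omega>1 X Y = - \<omega>1 Y X" using H1 unfolding hermitian_lie_def by blast
lemma om2_anti: "X \<in> V2 \<Longrightarrow> Y \<in> V2 \<Longrightarrow> \<omega>2 X Y = - \<omega>2 Y X" using H2 unfolding hermitian_lie_def by blast
lemma om1_nd: "X \<in> V1 \<Longrightarrow> (\<forall>Y\<in>V1. \<omega>1 X Y = 0) \<Longrightarrow> X = vzero" using H1 unfolding hermitian_lie_def by blast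
lemma om2_nd: "X \<in> V2 \<Longrightarrow> (\<forall>Y\<in>V2. \<omega>2 X Y = 0) \<Longrightarrow> X = vzero" using H2 unfolding hermitian_lie_def by blast
lemma om1_J: "X \<in> V1 \<Longrightarrow> Y \<in> V1 \<Longrightarrow> \<omega>1 (J1 X) (J1 Y) = \<omega>1 X Y" using H1 unfolding hermitian_lie_def by blast
lemma om2_J: "X \<in> V2 \<Longrightarrow> Y \<in> V2 \<Longrightarrow> \<omega>2 (J2 X) (J2 Y) = \<omega>2 X Y" using H2 unfolding hermitian_lie_def by blast
lemma g1_sym: "X \<in> V1 \<Longrightarrow> Y \<in> V1 \<Longrightarrow> \<omega>1 X (J1 Y) = \<omega>1 Y (J1 X)" using H1 unfolding hermitian_lie_def metric_def by blast
lemma g2_sym: "X \<in> V2 \<Longrightarrow> Y \<in> V2 \<Longrightarrow> \<omega>2 X (J2 Y) = \<omega>2 Y (J2 X)" using H2 unfolding hermitian_lie_def metric_def by blast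
lemma g1_pos: "X \<in> V1 \<Longrightarrow> X \<noteq> vzero \<Longrightarrow> \<omega>1 X (J1 X) > 0" using H1 unfolding hermitian_lie_def metric_def by blast
lemma g2_pos: "X \<in> V2 \<Longrightarrow> X \<noteq> vzero \<Longrightarrow> \<omega>2 X (J2 X) > 0" using H2 unfolding hermitian_lie_def metric_def by blast
lemma g1_nn: "X \<in> V1 \<Longrightarrow> \<omega>1 X (J1 X) \<ge> 0" using g1_pos[of X] by (cases "X = vzero") auto
lemma g2_nn: "X \<in> V2 \<Longrightarrow> \<omega>2 X (J2 X) \<ge> 0" using g2_pos[of X] by (cases "X = vzero") auto
lemma even1: "even n1" using H1 unfolding hermitian_lie_def by blast
lemma even2: "even n2" using H2 unfolding hermitian_lie_def by blast

lemma sbr_lin: assumes u: "u \<in> fvec (n1+n2)" shows "lin_on (n1+n2) (n1+n2) (sbr u)"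
proof -
  obtain X a where X: "X \<in> V1" "a \<in> V2" "u = join n1 X a" using fvec_sum_split[OF u] by blast
  show ?thesis unfolding lin_on_def ball_sum using X
    by (auto simp: joinops join_eq_iff) (simp_all add: vdefs fun_eq_iff algebra_simps)
qed

lemma sbr_anti: assumes u: "u \<in> fvec (n1+n2)" "v \<in> fvec (n1+n2)" shows "sbr u v = vsmul (-1) (sbr v u)"
proof -
  obtain X a where X: "X \<in> V1" "a \<in> V2" "u = join n1 X a" using fvec_sum_split[OF u(1)] by blast
  obtain Y b where Y: "Y \<in> V1" "b \<in> V2" "v = join n1 Y b" using fvec_sum_split[OF u(2)] by blast
  show ?thesis using X Y br_anti[of X Y] by (simp add: joinops join_eq_iff) (simp add: vdefs)
qed

lemma sbr_jac: assumes u: "u \<in> fvec (n1+n2)" "v \<in> fvec (n1+n2)" "w \<in> fvec (n1+n2)"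
  shows "vadd (sbr u (sbr v w)) (vadd (sbr v (sbr w u)) (sbr w (sbr u v))) = vzero"
proof -
  obtain X a where X: "X \<in> V1" "a \<in> V2" "u = join n1 X a" using fvec_sum_split[OF u(1)] by blast
  obtain Y b where Y: "Y \<in> V1" "b \<in> V2" "v = join n1 Y b" using fvec_sum_split[OF u(2)] by blast
  obtain Z c where Z: "Z \<in> V1" "c \<in> V2" "w = join n1 Z c" using fvec_sum_split[OF u(3)] by blast
  have j: "vadd (br1 X (br1 Y Z)) (vadd (br1 Y (br1 Z X)) (br1 Z (br1 X Y))) = vzero" using br_jac X Y Z by simp
  show ?thesis using X Y Z j th_hom[of X Y c] th_hom[of Y Z a] th_hom[of Z X b]
    by (simp add: joinops join_eq_iff del: join_zero add: join_zero[symmetric]) (simp add: vdefs fun_eq_iff join_def)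
qed

lemma sd_lie: "lie_algebra (n1+n2) sbr"
  unfolding lie_algebra_def using sbr_lin sbr_anti sbr_jac by blast


lemma sJ_lin: "lin_on (n1+n2) (n1+n2) sJ"
  unfolding lin_on_def ball_sum by (auto simp: joinops join_eq_iff)

lemma sJJ: "u \<in> fvec (n1+n2) \<Longrightarrow> sJ (sJ u) = vsmul (-1) u"
  using fvec_sum_split[of u n1 n2] by (auto simp: joinops J1J1 J2J2)

lemma c1pt: assumes c1: "cond1 n1 n2 J1 J2 \<theta>" and X: "X \<in> V1" "b \<in> V2"
  shows "\<theta> (J1 X) (J2 b) i = J2 (\<theta> (J1 X) b) i + J2 (\<theta> X (J2 b)) i + \<theta> X b i"
proof -
  have "vsub (\<theta> (J1 X) (J2 b)) (J2 (\<theta> (J1 X) b)) = J2 (vsub (\<theta> X (J2 b)) (J2 (\<theta> X b)))"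
    using c1 X unfolding cond1_def by blast
  hence "vsub (\<theta> (J1 X) (J2 b)) (J2 (\<theta> (J1 X) b)) = vsub (J2 (\<theta> X (J2 b))) (vsmul (-1) (\<theta> X b))"
    using X by (simp add: J2J2)
  hence "vsub (\<theta> (J1 X) (J2 b)) (J2 (\<theta> (J1 X) b)) i = vsub (J2 (\<theta> X (J2 b))) (vsmul (-1) (\<theta> X b)) i" by simp
  thus ?thesis by (simp add: vdefs)
qed

lemma sJ_int: assumes c1: "cond1 n1 n2 J1 J2 \<theta>" and u: "u \<in> fvec (n1+n2)" "v \<in> fvec (n1+n2)"
  shows "sbr (sJ u) (sJ v) = vadd (sbr u v) (vadd (sJ (sbr (sJ u) v)) (sJ (sbr u (sJ v))))"
proof -
  obtain X a where X: "X \<in> V1" "a \<in> V2" "u = join n1 X a" using fvec_sum_split[OF u(1)] by blast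
  obtain Y b where Y: "Y \<in> V1" "b \<in> V2" "v = join n1 Y b" using fvec_sum_split[OF u(2)] by blast
  show ?thesis using X Y c1pt[OF c1 X(1) Y(2)] c1pt[OF c1 Y(1) X(2)]
    by (simp add: joinops join_eq_iff J1int) (simp add: vdefs fun_eq_iff algebra_simps)
qed

lemma s\<omega>_bilin: "bilin_on (n1+n2) s\<omega>"
  unfolding bilin_on_def ball_sum by (auto simp: joinops algebra_simps)

lemma s\<omega>_anti: assumes u: "u \<in> fvec (n1+n2)" "v \<in> fvec (n1+n2)" shows "s\<omega> u v = - s\<omega> v u"
proof -
  obtain X a where X: "X \<in> V1" "a \<in> V2" "u = join n1 X a" using fvec_sum_split[OF u(1)] by blast
  obtain Y b where Y: "Y \<in> V1" "b \<in> V2" "v = join n1 Y b" using fvec_sum_split[OF u(2)] by blast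
  show ?thesis using X Y om1_anti[of X Y] om2_anti[of a b] by simp
qed

lemma s\<omega>_J: assumes u: "u \<in> fvec (n1+n2)" "v \<in> fvec (n1+n2)" shows "s\<omega> (sJ u) (sJ v) = s\<omega> u v"
proof -
  obtain X a where X: "X \<in> V1" "a \<in> V2" "u = join n1 X a" using fvec_sum_split[OF u(1)] by blast
  obtain Y b where Y: "Y \<in> V1" "b \<in> V2" "v = join n1 Y b" using fvec_sum_split[OF u(2)] by blast
  show ?thesis using X Y om1_J[of X Y] om2_J[of a b] by simp
qed

lemma s\<omega>_g_sym: assumes u: "u \<in> fvec (n1+n2)" "v \<in> fvec (n1+n2)" shows "s\<omega> u (sJ v) = s\<omega> v (sJ u)"
proof -
  obtain X a where X: "X \<in> V1" "a \<in> V2" "u = join n1 X a" using fvec_sum_split[OF u(1)] by blast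
  obtain Y b where Y: "Y \<in> V1" "b \<in> V2" "v = join n1 Y b" using fvec_sum_split[OF u(2)] by blast
  show ?thesis using X Y g1_sym[of X Y] g2_sym[of a b] by simp
qed

lemma s\<omega>_nd: assumes u: "u \<in> fvec (n1+n2)" and h: "\<forall>v\<in>fvec (n1+n2). s\<omega> u v = 0" shows "u = vzero"
proof -
  obtain X a where X: "X \<in> V1" "a \<in> V2" "u = join n1 X a" using fvec_sum_split[OF u] by blast
  have "\<forall>Y\<in>V1. \<omega>1 X Y = 0"
  proof
    fix Y assume "Y \<in> V1" thus "\<omega>1 X Y = 0" using h[rule_format, of "join n1 Y vzero"] X by simp
  qed
  hence "X = vzero" using om1_nd X by blast
  have "\<forall>Y\<in>V2. \<omega>2 a Y = 0"
  proof
    fix Y assume "Y \<in> V2" thus "\<omega>2 a Y = 0" using h[rule_format, of "join n1 vzero Y"] X by simp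
  qed
  hence "a = vzero" using om2_nd X by blast
  show ?thesis using X \<open>X = vzero\<close> \<open>a = vzero\<close> join_zero by simp
qed

lemma s\<omega>_pos: assumes u: "u \<in> fvec (n1+n2)" "u \<noteq> vzero" shows "s\<omega> u (sJ u) > 0"
proof -
  obtain X a where X: "X \<in> V1" "a \<in> V2" "u = join n1 X a" using fvec_sum_split[OF u(1)] by blast
  have "X \<noteq> vzero \<or> a \<noteq> vzero" using X u(2) join_zero by auto
  thus ?thesis using X g1_pos[of X] g2_pos[of a] g1_nn[of X] g2_nn[of a] by auto
qed

lemma sd_herm: assumes c1: "cond1 n1 n2 J1 J2 \<theta>" shows "hermitian_lie (n1+n2) sbr sJ s\<omega>"
  unfolding hermitian_lie_def metric_def
proof (intro conjI)
  show "even (n1+n2)" using even1 even2 by simp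
  show "lie_algebra (n1 + n2) sbr" by (rule sd_lie)
  show "lin_on (n1 + n2) (n1 + n2) sJ" by (rule sJ_lin)
qed (use sJJ sJ_int[OF c1] s\<omega>_bilin s\<omega>_anti s\<omega>_nd s\<omega>_J s\<omega>_g_sym s\<omega>_pos in blast)+


lemma ebas_lo: "i < n1 \<Longrightarrow> ebas i = join n1 (ebas i) vzero"
  by (auto simp: ebas_def join_def vzero_def)
lemma ebas_hi: "ebas (n1+i) = join n1 vzero (ebas i)"
  by (auto simp: ebas_def join_def vzero_def fun_eq_iff)


lemma tr_split: "tr (n1+n2) M = (\<Sum>i<n1. M (join n1 (ebas i) vzero) i) + (\<Sum>i<n2. M (join n1 vzero (ebas i)) (n1+i))"
proof -
  have "tr (n1+n2) M = (\<Sum>i<n1. M (ebas i) i) + (\<Sum>i\<in>{n1..<n1+n2}. M (ebas i) i)"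
    unfolding tr_def by (subst sum.union_disjoint[symmetric]) (auto intro!: sum.cong)
  also have "(\<Sum>i\<in>{n1..<n1+n2}. M (ebas i) i) = (\<Sum>i<n2. M (ebas (n1+i)) (n1+i))"
    by (rule sum.reindex_bij_witness[of _ "\<lambda>i. n1+i" "\<lambda>i. i - n1"]) auto
  finally show ?thesis using ebas_lo ebas_hi by simp
qed

lemma join_lo: "i < n1 \<Longrightarrow> join n1 X Z i = X i" by (simp add: join_def)
lemma join_hi: "join n1 X Z (n1+i) = Z i" by (simp add: join_def)

lemma tr_JU: assumes A: "A \<in> V1" "B \<in> V2"
  shows "tr (n1+n2) (sJ \<circ> sbr (join n1 A B)) = tr n1 (J1 \<circ> br1 A) + tr n2 (J2 \<circ> \<theta> A)"
  unfolding tr_split using A by (simp add: join_lo join_hi tr_def)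

lemma tr_U: assumes A: "A \<in> V1" "B \<in> V2"
  shows "tr (n1+n2) (sbr (join n1 A B)) = tr n1 (br1 A) + tr n2 (\<theta> A)"
  unfolding tr_split using A by (simp add: join_lo join_hi tr_def)

definition pth :: "vec \<Rightarrow> vec \<Rightarrow> real" where
  "pth X Y = - (1/2) * tr n2 (J2 \<circ> \<theta> (br1 X Y)) + (1/2) * tr n2 (\<theta> (J1 (br1 X Y)))"

lemma cr_sd: assumes "X \<in> V1" "Y \<in> V1" "a \<in> V2" "b \<in> V2"
  shows "cr_form (n1+n2) sbr sJ (join n1 X a) (join n1 Y b) = cr_form n1 br1 J1 X Y + pth X Y"
  using assms by (simp add: cr_form_def pth_def tr_JU tr_U algebra_simps)

lemma cr_sd': assumes "u \<in> fvec (n1+n2)" "v \<in> fvec (n1+n2)"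
  shows "cr_form (n1+n2) sbr sJ u v = cr_form n1 br1 J1 (pr1 n1 u) (pr1 n1 v) + pth (pr1 n1 u) (pr1 n1 v)"
  using cr_sd[of "pr1 n1 u" "pr1 n1 v" "pr2 n1 u" "pr2 n1 v"] assms by simp


lemma cr1_pth: assumes c2: "cond2 n1 n2 br1 J1 \<omega>1 J2 \<theta> c" and X: "X \<in> V1" "Y \<in> V1"
  shows "cr_form n1 br1 J1 X Y + pth X Y = c * \<omega>1 X Y"
proof -
  obtain P1 Pt where P1: "cr_operator n1 br1 J1 \<omega>1 P1" and Pt: "P_theta_op n1 n2 br1 J1 \<omega>1 J2 \<theta> Pt"
    and e: "\<forall>X\<in>V1. P1 X = vsub (vsmul c X) (Pt X)" using c2 unfolding cond2_def by blast
  have Ptin: "Pt X \<in> V1" using Pt X unfolding P_theta_op_def lin_on_def by blast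
  have "cr_form n1 br1 J1 X Y = \<omega>1 (P1 X) Y" using P1 X unfolding cr_operator_def by simp
  also have "\<dots> = c * \<omega>1 X Y - \<omega>1 (Pt X) Y" using e X Ptin by simp
  also have "\<omega>1 (Pt X) Y = pth X Y" using Pt X unfolding P_theta_op_def pth_def by simp
  finally show ?thesis by simp
qed

definition Psd :: "real \<Rightarrow> vec \<Rightarrow> vec" where "Psd c u = join n1 (vsmul c (pr1 n1 u)) vzero"

lemma Psd_op: assumes c2: "cond2 n1 n2 br1 J1 \<omega>1 J2 \<theta> c"
  shows "cr_operator (n1+n2) sbr sJ s\<omega> (Psd c)"
  unfolding cr_operator_def
proof
  show "lin_on (n1 + n2) (n1 + n2) (Psd c)" unfolding lin_on_def ball_sum Psd_def
    by (auto simp: joinops) (simp_all add: vdefs algebra_simps)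
  show "\<forall>x\<in>fvec (n1 + n2). \<forall>y\<in>fvec (n1 + n2). s\<omega> (Psd c x) y = cr_form (n1 + n2) sbr sJ x y"
    unfolding ball_sum Psd_def using cr_sd cr1_pth[OF c2] by simp
qed

lemma s\<omega>_zero1[simp]: "v \<in> fvec (n1+n2) \<Longrightarrow> s\<omega> vzero v = 0"
proof -
  have "pr1 n1 vzero = vzero" "pr2 n1 vzero = vzero" by (auto simp: pr1_def pr2_def vzero_def)
  moreover assume "v \<in> fvec (n1+n2)"
  ultimately show ?thesis by (simp add: sd_\<omega>_def)
qed

lemma P_unique: assumes c2: "cond2 n1 n2 br1 J1 \<omega>1 J2 \<theta> c"
  and P: "cr_operator (n1+n2) sbr sJ s\<omega> P" and u: "u \<in> fvec (n1+n2)"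
  shows "P u = Psd c u"
proof -
  have L: "lin_on (n1+n2) (n1+n2) P" using P unfolding cr_operator_def by blast
  have L2: "lin_on (n1+n2) (n1+n2) (Psd c)" using Psd_op[OF c2] unfolding cr_operator_def by blast
  have in1: "P u \<in> fvec (n1+n2)" "Psd c u \<in> fvec (n1+n2)" using L L2 u lin_in by blast+
  have "\<forall>v\<in>fvec (n1+n2). s\<omega> (vsub (P u) (Psd c u)) v = 0"
  proof
    fix v assume v: "v \<in> fvec (n1+n2)"
    have "s\<omega> (vsub (P u) (Psd c u)) v = s\<omega> (P u) v - s\<omega> (Psd c u) v"
      using s\<omega>_bilin in1 v unfolding bilin_on_def vsub_eq by (simp)
    also have "\<dots> = 0" using P Psd_op[OF c2] u v unfolding cr_operator_def by simp
    finally show "s\<omega> (vsub (P u) (Psd c u)) v = 0" .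
  qed
  hence "vsub (P u) (Psd c u) = vzero" using s\<omega>_nd in1 by simp
  thus ?thesis by (simp add: vdefs fun_eq_iff)
qed

definition Dsd :: "real \<Rightarrow> vec \<Rightarrow> vec" where "Dsd c u = join n1 vzero (vsmul (-c) (pr2 n1 u))"

lemma sd_soliton: assumes c1: "cond1 n1 n2 J1 J2 \<theta>" and c2: "cond2 n1 n2 br1 J1 \<omega>1 J2 \<theta> c"
  shows "cr_soliton (n1+n2) sbr sJ s\<omega>"
  unfolding cr_soliton_def
proof (intro exI conjI)
  show "cr_operator (n1+n2) sbr sJ s\<omega> (Psd c)" by (rule Psd_op[OF c2])
  have DL: "lin_on (n1 + n2) (n1 + n2) (Dsd c)" unfolding lin_on_def ball_sum Dsd_def
    by (auto simp: joinops) (simp_all add: vdefs algebra_simps)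
  show "derivation (n1 + n2) sbr (Dsd c)" unfolding derivation_def
  proof (intro conjI DL)
    show "\<forall>x\<in>fvec (n1 + n2). \<forall>y\<in>fvec (n1 + n2). Dsd c (sbr x y) = vadd (sbr (Dsd c x) y) (sbr x (Dsd c y))"
      unfolding ball_sum Dsd_def by (auto simp: joinops join_eq_iff) (simp add: vdefs fun_eq_iff algebra_simps)
  qed
  show "\<forall>x\<in>fvec (n1 + n2). Dsd c (sJ x) = sJ (Dsd c x)"
    unfolding ball_sum Dsd_def by auto
  show "is_transpose (n1 + n2) (metric s\<omega> sJ) (Dsd c) (Dsd c)"
    unfolding is_transpose_def metric_def using DL unfolding ball_sum Dsd_def by auto
  show "\<forall>x\<in>fvec (n1 + n2). Psd c x = vadd (vsmul c x) (vsmul (1 / 2) (vadd (Dsd c x) (Dsd c x)))"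
    unfolding ball_sum Dsd_def Psd_def by (auto simp: joinops join_eq_iff) (auto simp: vdefs fun_eq_iff field_simps)
qed


lemma closed_expand: assumes "X \<in> V1" "Y \<in> V1" "Z \<in> V1" "a \<in> V2" "b \<in> V2" "c \<in> V2"
  shows "s\<omega> (sbr (join n1 X a) (join n1 Y b)) (join n1 Z c) + s\<omega> (sbr (join n1 Y b) (join n1 Z c)) (join n1 X a)
       + s\<omega> (sbr (join n1 Z c) (join n1 X a)) (join n1 Y b)
     = (\<omega>1 (br1 X Y) Z + \<omega>1 (br1 Y Z) X + \<omega>1 (br1 Z X) Y)
       + (\<omega>2 (\<theta> X b) c - \<omega>2 (\<theta> Y a) c + \<omega>2 (\<theta> Y c) a - \<omega>2 (\<theta> Z b) a + \<omega>2 (\<theta> Z a) b - \<omega>2 (\<theta> X c) b)"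
  using assms by simp

lemma closed_sd_iff: "closed_form (n1+n2) sbr s\<omega> \<longleftrightarrow> closed_form n1 br1 \<omega>1 \<and> (\<forall>X\<in>V1. in_sp n2 \<omega>2 (\<theta> X))"
proof
  assume h: "closed_form (n1+n2) sbr s\<omega>"
  have h': "\<forall>X\<in>V1. \<forall>a\<in>V2. \<forall>Y\<in>V1. \<forall>b\<in>V2. \<forall>Z\<in>V1. \<forall>c\<in>V2.
      s\<omega> (sbr (join n1 X a) (join n1 Y b)) (join n1 Z c) + s\<omega> (sbr (join n1 Y b) (join n1 Z c)) (join n1 X a)
       + s\<omega> (sbr (join n1 Z c) (join n1 X a)) (join n1 Y b) = 0"
    using h unfolding closed_form_def ball_sum by blast
  show "closed_form n1 br1 \<omega>1 \<and> (\<forall>X\<in>V1. in_sp n2 \<omega>2 (\<theta> X))"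
  proof
    show "closed_form n1 br1 \<omega>1" unfolding closed_form_def
    proof (intro ballI)
      fix X Y Z assume xyz: "X \<in> V1" "Y \<in> V1" "Z \<in> V1"
      show "\<omega>1 (br1 X Y) Z + \<omega>1 (br1 Y Z) X + \<omega>1 (br1 Z X) Y = 0"
        using h'[rule_format, OF xyz(1) fvec_zero xyz(2) fvec_zero xyz(3) fvec_zero] closed_expand[OF xyz] by simp
    qed
    show "\<forall>X\<in>V1. in_sp n2 \<omega>2 (\<theta> X)" unfolding in_sp_def
    proof (intro ballI)
      fix X b c assume x: "X \<in> V1" "b \<in> V2" "c \<in> V2"
      have "\<omega>2 (\<theta> X b) c - \<omega>2 (\<theta> X c) b = 0"
        using h'[rule_format, OF x(1) fvec_zero fvec_zero x(2) fvec_zero x(3)] closed_expand[OF x(1) fvec_zero fvec_zero fvec_zero x(2) x(3)] x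
        by simp
      thus "\<omega>2 (\<theta> X b) c + \<omega>2 b (\<theta> X c) = 0" using om2_anti[of b "\<theta> X c"] x by simp
    qed
  qed
next
  assume h: "closed_form n1 br1 \<omega>1 \<and> (\<forall>X\<in>V1. in_sp n2 \<omega>2 (\<theta> X))"
  show "closed_form (n1+n2) sbr s\<omega>" unfolding closed_form_def ball_sum
  proof (intro ballI)
    fix X a Y b Z c assume x: "X \<in> V1" "a \<in> V2" "Y \<in> V1" "b \<in> V2" "Z \<in> V1" "c \<in> V2"
    have sp: "\<And>X b c. X \<in> V1 \<Longrightarrow> b \<in> V2 \<Longrightarrow> c \<in> V2 \<Longrightarrow> \<omega>2 (\<theta> X b) c = \<omega>2 (\<theta> X c) b"
    proof -
      fix X b c assume x: "X \<in> V1" "b \<in> V2" "c \<in> V2"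
      have "\<omega>2 (\<theta> X b) c + \<omega>2 b (\<theta> X c) = 0" using h x unfolding in_sp_def by blast
      thus "\<omega>2 (\<theta> X b) c = \<omega>2 (\<theta> X c) b" using om2_anti[of b "\<theta> X c"] x by simp
    qed
    have c1: "\<omega>1 (br1 X Y) Z + \<omega>1 (br1 Y Z) X + \<omega>1 (br1 Z X) Y = 0" using h x unfolding closed_form_def by blast
    show "s\<omega> (sbr (join n1 X a) (join n1 Y b)) (join n1 Z c) + s\<omega> (sbr (join n1 Y b) (join n1 Z c)) (join n1 X a)
       + s\<omega> (sbr (join n1 Z c) (join n1 X a)) (join n1 Y b) = 0"
      unfolding closed_expand[OF x(1,3,5,2,4,6)] using c1 sp[of X b c] sp[of Y c a] sp[of Z a b] x by simp
  qed
qed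

lemma kaehler_sd: "cond1 n1 n2 J1 J2 \<theta> \<Longrightarrow>
   kaehler (n1+n2) sbr sJ s\<omega> \<longleftrightarrow> closed_form n1 br1 \<omega>1 \<and> (\<forall>X\<in>V1. in_sp n2 \<omega>2 (\<theta> X))"
  unfolding kaehler_def using sd_herm closed_sd_iff by blast

lemma sp_transpose: "(\<forall>X\<in>V1. in_sp n2 \<omega>2 (\<theta> X)) \<longleftrightarrow>
           (\<forall>X\<in>V1. is_transpose n2 (metric \<omega>2 J2) (\<theta> X) (J2 \<circ> \<theta> X \<circ> J2))"
proof -
  have "in_sp n2 \<omega>2 (\<theta> X) \<longleftrightarrow> is_transpose n2 (metric \<omega>2 J2) (\<theta> X) (J2 \<circ> \<theta> X \<circ> J2)" if X: "X \<in> V1" for X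
  proof
    assume sp: "in_sp n2 \<omega>2 (\<theta> X)"
    show "is_transpose n2 (metric \<omega>2 J2) (\<theta> X) (J2 \<circ> \<theta> X \<circ> J2)"
      unfolding is_transpose_def metric_def
    proof (intro conjI ballI)
      show "lin_on n2 n2 (J2 \<circ> \<theta> X \<circ> J2)" using X J2lin thlin lin_comp by blast
      fix x y assume xy: "x \<in> V2" "y \<in> V2"
      have "\<omega>2 (\<theta> X x) (J2 y) + \<omega>2 x (\<theta> X (J2 y)) = 0" using sp xy unfolding in_sp_def by simp
      thus "\<omega>2 (\<theta> X x) (J2 y) = \<omega>2 x (J2 ((J2 \<circ> \<theta> X \<circ> J2) y))" using xy X by (simp add: J2J2)
    qed
  next
    assume tp: "is_transpose n2 (metric \<omega>2 J2) (\<theta> X) (J2 \<circ> \<theta> X \<circ> J2)"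
    show "in_sp n2 \<omega>2 (\<theta> X)" unfolding in_sp_def
    proof (intro ballI)
      fix x y assume xy: "x \<in> V2" "y \<in> V2"
      define y' where "y' = vsmul (-1) (J2 y)"
      have y': "y' \<in> V2" "J2 y' = y" using xy by (simp_all add: y'_def J2J2) (simp add: vdefs)
      have "\<omega>2 (\<theta> X x) (J2 y') = \<omega>2 x (J2 ((J2 \<circ> \<theta> X \<circ> J2) y'))"
        using tp xy y' unfolding is_transpose_def metric_def by blast
      thus "\<omega>2 (\<theta> X x) y + \<omega>2 x (\<theta> X y) = 0" using xy X y' by (simp add: J2J2)
    qed
  qed
  thus ?thesis by blast
qed

end


lemma vsum_in_set: assumes W0: "vzero \<in> W" and Wa: "\<And>x y. x \<in> W \<Longrightarrow> y \<in> W \<Longrightarrow> vadd x y \<in> W"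
  and Ws: "\<And>a x. x \<in> W \<Longrightarrow> vsmul a x \<in> W"
  shows "finite K \<Longrightarrow> (\<And>k. k \<in> K \<Longrightarrow> v k \<in> W) \<Longrightarrow> vsum K a v \<in> W"
proof (induction K rule: finite_induct)
  case empty thus ?case using W0 by simp
next
  case (insert k K) thus ?case using Wa Ws by (simp add: vsum_insert)
qed

locale ip =
  fixes n :: nat and g :: "vec \<Rightarrow> vec \<Rightarrow> real"
  assumes g_bil: "bilin_on n g" and g_sym: "x \<in> fvec n \<Longrightarrow> y \<in> fvec n \<Longrightarrow> g x y = g y x"
    and g_pos: "x \<in> fvec n \<Longrightarrow> x \<noteq> vzero \<Longrightarrow> g x x > 0"
begin

abbreviation "V \<equiv> fvec n"

lemma g_add1[simp]: "x \<in> V \<Longrightarrow> y \<in> V \<Longrightarrow> z \<in> V \<Longrightarrow> g (vadd x y) z = g x z + g y z" using g_bil unfolding bilin_on_def by blast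
lemma g_add2[simp]: "x \<in> V \<Longrightarrow> y \<in> V \<Longrightarrow> z \<in> V \<Longrightarrow> g z (vadd x y) = g z x + g z y" using g_bil unfolding bilin_on_def by blast
lemma g_smul1[simp]: "x \<in> V \<Longrightarrow> y \<in> V \<Longrightarrow> g (vsmul a x) y = a * g x y" using g_bil unfolding bilin_on_def by blast
lemma g_smul2[simp]: "x \<in> V \<Longrightarrow> y \<in> V \<Longrightarrow> g x (vsmul a y) = a * g x y" using g_bil unfolding bilin_on_def by blast
lemma g_sub1[simp]: "x \<in> V \<Longrightarrow> y \<in> V \<Longrightarrow> z \<in> V \<Longrightarrow> g (vsub x y) z = g x z - g y z" by (simp add: vsub_eq)
lemma g_sub2[simp]: "x \<in> V \<Longrightarrow> y \<in> V \<Longrightarrow> z \<in> V \<Longrightarrow> g z (vsub x y) = g z x - g z y" by (simp add: vsub_eq)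
lemma g_zero1[simp]: "x \<in> V \<Longrightarrow> g vzero x = 0" using g_smul1[of vzero x 0] by (simp add: vdefs fvec_def)
lemma g_zero2[simp]: "x \<in> V \<Longrightarrow> g x vzero = 0" using g_smul2[of x vzero 0] by (simp add: vdefs fvec_def)
lemma g_nn: "x \<in> V \<Longrightarrow> g x x \<ge> 0" using g_pos[of x] by (cases "x = vzero") auto
lemma g_eq0: "x \<in> V \<Longrightarrow> g x x = 0 \<Longrightarrow> x = vzero" using g_pos[of x] by force

lemma g_vsum1: assumes "finite K" "\<And>k. k \<in> K \<Longrightarrow> v k \<in> V" "y \<in> V"
  shows "g (vsum K a v) y = (\<Sum>k\<in>K. a k * g (v k) y)"
  using assms by (induction K rule: finite_induct) (simp_all add: vsum_insert)
lemma g_vsum2: assumes "finite K" "\<And>k. k \<in> K \<Longrightarrow> v k \<in> V" "y \<in> V"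
  shows "g y (vsum K a v) = (\<Sum>k\<in>K. a k * g y (v k))"
  using assms by (induction K rule: finite_induct) (simp_all add: vsum_insert)

definition ON :: "vec list \<Rightarrow> bool" where
  "ON bs \<longleftrightarrow> set bs \<subseteq> V \<and> (\<forall>i<length bs. \<forall>j<length bs. g (bs!i) (bs!j) = (if i = j then 1 else 0))"

definition recon :: "vec list \<Rightarrow> vec \<Rightarrow> vec" where
  "recon bs x = vsum {..<length bs} (\<lambda>k. g x (bs!k)) (\<lambda>k. bs!k)"

lemma ON_in: "ON bs \<Longrightarrow> k < length bs \<Longrightarrow> bs!k \<in> V" unfolding ON_def by auto
lemma ON_g: "ON bs \<Longrightarrow> i < length bs \<Longrightarrow> j < length bs \<Longrightarrow> g (bs!i) (bs!j) = (if i = j then 1 else 0)" unfolding ON_def by auto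

lemma recon_in[simp]: "ON bs \<Longrightarrow> recon bs x \<in> V" unfolding recon_def by (intro fvec_vsum) (simp add: ON_in)

lemma g_recon: assumes "ON bs" "j < length bs" "x \<in> V" shows "g (recon bs x) (bs!j) = g x (bs!j)"
proof -
  have "g (recon bs x) (bs!j) = (\<Sum>k<length bs. g x (bs!k) * g (bs!k) (bs!j))"
    unfolding recon_def using assms by (subst g_vsum1) (auto intro: ON_in)
  also have "\<dots> = (\<Sum>k<length bs. if k = j then g x (bs!j) else 0)"
    using assms by (intro sum.cong) (auto simp: ON_g)
  also have "\<dots> = g x (bs!j)" using assms by simp
  finally show ?thesis .
qed

lemma recon_member: assumes "ON bs" "j < length bs" shows "recon bs (bs!j) = bs!j"
proof
  fix i
  have "recon bs (bs!j) i = (\<Sum>k<length bs. if k = j then (bs!j) i else 0)"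
    unfolding recon_def vsum_def using assms by (intro sum.cong) (auto simp: ON_g)
  also have "\<dots> = (bs!j) i" using assms by simp
  finally show "recon bs (bs!j) i = (bs!j) i" .
qed

lemma recon_add: assumes "ON bs" "x \<in> V" "y \<in> V" shows "recon bs (vadd x y) = vadd (recon bs x) (recon bs y)"
proof -
  have "recon bs (vadd x y) = vsum {..<length bs} (\<lambda>k. g x (bs!k) + g y (bs!k)) (\<lambda>k. bs!k)"
    unfolding recon_def vsum_def using assms by (intro ext sum.cong) (simp_all add: ON_in)
  thus ?thesis unfolding recon_def vsum_def vadd_def by (simp add: algebra_simps sum.distrib)
qed
lemma recon_smul: assumes "ON bs" "x \<in> V" shows "recon bs (vsmul a x) = vsmul a (recon bs x)"
proof -
  have "recon bs (vsmul a x) = vsum {..<length bs} (\<lambda>k. a * g x (bs!k)) (\<lambda>k. bs!k)"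
    unfolding recon_def vsum_def using assms by (intro ext sum.cong) (simp_all add: ON_in)
  thus ?thesis unfolding recon_def vsum_def vsmul_def by (simp add: algebra_simps sum_distrib_left)
qed
lemma recon_lin: "ON bs \<Longrightarrow> lin_on n n (recon bs)"
  unfolding lin_on_def by (simp add: recon_add recon_smul)

lemma recon_idem: assumes "ON bs" "x \<in> V" shows "recon bs (recon bs x) = recon bs x"
  unfolding recon_def[of bs "recon bs x"] using g_recon[OF assms(1) _ assms(2)]
  by (simp add: recon_def[of bs x] vsum_def)

lemma g_orth: assumes "ON bs" "x \<in> V" "recon bs x = x" "y \<in> V" "\<And>k. k < length bs \<Longrightarrow> g (bs!k) y = 0"
  shows "g x y = 0"
proof -
  have "g x y = g (recon bs x) y" using assms by simp
  also have "\<dots> = (\<Sum>k<length bs. g x (bs!k) * g (bs!k) y)"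
    unfolding recon_def using assms by (subst g_vsum1) (auto intro: ON_in)
  also have "\<dots> = 0" using assms by simp
  finally show ?thesis .
qed

lemma recon_append: "recon (bs @ cs) x = vadd (recon bs x) (recon cs x)"
proof -
  have "{..<length bs + length cs} = {..<length bs} \<union> {length bs..<length bs + length cs}" by auto
  have *: "\<And>f::nat\<Rightarrow>real. (\<Sum>k<length bs + length cs. f k) = (\<Sum>k<length bs. f k) + (\<Sum>k<length cs. f (length bs + k))"
  proof -
    fix f :: "nat \<Rightarrow> real"
    have "(\<Sum>k<length bs + length cs. f k) = (\<Sum>k<length bs. f k) + (\<Sum>k\<in>{length bs..<length bs + length cs}. f k)"
      by (subst sum.union_disjoint[symmetric]) (auto intro!: sum.cong)
    also have "(\<Sum>k\<in>{length bs..<length bs + length cs}. f k) = (\<Sum>k<length cs. f (length bs + k))"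
      by (rule sum.reindex_bij_witness[of _ "\<lambda>i. length bs + i" "\<lambda>i. i - length bs"]) auto
    finally show "(\<Sum>k<length bs + length cs. f k) = (\<Sum>k<length bs. f k) + (\<Sum>k<length cs. f (length bs + k))" .
  qed
  show ?thesis unfolding recon_def vsum_def vadd_def
    by (rule ext, simp only: length_append *) (simp add: nth_append)
qed

lemma sp_ext: assumes ON: "ON (bs @ cs)" and x: "x \<in> V" "recon bs x = x" shows "recon (bs @ cs) x = x"
proof -
  have ONb: "ON bs" using ON unfolding ON_def
  proof (intro conjI allI impI)
    fix i j assume "i < length bs" "j < length bs"
    thus "g (bs!i) (bs!j) = (if i = j then 1 else 0)"
      using ON_g[OF ON, of i j] by (simp add: nth_append)
  qed (auto)
  have ONc: "ON cs" using ON unfolding ON_def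
  proof (intro conjI allI impI)
    fix i j assume "i < length cs" "j < length cs"
    thus "g (cs!i) (cs!j) = (if i = j then 1 else 0)"
      using ON_g[OF ON, of "length bs + i" "length bs + j"] by (simp add: nth_append)
  qed (auto)
  have "\<And>j. j < length cs \<Longrightarrow> g x (cs!j) = 0"
  proof -
    fix j assume j: "j < length cs"
    show "g x (cs!j) = 0"
    proof (rule g_orth[OF ONb x(1) x(2)])
      show "cs!j \<in> V" using ONc j ON_in by blast
      fix k assume k: "k < length bs"
      show "g (bs!k) (cs!j) = 0" using ON_g[OF ON, of k "length bs + j"] k j by (simp add: nth_append)
    qed
  qed
  hence "recon cs x = vzero" unfolding recon_def vsum_def vzero_def by simp
  thus ?thesis using recon_append x by simp
qed

definition coord :: "vec list \<Rightarrow> vec \<Rightarrow> vec" where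
  "coord bs x = (\<lambda>k. if k < length bs then g x (bs!k) else 0)"
definition uncoord :: "vec list \<Rightarrow> vec \<Rightarrow> vec" where
  "uncoord bs y = vsum {..<length bs} y (\<lambda>k. bs!k)"

lemma coord_lin: "ON bs \<Longrightarrow> lin_on n (length bs) (coord bs)"
  unfolding lin_on_def coord_def by (auto simp: ON_in cong: if_cong) (auto simp: fvec_def vdefs fun_eq_iff)
lemma uncoord_lin: "ON bs \<Longrightarrow> lin_on (length bs) n (uncoord bs)"
  unfolding lin_on_def uncoord_def vsum_def
  by (auto simp: fvec_def vdefs fun_eq_iff ON_in algebra_simps sum.distrib sum_distrib_left intro!: sum.neutral dest: ON_in)
lemma uncoord_coord: "uncoord bs (coord bs x) = recon bs x"
  unfolding uncoord_def coord_def recon_def vsum_def by simp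
lemma coord_uncoord: assumes "ON bs" "y \<in> fvec (length bs)" shows "coord bs (uncoord bs y) = y"
proof
  fix k show "coord bs (uncoord bs y) k = y k"
  proof (cases "k < length bs")
    case True
    have "g (uncoord bs y) (bs!k) = (\<Sum>j<length bs. y j * g (bs!j) (bs!k))"
      unfolding uncoord_def using assms True by (subst g_vsum1) (auto intro: ON_in)
    also have "\<dots> = (\<Sum>j<length bs. if j = k then y k else 0)" using assms True by (intro sum.cong) (auto simp: ON_g)
    also have "\<dots> = y k" using True by simp
    finally show ?thesis using True by (simp add: coord_def)
  next
    case False thus ?thesis using assms(2) by (simp add: coord_def fvec_def)
  qed
qed
lemma uncoord_ebas: assumes "k < length bs" shows "uncoord bs (ebas k) = bs!k"
proof
  fix i
  have "uncoord bs (ebas k) i = (\<Sum>j<length bs. if j = k then (bs!k) i else 0)"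
    unfolding uncoord_def vsum_def by (rule sum.cong) (auto simp: ebas_def)
  thus "uncoord bs (ebas k) i = (bs!k) i" using assms by simp
qed

definition spans :: "vec list \<Rightarrow> bool" where "spans bs \<longleftrightarrow> ON bs \<and> (\<forall>x\<in>V. recon bs x = x)"

lemma tr_ON: assumes sp: "spans bs" and M: "lin_on n n M"
  shows "tr n M = (\<Sum>k<length bs. g (M (bs!k)) (bs!k))"
proof -
  have ON: "ON bs" using sp unfolding spans_def by blast
  have "tr n M = tr n (uncoord bs \<circ> (coord bs \<circ> M))"
    by (rule tr_cong) (use sp M lin_in in \<open>auto simp: uncoord_coord spans_def\<close>)
  also have "\<dots> = tr (length bs) ((coord bs \<circ> M) \<circ> uncoord bs)"
    by (rule tr_cyc[symmetric]) (simp_all add: lin_comp[OF M coord_lin[OF ON]] uncoord_lin ON)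
  also have "\<dots> = (\<Sum>k<length bs. g (M (bs!k)) (bs!k))"
    unfolding tr_def by (rule sum.cong) (simp_all add: uncoord_ebas coord_def)
  finally show ?thesis .
qed

lemma coord_bij: assumes "spans bs" shows "bij_betw (coord bs) V (fvec (length bs))"
proof (rule bij_betw_byWitness[of _ "uncoord bs"])
  have ON: "ON bs" using assms unfolding spans_def by blast
  show "\<forall>a\<in>V. uncoord bs (coord bs a) = a" using assms by (simp add: uncoord_coord spans_def)
  show "\<forall>a'\<in>fvec (length bs). coord bs (uncoord bs a') = a'" using coord_uncoord ON by blast
  show "coord bs ` V \<subseteq> fvec (length bs)" using coord_lin[OF ON] lin_in by blast
  show "uncoord bs ` fvec (length bs) \<subseteq> V" using uncoord_lin[OF ON] lin_in by blast
qed


lemma ON_append2: assumes ON: "ON bs" and uv: "u \<in> V" "u' \<in> V"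
  and orth: "\<And>k. k < length bs \<Longrightarrow> g (bs!k) u = 0 \<and> g (bs!k) u' = 0"
  and n: "g u u = 1" "g u' u' = 1" "g u u' = 0"
  shows "ON (bs @ [u, u'])"
  unfolding ON_def
proof (intro conjI allI impI)
  show "set (bs @ [u, u']) \<subseteq> V" using ON uv unfolding ON_def by auto
  fix i j assume ij: "i < length (bs @ [u, u'])" "j < length (bs @ [u, u'])"
  have gs: "\<And>x y. x \<in> V \<Longrightarrow> y \<in> V \<Longrightarrow> g x y = g y x" using g_sym by blast
  have bV: "\<And>k. k < length bs \<Longrightarrow> bs!k \<in> V" using ON ON_in by blast
  consider "i < length bs" | "i = length bs" | "i = Suc (length bs)" using ij by force
  note ci = this
  consider "j < length bs" | "j = length bs" | "j = Suc (length bs)" using ij by force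
  note cj = this
  show "g ((bs @ [u, u']) ! i) ((bs @ [u, u']) ! j) = (if i = j then 1 else 0)"
    apply (cases rule: ci; cases rule: cj)
    using ON_g[OF ON, of i j] orth[of i] orth[of j] n uv bV[of i] bV[of j] gs[of u "bs!j"] gs[of u' "bs!j"] gs[of u u']
    by (simp_all add: nth_append)
qed

end

locale ipJ = ip +
  fixes J :: "vec \<Rightarrow> vec"
  assumes J_lin: "lin_on n n J" and JJ: "x \<in> fvec n \<Longrightarrow> J (J x) = vsmul (-1) x"
    and gJJ: "x \<in> fvec n \<Longrightarrow> y \<in> fvec n \<Longrightarrow> g (J x) (J y) = g x y"
begin

lemma J_in[simp]: "x \<in> V \<Longrightarrow> J x \<in> V" using J_lin lin_in by blast
lemma J_smul[simp]: "x \<in> V \<Longrightarrow> J (vsmul a x) = vsmul a (J x)" using J_lin lin_smul by blast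
lemma gJ_skew: "x \<in> V \<Longrightarrow> y \<in> V \<Longrightarrow> g x (J y) = - g (J x) y"
proof -
  assume xy: "x \<in> V" "y \<in> V"
  have "g (J x) y = g (J (J x)) (J y)" using gJJ xy by simp
  also have "\<dots> = - g x (J y)" using xy JJ by simp
  finally show ?thesis by simp
qed
lemma g_xJx: "x \<in> V \<Longrightarrow> g x (J x) = 0"
  using gJ_skew[of x x] g_sym[of x "J x"] by simp

lemma GS_step:
  assumes W: "W \<subseteq> V" "vzero \<in> W" "\<And>x y. x \<in> W \<Longrightarrow> y \<in> W \<Longrightarrow> vadd x y \<in> W"
    "\<And>a x. x \<in> W \<Longrightarrow> vsmul a x \<in> W" "\<And>x. x \<in> W \<Longrightarrow> J x \<in> W"
  and bs: "ON bs" "set bs \<subseteq> W" "even (length bs)" "\<forall>v\<in>A. recon bs v = v"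
     "\<forall>k<length bs. recon bs (J (bs!k)) = J (bs!k)"
  and A: "A \<subseteq> V" and v: "v \<in> W"
  shows "\<exists>bs'. ON bs' \<and> set bs' \<subseteq> W \<and> even (length bs') \<and> (\<forall>v'\<in>insert v A. recon bs' v' = v')
     \<and> (\<forall>k<length bs'. recon bs' (J (bs'!k)) = J (bs'!k))"
proof -
  have vV: "v \<in> V" using v W by blast
  have bV: "\<And>k. k < length bs \<Longrightarrow> bs!k \<in> V" using bs ON_in by blast
  have bW: "\<And>k. k < length bs \<Longrightarrow> bs!k \<in> W" using bs(2) by auto
  define w where "w = vsub v (recon bs v)"
  have rW: "recon bs v \<in> W" unfolding recon_def by (rule vsum_in_set[OF W(2,3,4)]) (simp_all add: bW)
  have wW: "w \<in> W" unfolding w_def vsub_eq using W rW v by blast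
  have wV: "w \<in> V" using wW W by blast
  have rV: "recon bs v \<in> V" using bs by simp
  have gbw: "\<And>k. k < length bs \<Longrightarrow> g (bs!k) w = 0"
    unfolding w_def using bV vV rV g_recon[OF bs(1) _ vV] g_sym by simp
  show ?thesis
  proof (cases "w = vzero")
    case True
    hence "recon bs v = v" unfolding w_def by (simp add: vdefs fun_eq_iff)
    thus ?thesis using bs by (intro exI[of _ bs]) auto
  next
    case False
    define r where "r = sqrt (g w w)"
    have gww: "g w w > 0" using g_pos wV False by blast
    have r: "r > 0" "r * r = g w w" using gww unfolding r_def by (simp_all add: real_sqrt_mult[symmetric])
    define u where "u = vsmul (1/r) w"
    have uW: "u \<in> W" "J u \<in> W" using wW W unfolding u_def by blast+
    have uV: "u \<in> V" "J u \<in> V" using uW W by blast+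
    have guu: "g u u = 1" unfolding u_def using wV r gww by (simp add: field_simps)
    have gJuJu: "g (J u) (J u) = 1" using gJJ uV guu by simp
    have guJu: "g u (J u) = 0" using g_xJx uV by simp
    have gbu: "\<And>k. k < length bs \<Longrightarrow> g (bs!k) u = 0" unfolding u_def using gbw bV wV by simp
    have gbJu: "\<And>k. k < length bs \<Longrightarrow> g (bs!k) (J u) = 0"
    proof -
      fix k assume k: "k < length bs"
      have "g (J (bs!k)) u = 0"
        by (rule g_orth[OF bs(1)]) (use k bV uV bs(5) gbu in auto)
      thus "g (bs!k) (J u) = 0" using gJ_skew[of "bs!k" u] k bV uV by simp
    qed
    define bs' where "bs' = bs @ [u, J u]"
    have ON': "ON bs'" unfolding bs'_def
      by (rule ON_append2[OF bs(1) uV]) (use gbu gbJu guu gJuJu guJu in auto)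
    have ext: "\<And>x. x \<in> V \<Longrightarrow> recon bs x = x \<Longrightarrow> recon bs' x = x"
      using sp_ext ON' unfolding bs'_def by blast
    have ru: "recon bs' u = u" "recon bs' (J u) = J u"
      using recon_member[OF ON', of "length bs"] recon_member[OF ON', of "Suc (length bs)"]
      unfolding bs'_def by (simp_all add: nth_append)
    have rv: "recon bs' v = v"
    proof -
      have "recon bs' v = vadd (recon bs v) (recon [u, J u] v)" unfolding bs'_def by (rule recon_append)
      also have "recon [u, J u] v = vadd (vsmul (g v u) u) (vsmul (g v (J u)) (J u))"
        unfolding recon_def vsum_def by (auto simp: vdefs lessThan_Suc numeral_2_eq_2)
      also have "g v u = r"
      proof -
        have "v = vadd w (recon bs v)" unfolding w_def by (simp add: vdefs)
        hence "g v u = g w u + g (recon bs v) u" using wV rV uV by (metis g_add1)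
        also have "g (recon bs v) u = 0"
          by (rule g_orth[OF bs(1) rV recon_idem[OF bs(1) vV] uV(1) gbu])
        also have "g w u = r" unfolding u_def using wV r by (simp add: field_simps)
        finally show ?thesis by simp
      qed
      also have "g v (J u) = 0"
      proof -
        have "v = vadd w (recon bs v)" unfolding w_def by (simp add: vdefs)
        hence "g v (J u) = g w (J u) + g (recon bs v) (J u)" using wV rV uV by (metis g_add1)
        also have "g (recon bs v) (J u) = 0"
          by (rule g_orth[OF bs(1) rV recon_idem[OF bs(1) vV] uV(2) gbJu])
        also have "g w (J u) = 0" unfolding u_def using wV r g_xJx[OF wV] by simp
        finally show ?thesis by simp
      qed
      finally show ?thesis unfolding u_def w_def using r by (simp add: vdefs fun_eq_iff)
    qed
    have rJ: "\<forall>k<length bs'. recon bs' (J (bs'!k)) = J (bs'!k)"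
    proof (intro allI impI)
      fix k assume k: "k < length bs'"
      consider "k < length bs" | "k = length bs" | "k = Suc (length bs)" using k unfolding bs'_def by force
      thus "recon bs' (J (bs'!k)) = J (bs'!k)"
      proof cases
        case 1 thus ?thesis using ext[of "J (bs!k)"] bs(5) bV unfolding bs'_def by (simp add: nth_append)
      next
        case 2 thus ?thesis using ru unfolding bs'_def by (simp add: nth_append)
      next
        case 3
        have "recon bs' (vsmul (-1) u) = vsmul (-1) u" using recon_smul[OF ON' uV(1)] ru by simp
        thus ?thesis using 3 JJ uV unfolding bs'_def by (simp add: nth_append)
      qed
    qed
    show ?thesis
    proof (intro exI[of _ bs'] conjI)
      show "ON bs'" by (rule ON')
      show "set bs' \<subseteq> W" using bs uW unfolding bs'_def by auto
      show "even (length bs')" using bs unfolding bs'_def by simp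
      show "\<forall>v'\<in>insert v A. recon bs' v' = v'" using rv ext bs(4) A by auto
      show "\<forall>k<length bs'. recon bs' (J (bs'!k)) = J (bs'!k)" by (rule rJ)
    qed
  qed
qed

lemma GS:
  assumes W: "W \<subseteq> V" "vzero \<in> W" "\<And>x y. x \<in> W \<Longrightarrow> y \<in> W \<Longrightarrow> vadd x y \<in> W"
    "\<And>a x. x \<in> W \<Longrightarrow> vsmul a x \<in> W" "\<And>x. x \<in> W \<Longrightarrow> J x \<in> W"
  shows "set vs \<subseteq> W \<Longrightarrow> \<exists>bs. ON bs \<and> set bs \<subseteq> W \<and> even (length bs) \<and> (\<forall>v\<in>set vs. recon bs v = v)
     \<and> (\<forall>k<length bs. recon bs (J (bs!k)) = J (bs!k))"
proof (induction vs)
  case Nil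
  show ?case by (rule exI[of _ "[]"]) (simp add: ON_def)
next
  case (Cons v vs)
  then obtain bs where bs: "ON bs" "set bs \<subseteq> W" "even (length bs)" "\<forall>v\<in>set vs. recon bs v = v"
     "\<forall>k<length bs. recon bs (J (bs!k)) = J (bs!k)" by auto
  show ?case using GS_step[OF W bs, of v] Cons.prems W(1) by auto
qed

end



lemma fvec0: "x \<in> fvec 0 \<Longrightarrow> x = vzero" by (auto simp: fvec_def vzero_def)

definition tJ2 :: "vec \<Rightarrow> vec" where "tJ2 z = vzero"
definition t\<omega>2 :: "vec \<Rightarrow> vec \<Rightarrow> real" where "t\<omega>2 a b = 0"
definition tth :: "vec \<Rightarrow> vec \<Rightarrow> vec" where "tth X z = vzero"

lemma triv_herm: "hermitian_lie 0 zero_br tJ2 t\<omega>2"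
  unfolding hermitian_lie_def tJ2_def t\<omega>2_def lie_algebra_def lin_on_def bilin_on_def metric_def zero_br_def
  by (auto dest: fvec0 simp: vdefs fvec_def)

lemma triv_rep: "lie_algebra n br \<Longrightarrow> representation n 0 br tth"
  unfolding representation_def tth_def lin_on_def by (auto dest: fvec0 simp: vdefs fvec_def)

lemma recon_vsum_gen: assumes l: "lin_on n n R" and fin: "finite K"
  and v: "\<And>k. k \<in> K \<Longrightarrow> v k \<in> fvec n" "\<And>k. k \<in> K \<Longrightarrow> R (v k) = v k"
  shows "R (vsum K a v) = vsum K a v"
  using lin_vsum[OF l fin, of v a] v by (simp add: vsum_def)

locale hl = fixes n br J \<omega> assumes H: "hermitian_lie n br J \<omega>"
begin

lemma Lie: "lie_algebra n br" using H unfolding hermitian_lie_def by blast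

sublocale A: sdata n 0 br J \<omega> tJ2 t\<omega>2 tth
  by unfold_locales (simp_all add: H triv_herm triv_rep Lie)

abbreviation "V \<equiv> fvec n"
abbreviation "g \<equiv> metric \<omega> J"

lemma g_bil: "bilin_on n g" unfolding bilin_on_def metric_def by simp
lemma g_sym': "x \<in> V \<Longrightarrow> y \<in> V \<Longrightarrow> g x y = g y x" unfolding metric_def using A.g1_sym by blast
lemma g_pos': "x \<in> V \<Longrightarrow> x \<noteq> vzero \<Longrightarrow> g x x > 0" unfolding metric_def using A.g1_pos by blast
lemma gJJ': "x \<in> V \<Longrightarrow> y \<in> V \<Longrightarrow> g (J x) (J y) = g x y" unfolding metric_def using A.om1_J by simp

sublocale G: ipJ n g J
proof (unfold_locales)
  show "bilin_on n g" by (rule g_bil)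
  show "\<And>x y. x \<in> V \<Longrightarrow> y \<in> V \<Longrightarrow> g x y = g y x" by (rule g_sym')
  show "\<And>x. x \<in> V \<Longrightarrow> x \<noteq> vzero \<Longrightarrow> g x x > 0" by (rule g_pos')
  show "lin_on n n J" by (rule A.J1lin)
  show "\<And>x. x \<in> V \<Longrightarrow> J (J x) = vsmul (-1) x" by (rule A.J1J1)
  show "\<And>x y. x \<in> V \<Longrightarrow> y \<in> V \<Longrightarrow> g (J x) (J y) = g x y" by (rule gJJ')
qed

lemma om_g: "x \<in> V \<Longrightarrow> y \<in> V \<Longrightarrow> \<omega> x y = - g x (J y)"
  unfolding metric_def by (simp add: A.J1J1)

lemma exists_spans: "\<exists>bs. G.spans bs"
proof -
  have "\<exists>bs. G.ON bs \<and> set bs \<subseteq> V \<and> even (length bs) \<and> (\<forall>v\<in>set (map ebas [0..<n]). G.recon bs v = v)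
     \<and> (\<forall>k<length bs. G.recon bs (J (bs!k)) = J (bs!k))"
    apply (rule G.GS[of V "map ebas [0..<n]"])
    apply (rule subset_refl)
    apply (rule fvec_zero)
    apply (erule (1) fvec_add)
    apply (erule fvec_smul)
    apply (erule A.J1_in)
    apply (auto simp: fvec_ebas)
    done
  then obtain bs where bs: "G.ON bs" "set bs \<subseteq> V" "\<forall>v\<in>set (map ebas [0..<n]). G.recon bs v = v"
    by blast
  have "\<forall>x\<in>V. G.recon bs x = x"
  proof
    fix x assume x: "x \<in> V"
    have "G.recon bs (vsum {..<n} x ebas) = vsum {..<n} x ebas"
      by (rule recon_vsum_gen[OF G.recon_lin[OF bs(1)]]) (use bs(3) in auto)
    moreover have "vsum {..<n} x ebas = x" using fvec_expand[OF x] by (rule sym)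
    ultimately show "G.recon bs x = x" by simp
  qed
  thus ?thesis using bs unfolding G.spans_def by blast
qed

lemma lin_fun_vsum: assumes add: "\<forall>y\<in>V. \<forall>y'\<in>V. f (vadd y y') = f y + f y'"
  and sm: "\<forall>a. \<forall>y\<in>V. f (vsmul a y) = a * f y"
  shows "finite K \<Longrightarrow> (\<And>k. k \<in> K \<Longrightarrow> v k \<in> V) \<Longrightarrow> f (vsum K a v) = (\<Sum>k\<in>K. a k * f (v k))"
proof (induction K rule: finite_induct)
  case empty
  have "f vzero = f (vsmul 0 vzero)" by (simp add: vdefs)
  also have "\<dots> = 0" using sm fvec_zero by (simp del: vsmul_vzero)
  finally show ?case by simp
next
  case (insert k K) thus ?case using add sm by (simp add: vsum_insert)
qed

lemma riesz: assumes b1: "\<forall>x\<in>V. \<forall>x'\<in>V. \<forall>y\<in>V. b (vadd x x') y = b x y + b x' y"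
  and b2: "\<forall>a. \<forall>x\<in>V. \<forall>y\<in>V. b (vsmul a x) y = a * b x y"
  and b3: "\<forall>x\<in>V. \<forall>y\<in>V. \<forall>y'\<in>V. b x (vadd y y') = b x y + b x y'"
  and b4: "\<forall>a. \<forall>x\<in>V. \<forall>y\<in>V. b x (vsmul a y) = a * b x y"
  shows "\<exists>P. lin_on n n P \<and> (\<forall>x\<in>V. \<forall>y\<in>V. \<omega> (P x) y = b x y)"
proof -
  obtain bs where sp: "G.spans bs" using exists_spans by blast
  have ON: "G.ON bs" and rc: "\<forall>x\<in>V. G.recon bs x = x" using sp unfolding G.spans_def by auto
  have bV: "\<And>k. k < length bs \<Longrightarrow> bs!k \<in> V" using ON G.ON_in by blast
  define P where "P x = vsum {..<length bs} (\<lambda>k. b x (J (bs!k))) (\<lambda>k. bs!k)" for x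
  have PV: "\<And>x. P x \<in> V" unfolding P_def by (intro fvec_vsum) (simp add: bV)
  have lin: "lin_on n n P" unfolding lin_on_def
  proof (intro conjI ballI allI)
    fix x assume "x \<in> V" thus "P x \<in> V" using PV by blast
  next
    fix x y assume xy: "x \<in> V" "y \<in> V"
    have "\<And>k. k \<in> {..<length bs} \<Longrightarrow> b (vadd x y) (J (bs!k)) = b x (J (bs!k)) + b y (J (bs!k))"
      using b1 xy bV by simp
    hence "P (vadd x y) = vsum {..<length bs} (\<lambda>k. b x (J (bs!k)) + b y (J (bs!k))) (\<lambda>k. bs!k)"
      unfolding P_def vsum_def by (intro ext sum.cong) auto
    thus "P (vadd x y) = vadd (P x) (P y)" unfolding P_def vsum_def vadd_def
      by (simp add: algebra_simps sum.distrib)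
  next
    fix a x assume x: "x \<in> V"
    have "\<And>k. k \<in> {..<length bs} \<Longrightarrow> b (vsmul a x) (J (bs!k)) = a * b x (J (bs!k))"
      using b2 x bV by simp
    hence "P (vsmul a x) = vsum {..<length bs} (\<lambda>k. a * b x (J (bs!k))) (\<lambda>k. bs!k)"
      unfolding P_def vsum_def by (intro ext sum.cong) auto
    thus "P (vsmul a x) = vsmul a (P x)" unfolding P_def vsum_def vsmul_def
      by (simp add: algebra_simps sum_distrib_left)
  qed
  have "\<forall>x\<in>V. \<forall>y\<in>V. \<omega> (P x) y = b x y"
  proof (intro ballI)
    fix x y assume x: "x \<in> V" and y: "y \<in> V"
    have "\<omega> (P x) y = - g (P x) (J y)" by (rule om_g[OF PV y])
    also have "g (P x) (J y) = (\<Sum>k<length bs. b x (J (bs!k)) * g (bs!k) (J y))"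
      unfolding P_def using y bV by (subst G.g_vsum1) auto
    finally have e1: "\<omega> (P x) y = - (\<Sum>k<length bs. b x (J (bs!k)) * g (bs!k) (J y))" .
    have Jy: "J y = vsum {..<length bs} (\<lambda>k. g (J y) (bs!k)) (\<lambda>k. bs!k)"
      using rc y unfolding G.recon_def by simp
    have "J (J y) = vsum {..<length bs} (\<lambda>k. g (J y) (bs!k)) (\<lambda>k. J (bs!k))"
      by (subst Jy, rule lin_vsum[OF A.J1lin]) (simp_all add: bV)
    hence "b x (J (J y)) = (\<Sum>k<length bs. g (J y) (bs!k) * b x (J (bs!k)))"
      using lin_fun_vsum[of "b x" "{..<length bs}" "\<lambda>k. J (bs!k)" "\<lambda>k. g (J y) (bs!k)"] b3 b4 x bV by simp
    moreover have "b x (J (J y)) = - b x y" using A.J1J1 y b4 x by simp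
    ultimately have "b x y = - (\<Sum>k<length bs. g (J y) (bs!k) * b x (J (bs!k)))" by simp
    also have "\<dots> = \<omega> (P x) y" unfolding e1
    proof -
      have "\<And>k. k \<in> {..<length bs} \<Longrightarrow> g (J y) (bs!k) * b x (J (bs!k)) = b x (J (bs!k)) * g (bs!k) (J y)"
        using G.g_sym[of "J y"] bV y by simp
      hence "(\<Sum>k<length bs. g (J y) (bs!k) * b x (J (bs!k))) = (\<Sum>k<length bs. b x (J (bs!k)) * g (bs!k) (J y))"
        by (rule sum.cong[OF refl])
      thus "- (\<Sum>k<length bs. g (J y) (bs!k) * b x (J (bs!k))) = - (\<Sum>k<length bs. b x (J (bs!k)) * g (bs!k) (J y))" by simp
    qed
    finally show "\<omega> (P x) y = b x y" by simp
  qed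
  thus ?thesis using lin by blast
qed


lemma cr_form_iso:
  assumes \<phi>: "lin_on n m \<phi>" and \<psi>: "lin_on m n \<psi>" and \<psi>\<phi>: "\<forall>x\<in>V. \<psi> (\<phi> x) = x"
    and \<phi>\<psi>: "\<forall>z\<in>fvec m. \<phi> (\<psi> z) = z"
    and hbr: "\<forall>x\<in>V. \<forall>y\<in>V. \<phi> (br x y) = br' (\<phi> x) (\<phi> y)"
    and hJ: "\<forall>x\<in>V. \<phi> (J x) = J' (\<phi> x)"
    and x: "x \<in> V" and y: "y \<in> V"
  shows "cr_form m br' J' (\<phi> x) (\<phi> y) = cr_form n br J x y"
proof -
  define U where "U = br x y"
  have U: "U \<in> V" unfolding U_def using x y by simp
  have bU: "br' (\<phi> x) (\<phi> y) = \<phi> U" unfolding U_def using hbr x y by simp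
  have JU: "J' (\<phi> U) = \<phi> (J U)" using hJ U by simp
  have lJbU: "lin_on m n (J \<circ> br U \<circ> \<psi>)" using \<psi> A.J1lin A.brlin[OF U] by (intro lin_comp) auto
  have lbJU: "lin_on m n (br (J U) \<circ> \<psi>)" using \<psi> A.brlin[of "J U"] U by (intro lin_comp) auto
  have t1: "tr m (J' \<circ> br' (\<phi> U)) = tr n (J \<circ> br U)"
  proof -
    have "tr m (J' \<circ> br' (\<phi> U)) = tr m (\<phi> \<circ> (J \<circ> br U \<circ> \<psi>))"
    proof (rule tr_cong)
      fix z assume z: "z \<in> fvec m"
      have pz: "\<psi> z \<in> V" using \<psi> z lin_in by blast
      have "br' (\<phi> U) z = br' (\<phi> U) (\<phi> (\<psi> z))" using \<phi>\<psi> z by simp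
      also have "\<dots> = \<phi> (br U (\<psi> z))" using hbr U pz by simp
      finally show "(J' \<circ> br' (\<phi> U)) z = (\<phi> \<circ> (J \<circ> br U \<circ> \<psi>)) z" using hJ U pz by simp
    qed
    also have "\<dots> = tr n ((J \<circ> br U \<circ> \<psi>) \<circ> \<phi>)" by (rule tr_cyc[OF \<phi> lJbU])
    also have "\<dots> = tr n (J \<circ> br U)" by (rule tr_cong) (simp add: \<psi>\<phi>)
    finally show ?thesis .
  qed
  have t2: "tr m (br' (J' (\<phi> U))) = tr n (br (J U))"
  proof -
    have "tr m (br' (J' (\<phi> U))) = tr m (\<phi> \<circ> (br (J U) \<circ> \<psi>))"
    proof (rule tr_cong)
      fix z assume z: "z \<in> fvec m"
      have pz: "\<psi> z \<in> V" using \<psi> z lin_in by blast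
      have "br' (J' (\<phi> U)) z = br' (\<phi> (J U)) (\<phi> (\<psi> z))" using \<phi>\<psi> z JU by simp
      also have "\<dots> = \<phi> (br (J U) (\<psi> z))" using hbr U pz by simp
      finally show "br' (J' (\<phi> U)) z = (\<phi> \<circ> (br (J U) \<circ> \<psi>)) z" by simp
    qed
    also have "\<dots> = tr n ((br (J U) \<circ> \<psi>) \<circ> \<phi>)" by (rule tr_cyc[OF \<phi> lbJU])
    also have "\<dots> = tr n (br (J U))" by (rule tr_cong) (simp add: \<psi>\<phi>)
    finally show ?thesis .
  qed
  show ?thesis unfolding cr_form_def bU using t1 t2 U_def by simp
qed

lemma transport:
  assumes \<iota>: "lin_on k n \<iota>" and inj: "inj_on \<iota> (fvec k)" and ev: "even k"
    and B: "\<forall>X\<in>fvec k. \<forall>Y\<in>fvec k. br' X Y \<in> fvec k \<and> \<iota> (br' X Y) = br (\<iota> X) (\<iota> Y)"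
    and JJ: "\<forall>X\<in>fvec k. J' X \<in> fvec k \<and> \<iota> (J' X) = J (\<iota> X)"
  shows "hermitian_lie k br' J' (\<lambda>X Y. \<omega> (\<iota> X) (\<iota> Y))"
proof -
  let ?K = "fvec k"
  have iV: "\<And>X. X \<in> ?K \<Longrightarrow> \<iota> X \<in> V" using \<iota> lin_in by blast
  have eq: "\<And>a b. a \<in> ?K \<Longrightarrow> b \<in> ?K \<Longrightarrow> \<iota> a = \<iota> b \<Longrightarrow> a = b" using inj unfolding inj_on_def by blast
  have ia: "\<And>X Y. X \<in> ?K \<Longrightarrow> Y \<in> ?K \<Longrightarrow> \<iota> (vadd X Y) = vadd (\<iota> X) (\<iota> Y)" using \<iota> lin_add by blast
  have ism: "\<And>a X. X \<in> ?K \<Longrightarrow> \<iota> (vsmul a X) = vsmul a (\<iota> X)" using \<iota> lin_smul by blast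
  have i0: "\<iota> vzero = vzero" using \<iota> lin_zero by blast
  have bK: "\<And>X Y. X \<in> ?K \<Longrightarrow> Y \<in> ?K \<Longrightarrow> br' X Y \<in> ?K" using B by blast
  have bi: "\<And>X Y. X \<in> ?K \<Longrightarrow> Y \<in> ?K \<Longrightarrow> \<iota> (br' X Y) = br (\<iota> X) (\<iota> Y)" using B by blast
  have JK: "\<And>X. X \<in> ?K \<Longrightarrow> J' X \<in> ?K" using JJ by blast
  have Ji: "\<And>X. X \<in> ?K \<Longrightarrow> \<iota> (J' X) = J (\<iota> X)" using JJ by blast
  have lie: "lie_algebra k br'"
    unfolding lie_algebra_def
  proof (intro conjI ballI)
    fix X assume X: "X \<in> ?K"
    show "lin_on k k (br' X)" unfolding lin_on_def
    proof (intro conjI ballI allI)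
      fix Y assume "Y \<in> ?K" thus "br' X Y \<in> ?K" using bK X by blast
    next
      fix Y Z assume YZ: "Y \<in> ?K" "Z \<in> ?K"
      show "br' X (vadd Y Z) = vadd (br' X Y) (br' X Z)"
        by (rule eq) (use X YZ iV in \<open>simp_all add: bK bi ia\<close>)
    next
      fix a Y assume Y: "Y \<in> ?K"
      show "br' X (vsmul a Y) = vsmul a (br' X Y)"
        by (rule eq) (use X Y iV in \<open>simp_all add: bK bi ism\<close>)
    qed
  next
    fix X Y assume XY: "X \<in> ?K" "Y \<in> ?K"
    show "br' X Y = vsmul (- 1) (br' Y X)"
      by (rule eq) (use XY iV A.br_anti[of "\<iota> X" "\<iota> Y"] in \<open>simp_all add: bK bi ism\<close>)
  next
    fix X Y Z assume XYZ: "X \<in> ?K" "Y \<in> ?K" "Z \<in> ?K"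
    show "vadd (br' X (br' Y Z)) (vadd (br' Y (br' Z X)) (br' Z (br' X Y))) = vzero"
      by (rule eq) (use XYZ iV A.br_jac[of "\<iota> X" "\<iota> Y" "\<iota> Z"] in \<open>simp_all add: bK bi ia i0\<close>)
  qed
  have om_nd: "\<And>X. X \<in> ?K \<Longrightarrow> (\<forall>Y\<in>?K. \<omega> (\<iota> X) (\<iota> Y) = 0) \<Longrightarrow> X = vzero"
  proof -
    fix X assume X: "X \<in> ?K" and h: "\<forall>Y\<in>?K. \<omega> (\<iota> X) (\<iota> Y) = 0"
    have "\<omega> (\<iota> X) (J (\<iota> X)) = 0" using h JK[OF X] Ji[OF X] by metis
    hence "\<iota> X = vzero" using A.g1_pos[of "\<iota> X"] iV[OF X] by force
    thus "X = vzero" using eq[OF X fvec_zero] i0 by simp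
  qed
  show ?thesis unfolding hermitian_lie_def metric_def
  proof (intro conjI ballI allI impI)
    show "even k" by (rule ev)
    show "lie_algebra k br'" by (rule lie)
    show "lin_on k k J'" unfolding lin_on_def
    proof (intro conjI ballI allI)
      fix X assume "X \<in> ?K" thus "J' X \<in> ?K" by (rule JK)
    next
      fix X Y assume XY: "X \<in> ?K" "Y \<in> ?K"
      show "J' (vadd X Y) = vadd (J' X) (J' Y)" by (rule eq) (use XY iV in \<open>simp_all add: JK Ji ia\<close>)
    next
      fix a X assume X: "X \<in> ?K"
      show "J' (vsmul a X) = vsmul a (J' X)" by (rule eq) (use X iV in \<open>simp_all add: JK Ji ism\<close>)
    qed
    fix X assume X: "X \<in> ?K"
    show "J' (J' X) = vsmul (- 1) X" by (rule eq) (use X iV A.J1J1 in \<open>simp_all add: JK Ji ism\<close>)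
  next
    fix X Y assume XY: "X \<in> ?K" "Y \<in> ?K"
    show "br' (J' X) (J' Y) = vadd (br' X Y) (vadd (J' (br' (J' X) Y)) (J' (br' X (J' Y))))"
      by (rule eq) (use XY iV A.J1int[of "\<iota> X" "\<iota> Y"] in \<open>simp_all add: JK Ji ia bK bi\<close>)
  next
    show "bilin_on k (\<lambda>X Y. \<omega> (\<iota> X) (\<iota> Y))" unfolding bilin_on_def using iV by (simp add: ia ism)
  next
    fix X Y assume XY: "X \<in> ?K" "Y \<in> ?K"
    show "\<omega> (\<iota> X) (\<iota> Y) = - \<omega> (\<iota> Y) (\<iota> X)" using A.om1_anti iV XY by blast
  next
    fix X assume "X \<in> ?K" "\<forall>Y\<in>?K. \<omega> (\<iota> X) (\<iota> Y) = 0" thus "X = vzero" by (rule om_nd)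
  next
    fix X Y assume XY: "X \<in> ?K" "Y \<in> ?K"
    show "\<omega> (\<iota> (J' X)) (\<iota> (J' Y)) = \<omega> (\<iota> X) (\<iota> Y)" using A.om1_J iV XY Ji by simp
  next
    fix X Y assume XY: "X \<in> ?K" "Y \<in> ?K"
    show "\<omega> (\<iota> X) (\<iota> (J' Y)) = \<omega> (\<iota> Y) (\<iota> (J' X))" using A.g1_sym iV XY Ji by simp
  next
    fix X assume X: "X \<in> ?K" "X \<noteq> vzero"
    have "\<iota> X \<noteq> vzero" using X eq[OF X(1) fvec_zero] i0 by auto
    thus "0 < \<omega> (\<iota> X) (\<iota> (J' X))" using A.g1_pos iV X Ji by simp
  qed
qed

end



locale hsol = hl +
  fixes P :: "vec \<Rightarrow> vec" and c :: real and D Dt :: "vec \<Rightarrow> vec"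
  assumes PO: "cr_operator n br J \<omega> P" and Der: "derivation n br D"
    and DJ: "\<forall>x\<in>fvec n. D (J x) = J (D x)" and TR: "is_transpose n (metric \<omega> J) D Dt"
    and PE: "\<forall>x\<in>fvec n. P x = vadd (vsmul c x) (vsmul (1/2) (vadd (D x) (Dt x)))"
begin

lemma Dlin: "lin_on n n D" using Der unfolding derivation_def by blast
lemma Dtlin: "lin_on n n Dt" using TR unfolding is_transpose_def by blast
lemma Plin: "lin_on n n P" using PO unfolding cr_operator_def by blast
lemma D_in[simp]: "x \<in> V \<Longrightarrow> D x \<in> V" using Dlin lin_in by blast
lemma D_add[simp]: "x \<in> V \<Longrightarrow> y \<in> V \<Longrightarrow> D (vadd x y) = vadd (D x) (D y)" using Dlin lin_add by blast
lemma D_sub[simp]: "x \<in> V \<Longrightarrow> y \<in> V \<Longrightarrow> D (vsub x y) = vsub (D x) (D y)" using Dlin lin_sub by blast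
lemma D_smul[simp]: "x \<in> V \<Longrightarrow> D (vsmul a x) = vsmul a (D x)" using Dlin lin_smul by blast
lemma Dt_in[simp]: "x \<in> V \<Longrightarrow> Dt x \<in> V" using Dtlin lin_in by blast
lemma Dt_add[simp]: "x \<in> V \<Longrightarrow> y \<in> V \<Longrightarrow> Dt (vadd x y) = vadd (Dt x) (Dt y)" using Dtlin lin_add by blast
lemma Dt_sub[simp]: "x \<in> V \<Longrightarrow> y \<in> V \<Longrightarrow> Dt (vsub x y) = vsub (Dt x) (Dt y)" using Dtlin lin_sub by blast
lemma Dt_smul[simp]: "x \<in> V \<Longrightarrow> Dt (vsmul a x) = vsmul a (Dt x)" using Dtlin lin_smul by blast
lemma P_in[simp]: "x \<in> V \<Longrightarrow> P x \<in> V" using Plin lin_in by blast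
lemma Dder: "x \<in> V \<Longrightarrow> y \<in> V \<Longrightarrow> D (br x y) = vadd (br (D x) y) (br x (D y))"
  using Der unfolding derivation_def by blast
lemma DJ': "x \<in> V \<Longrightarrow> D (J x) = J (D x)" using DJ by blast
lemma Dadj: "x \<in> V \<Longrightarrow> y \<in> V \<Longrightarrow> g (D x) y = g x (Dt y)" using TR unfolding is_transpose_def by blast
lemma Dadj2: "x \<in> V \<Longrightarrow> y \<in> V \<Longrightarrow> g x (D y) = g (Dt x) y"
  using Dadj[of y x] G.g_sym[of x "D y"] G.g_sym[of y "Dt x"] by simp
lemma PE': "x \<in> V \<Longrightarrow> P x = vadd (vsmul c x) (vsmul (1/2) (vadd (D x) (Dt x)))" using PE by blast
lemma Pcr: "x \<in> V \<Longrightarrow> y \<in> V \<Longrightarrow> \<omega> (P x) y = cr_form n br J x y" using PO unfolding cr_operator_def by blast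

lemma vec_eq_g: assumes "a \<in> V" "b \<in> V" "g (vsub a b) (vsub a b) = 0" shows "a = b"
proof -
  have "vsub a b = vzero" using G.g_eq0 assms by simp
  thus ?thesis by (simp add: vdefs fun_eq_iff)
qed

lemma DtJ: assumes y: "y \<in> V" shows "Dt (J y) = J (Dt y)"
proof (rule vec_eq_g)
  show "Dt (J y) \<in> V" "J (Dt y) \<in> V" using y by simp_all
  define d where "d = vsub (Dt (J y)) (J (Dt y))"
  have d: "d \<in> V" unfolding d_def using y by simp
  have "g d (J (Dt y)) = - g (J d) (Dt y)" using G.gJ_skew d y by simp
  also have "\<dots> = - g (D (J d)) y" using Dadj d y by simp
  also have "\<dots> = - g (J (D d)) y" using DJ' d by simp
  also have "\<dots> = g (D d) (J y)" using G.gJ_skew[of "D d" y] d y by simp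
  also have "\<dots> = g d (Dt (J y))" using Dadj d y by simp
  finally have e: "g d (J (Dt y)) = g d (Dt (J y))" .
  have "g d d = g d (Dt (J y)) - g d (J (Dt y))" using d y unfolding d_def by simp
  thus "g (vsub (Dt (J y)) (J (Dt y))) (vsub (Dt (J y)) (J (Dt y))) = 0"
    using e unfolding d_def by simp
qed

lemma om_adj: assumes "u \<in> V" "y \<in> V" shows "\<omega> u (D y) = \<omega> (Dt u) y"
proof -
  have "\<omega> u (D y) = - g u (J (D y))" using om_g assms by simp
  also have "\<dots> = - g u (D (J y))" using DJ' assms by simp
  also have "\<dots> = - g (Dt u) (J y)" using Dadj2 assms by simp
  also have "\<dots> = \<omega> (Dt u) y" using om_g assms by simp
  finally show ?thesis .
qed

definition fcr :: "vec \<Rightarrow> real" where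
  "fcr U = - (1/2) * tr n (J \<circ> br U) + (1/2) * tr n (br (J U))"

lemma cr_fcr: "cr_form n br J x y = fcr (br x y)" unfolding cr_form_def fcr_def by simp

lemma fcr_add: assumes "U \<in> V" "U' \<in> V" shows "fcr (vadd U U') = fcr U + fcr U'"
proof -
  have "tr n (J \<circ> br (vadd U U')) = tr n (\<lambda>z. vadd ((J \<circ> br U) z) ((J \<circ> br U') z))"
    by (rule tr_cong) (use assms in simp)
  also have "\<dots> = tr n (J \<circ> br U) + tr n (J \<circ> br U')" by (rule tr_add)
  finally have 1: "tr n (J \<circ> br (vadd U U')) = tr n (J \<circ> br U) + tr n (J \<circ> br U')" .
  have "tr n (br (J (vadd U U'))) = tr n (\<lambda>z. vadd (br (J U) z) (br (J U') z))"
    by (rule tr_cong) (use assms in simp)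
  also have "\<dots> = tr n (br (J U)) + tr n (br (J U'))" by (rule tr_add)
  finally have 2: "tr n (br (J (vadd U U'))) = tr n (br (J U)) + tr n (br (J U'))" .
  show ?thesis unfolding fcr_def 1 2 by (simp add: algebra_simps)
qed

lemma tr_comm_zero: assumes "lin_on n n M" shows "tr n (\<lambda>z. vsub (D (M z)) (M (D z))) = 0"
proof -
  have "tr n (\<lambda>z. vsub (D (M z)) (M (D z))) = tr n (D \<circ> M) - tr n (M \<circ> D)"
    using tr_sub[of n "D \<circ> M" "M \<circ> D"] by (simp add: comp_def)
  also have "tr n (D \<circ> M) = tr n (M \<circ> D)" by (rule tr_cyc[OF Dlin assms])
  finally show ?thesis by (simp add: comp_def)
qed

lemma fcr_D: assumes U: "U \<in> V" shows "fcr (D U) = 0"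
proof -
  have brD: "\<And>W z. W \<in> V \<Longrightarrow> z \<in> V \<Longrightarrow> br (D W) z = vsub (D (br W z)) (br W (D z))"
    using Dder by (simp add: vdefs fun_eq_iff)
  have "tr n (J \<circ> br (D U)) = tr n (\<lambda>z. vsub (D ((J \<circ> br U) z)) ((J \<circ> br U) (D z)))"
    by (rule tr_cong) (use U brD DJ' in simp)
  also have "\<dots> = 0" by (rule tr_comm_zero) (use U A.J1lin A.brlin in \<open>intro lin_comp, auto\<close>)
  finally have 1: "tr n (J \<circ> br (D U)) = 0" .
  have "tr n (br (J (D U))) = tr n (\<lambda>z. vsub (D (br (J U) z)) (br (J U) (D z)))"
    by (rule tr_cong) (use U brD DJ'[of U, symmetric] in simp)
  also have "\<dots> = 0" by (rule tr_comm_zero) (use U A.brlin in simp)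
  finally have 2: "tr n (br (J (D U))) = 0" .
  show ?thesis unfolding fcr_def 1 2 by simp
qed

lemma PD: assumes x: "x \<in> V" shows "P (D x) = vsmul (-1) (Dt (P x))"
proof -
  have "\<forall>y\<in>V. \<omega> (vadd (P (D x)) (Dt (P x))) y = 0"
  proof
    fix y assume y: "y \<in> V"
    have "\<omega> (vadd (P (D x)) (Dt (P x))) y = \<omega> (P (D x)) y + \<omega> (Dt (P x)) y" using x y by simp
    also have "\<omega> (Dt (P x)) y = \<omega> (P x) (D y)" using om_adj x y by simp
    also have "\<omega> (P (D x)) y + \<omega> (P x) (D y) = fcr (br (D x) y) + fcr (br x (D y))"
      using Pcr x y by (simp add: cr_fcr)
    also have "\<dots> = fcr (D (br x y))" using fcr_add x y Dder by simp
    also have "\<dots> = 0" using fcr_D x y by simp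
    finally show "\<omega> (vadd (P (D x)) (Dt (P x))) y = 0" .
  qed
  hence "vadd (P (D x)) (Dt (P x)) = vzero" by (intro A.om1_nd) (use x in simp_all)
  hence "\<And>i. P (D x) i + Dt (P x) i = 0" by (simp add: vdefs fun_eq_iff)
  thus ?thesis by (simp add: vdefs fun_eq_iff add_eq_0_iff)
qed


definition Sy :: "vec \<Rightarrow> vec" where "Sy x = vsmul (1/2) (vadd (D x) (Dt x))"
definition Sk :: "vec \<Rightarrow> vec" where "Sk x = vsmul (1/2) (vsub (D x) (Dt x))"
definition K :: "vec \<Rightarrow> vec" where "K x = vadd (Sy (Sy x)) (vsmul c (Sy x))"

lemma Sy_in[simp]: "x \<in> V \<Longrightarrow> Sy x \<in> V" unfolding Sy_def by simp
lemma Sk_in[simp]: "x \<in> V \<Longrightarrow> Sk x \<in> V" unfolding Sk_def by simp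
lemma K_in[simp]: "x \<in> V \<Longrightarrow> K x \<in> V" unfolding K_def by simp
lemma Sy_add[simp]: "x \<in> V \<Longrightarrow> y \<in> V \<Longrightarrow> Sy (vadd x y) = vadd (Sy x) (Sy y)"
  unfolding Sy_def by simp (simp add: vdefs algebra_simps)
lemma Sy_smul[simp]: "x \<in> V \<Longrightarrow> Sy (vsmul a x) = vsmul a (Sy x)"
  unfolding Sy_def by simp (simp add: vdefs algebra_simps)
lemma Sk_add[simp]: "x \<in> V \<Longrightarrow> y \<in> V \<Longrightarrow> Sk (vadd x y) = vadd (Sk x) (Sk y)"
  unfolding Sk_def by simp (simp add: vdefs algebra_simps)
lemma Sk_smul[simp]: "x \<in> V \<Longrightarrow> Sk (vsmul a x) = vsmul a (Sk x)"
  unfolding Sk_def by simp (simp add: vdefs algebra_simps)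
lemma Sy_sub[simp]: "x \<in> V \<Longrightarrow> y \<in> V \<Longrightarrow> Sy (vsub x y) = vsub (Sy x) (Sy y)" by (simp add: vsub_eq)
lemma Sk_sub[simp]: "x \<in> V \<Longrightarrow> y \<in> V \<Longrightarrow> Sk (vsub x y) = vsub (Sk x) (Sk y)" by (simp add: vsub_eq)
lemma K_add[simp]: "x \<in> V \<Longrightarrow> y \<in> V \<Longrightarrow> K (vadd x y) = vadd (K x) (K y)"
  unfolding K_def by simp (simp add: vdefs algebra_simps)
lemma K_smul[simp]: "x \<in> V \<Longrightarrow> K (vsmul a x) = vsmul a (K x)"
  unfolding K_def by simp (simp add: vdefs algebra_simps)
lemma K_sub[simp]: "x \<in> V \<Longrightarrow> y \<in> V \<Longrightarrow> K (vsub x y) = vsub (K x) (K y)" by (simp add: vsub_eq)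
lemma Sylin: "lin_on n n Sy" unfolding lin_on_def by simp
lemma Sklin: "lin_on n n Sk" unfolding lin_on_def by simp
lemma Klin: "lin_on n n K" unfolding lin_on_def by simp

lemma D_split: "x \<in> V \<Longrightarrow> D x = vadd (Sy x) (Sk x)" unfolding Sy_def Sk_def by (simp add: vdefs algebra_simps)
lemma Dt_split: "x \<in> V \<Longrightarrow> Dt x = vsub (Sy x) (Sk x)" unfolding Sy_def Sk_def by (simp add: vdefs algebra_simps)

lemma Sy_sym: "x \<in> V \<Longrightarrow> y \<in> V \<Longrightarrow> g (Sy x) y = g x (Sy y)"
  unfolding Sy_def using Dadj Dadj2 by (simp add: algebra_simps)
lemma Sk_skew: "x \<in> V \<Longrightarrow> y \<in> V \<Longrightarrow> g (Sk x) y = - g x (Sk y)"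
  unfolding Sk_def using Dadj Dadj2 by (simp add: algebra_simps)
lemma K_sym: "x \<in> V \<Longrightarrow> y \<in> V \<Longrightarrow> g (K x) y = g x (K y)"
  unfolding K_def using Sy_sym by simp

lemma SyJ: "x \<in> V \<Longrightarrow> Sy (J x) = J (Sy x)" unfolding Sy_def by (simp add: DJ' DtJ)
lemma SkJ: "x \<in> V \<Longrightarrow> Sk (J x) = J (Sk x)" unfolding Sk_def by (simp add: DJ' DtJ)

lemma K_alt: assumes x: "x \<in> V" shows "K x = vsmul (1/2) (vsub (Sk (Sy x)) (Sy (Sk x)))"
proof -
  have "P (D x) = vsmul (-1) (Dt (P x))" by (rule PD[OF x])
  hence "vadd (vsmul c (D x)) (vsmul (1/2) (vadd (D (D x)) (Dt (D x))))
      = vsmul (-1) (vadd (vsmul c (Dt x)) (vsmul (1/2) (vadd (Dt (D x)) (Dt (Dt x)))))"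
    using x by (simp add: PE')
  hence pdi: "\<And>i. c * D x i + 1/2 * (D (D x) i + Dt (D x) i) = - (c * Dt x i + 1/2 * (Dt (D x) i + Dt (Dt x) i))"
    by (simp add: vdefs fun_eq_iff)
  show ?thesis
    apply (simp add: K_def Sy_def Sk_def x)
    apply (simp add: vdefs fun_eq_iff)
    apply (rule allI)
    subgoal for i using pdi[of i] by (simp add: field_simps)
    done
qed

lemma SyK: "x \<in> V \<Longrightarrow> Sy (K x) = K (Sy x)" unfolding K_def by simp

lemma trKK: "tr n (K \<circ> K) = 0"
proof -
  have "tr n (K \<circ> K) = tr n (\<lambda>x. vsmul (1/2) (vsub (K (Sk (Sy x))) (K (Sy (Sk x)))))"
  proof (rule tr_cong)
    fix x assume x: "x \<in> V"
    have "K x = vsmul (1/2) (vsub (Sk (Sy x)) (Sy (Sk x)))" by (rule K_alt[OF x])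
    thus "(K \<circ> K) x = vsmul (1/2) (vsub (K (Sk (Sy x))) (K (Sy (Sk x))))" using x by simp
  qed
  also have "\<dots> = (1/2) * (tr n ((K \<circ> Sk) \<circ> Sy) - tr n (K \<circ> Sy \<circ> Sk))"
    by (simp add: tr_smul tr_sub[of n "\<lambda>x. K (Sk (Sy x))" "\<lambda>x. K (Sy (Sk x))", simplified] comp_def)
  also have "tr n ((K \<circ> Sk) \<circ> Sy) = tr n (Sy \<circ> (K \<circ> Sk))"
    by (rule tr_cyc) (simp_all add: Sylin lin_comp[OF Sklin Klin])
  also have "\<dots> = tr n (K \<circ> Sy \<circ> Sk)" by (rule tr_cong) (simp add: SyK)
  finally show ?thesis by (simp add: comp_def)
qed


lemma recon_vsum_V: assumes sp: "G.spans bs" and x: "x \<in> V"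
  shows "x = vsum {..<length bs} (\<lambda>k. g x (bs!k)) (\<lambda>k. bs!k)"
  using sp x unfolding G.spans_def G.recon_def by simp

lemma lin_zero_on_basis: assumes sp: "G.spans bs" and M: "lin_on n m M"
  and z: "\<And>k. k < length bs \<Longrightarrow> M (bs!k) = vzero" and x: "x \<in> V"
  shows "M x = vzero"
proof -
  have ON: "G.ON bs" using sp unfolding G.spans_def by blast
  have "M x = M (vsum {..<length bs} (\<lambda>k. g x (bs!k)) (\<lambda>k. bs!k))" using recon_vsum_V[OF sp x] by simp
  also have "\<dots> = vsum {..<length bs} (\<lambda>k. g x (bs!k)) (\<lambda>k. M (bs!k))"
    by (rule lin_vsum[OF M]) (simp_all add: G.ON_in[OF ON])
  also have "\<dots> = vzero" using z by (simp add: vsum_def vzero_def)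
  finally show ?thesis .
qed

lemma K_zero: assumes x: "x \<in> V" shows "K x = vzero"
proof -
  obtain bs where sp: "G.spans bs" using exists_spans by blast
  have ON: "G.ON bs" using sp unfolding G.spans_def by blast
  have bV: "\<And>k. k < length bs \<Longrightarrow> bs!k \<in> V" using G.ON_in[OF ON] by blast
  have "0 = tr n (K \<circ> K)" using trKK by simp
  also have "\<dots> = (\<Sum>k<length bs. g ((K \<circ> K) (bs!k)) (bs!k))" by (rule G.tr_ON[OF sp lin_comp[OF Klin Klin]])
  also have "\<dots> = (\<Sum>k<length bs. g (K (bs!k)) (K (bs!k)))"
    by (rule sum.cong) (simp_all add: K_sym bV)
  finally have s0: "(\<Sum>k<length bs. g (K (bs!k)) (K (bs!k))) = 0" by simp
  have "\<And>k. k < length bs \<Longrightarrow> g (K (bs!k)) (K (bs!k)) = 0"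
    using s0 G.g_nn bV by (subst (asm) sum_nonneg_eq_0_iff) auto
  hence "\<And>k. k < length bs \<Longrightarrow> K (bs!k) = vzero" using G.g_eq0 bV by simp
  thus ?thesis by (rule lin_zero_on_basis[OF sp Klin _ x])
qed

lemma SySy: assumes x: "x \<in> V" shows "Sy (Sy x) = vsmul (-c) (Sy x)"
proof -
  have k: "K x = vzero" by (rule K_zero[OF x])
  show ?thesis
  proof (rule ext)
    fix i
    have "K x i = 0" using k by (simp add: vzero_def)
    hence "Sy (Sy x) i + c * Sy x i = 0" unfolding K_def by (simp add: vadd_def vsmul_def)
    thus "Sy (Sy x) i = vsmul (-c) (Sy x) i" unfolding vsmul_def by linarith
  qed
qed

lemma SkSy: assumes x: "x \<in> V" shows "Sk (Sy x) = Sy (Sk x)"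
proof -
  have "vsmul (1/2) (vsub (Sk (Sy x)) (Sy (Sk x))) = vzero" using K_zero[OF x] K_alt[OF x] by simp
  thus ?thesis by (simp add: vdefs fun_eq_iff)
qed

lemma c0_P: assumes c0: "c = 0" and x: "x \<in> V" shows "P x = vzero"
proof -
  have "g (Sy x) (Sy x) = g x (Sy (Sy x))" using Sy_sym x by simp
  also have "\<dots> = 0" using SySy x c0 G.g_zero2[OF x] by (simp add: vsmul_def vzero_def[symmetric])
  finally have "Sy x = vzero" using G.g_eq0 x by simp
  hence "vadd (D x) (Dt x) = vzero" unfolding Sy_def by (simp add: vdefs fun_eq_iff)
  hence d: "\<And>i. D x i + Dt x i = 0" by (simp add: vdefs fun_eq_iff)
  have "\<And>i. P x i = c * x i + 1/2 * (D x i + Dt x i)" using PE'[OF x] by (simp add: vdefs)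
  thus ?thesis using d c0 by (simp add: vzero_def fun_eq_iff)
qed

end

context ip begin

lemma antisym_sum: assumes "\<And>i k. a i k = - a k i" "\<And>i k. h i k = h k i"
  shows "(\<Sum>i<m. \<Sum>k<m. a i k * h k i) = (0::real)"
proof -
  have "(\<Sum>i<m. \<Sum>k<m. a i k * h k i) = (\<Sum>k<m. \<Sum>i<m. a i k * h k i)" by (rule sum.swap)
  also have "\<dots> = (\<Sum>k<m. \<Sum>i<m. - (a k i * h i k))"
  proof (intro sum.cong refl)
    fix i k show "a i k * h k i = - (a k i * h i k)" using assms(1)[of i k] assms(2)[of k i] by simp
  qed
  also have "\<dots> = - (\<Sum>k<m. \<Sum>i<m. a k i * h i k)" by (simp add: sum_negf)
  finally show ?thesis by simp
qed

lemma GL: assumes sp: "spans bs" and Al: "lin_on n n Am"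
  and Ask: "\<forall>x\<in>V. \<forall>y\<in>V. g (Am x) y = - g x (Am y)"
  and b1: "\<forall>y\<in>V. lin_on n n (\<lambda>x. \<beta> x y)" and b2: "\<forall>x\<in>V. lin_on n n (\<beta> x)"
  and lam: "lam \<noteq> 0"
  and eqn: "\<forall>x\<in>V. \<forall>y\<in>V. vadd (Am (\<beta> x y)) (vsmul lam (\<beta> x y)) = vadd (\<beta> (Am x) y) (\<beta> x (Am y))"
  shows "\<forall>x\<in>V. \<forall>y\<in>V. \<beta> x y = vzero"
proof -
  have ON: "ON bs" and rc: "\<forall>x\<in>V. recon bs x = x" using sp unfolding spans_def by auto
  define m where "m = length bs"
  define b where "b k = bs!k" for k
  have bV: "\<And>k. k < m \<Longrightarrow> b k \<in> V" unfolding b_def m_def using ON_in[OF ON] by blast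
  have AV: "\<And>x. x \<in> V \<Longrightarrow> Am x \<in> V" using Al lin_in by blast
  have bin: "\<And>x y. x \<in> V \<Longrightarrow> y \<in> V \<Longrightarrow> \<beta> x y \<in> V" using b2 lin_in by blast
  have exp: "\<And>x. x \<in> V \<Longrightarrow> x = vsum {..<m} (\<lambda>k. g x (b k)) b"
    using rc unfolding recon_def m_def b_def by simp
  define a where "a i k = g (Am (b i)) (b k)" for i k
  define h where "h i j = \<beta> (b i) (b j)" for i j
  have hV: "\<And>i j. i < m \<Longrightarrow> j < m \<Longrightarrow> h i j \<in> V" unfolding h_def using bin bV by blast
  have a_anti: "\<And>i k. i < m \<Longrightarrow> k < m \<Longrightarrow> a i k = - a k i"
    unfolding a_def using Ask bV g_sym AV by metis
  have e1: "\<And>i j. i < m \<Longrightarrow> j < m \<Longrightarrow> \<beta> (Am (b i)) (b j) = vsum {..<m} (a i) (\<lambda>k. h k j)"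
  proof -
    fix i j assume ij: "i < m" "j < m"
    have "\<beta> (Am (b i)) (b j) = \<beta> (vsum {..<m} (a i) b) (b j)"
      using exp[OF AV[OF bV[OF ij(1)]]] unfolding a_def by simp
    also have "\<dots> = vsum {..<m} (a i) (\<lambda>k. \<beta> (b k) (b j))"
      by (rule lin_vsum[OF b1[rule_format, OF bV[OF ij(2)]], of "{..<m}" b "a i", simplified]) (simp add: bV)
    finally show "\<beta> (Am (b i)) (b j) = vsum {..<m} (a i) (\<lambda>k. h k j)" unfolding h_def .
  qed
  have e2: "\<And>i j. i < m \<Longrightarrow> j < m \<Longrightarrow> \<beta> (b i) (Am (b j)) = vsum {..<m} (a j) (\<lambda>k. h i k)"
  proof -
    fix i j assume ij: "i < m" "j < m"
    have "\<beta> (b i) (Am (b j)) = \<beta> (b i) (vsum {..<m} (a j) b)"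
      using exp[OF AV[OF bV[OF ij(2)]]] unfolding a_def by simp
    also have "\<dots> = vsum {..<m} (a j) (\<lambda>k. \<beta> (b i) (b k))"
      by (rule lin_vsum[OF b2[rule_format, OF bV[OF ij(1)]]]) (simp_all add: bV)
    finally show "\<beta> (b i) (Am (b j)) = vsum {..<m} (a j) (\<lambda>k. h i k)" unfolding h_def .
  qed
  have key: "\<And>i j. i < m \<Longrightarrow> j < m \<Longrightarrow> lam * g (h i j) (h i j)
      = (\<Sum>k<m. a i k * g (h k j) (h i j)) + (\<Sum>k<m. a j k * g (h i k) (h i j))"
  proof -
    fix i j assume ij: "i < m" "j < m"
    have hij: "h i j \<in> V" using hV ij by blast
    have z: "g (Am (h i j)) (h i j) = 0" using Ask hij g_sym[of "h i j" "Am (h i j)"] AV by force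
    have "lam * g (h i j) (h i j) = g (vadd (Am (h i j)) (vsmul lam (h i j))) (h i j)"
      using z hij AV by simp
    also have "\<dots> = g (vadd (\<beta> (Am (b i)) (b j)) (\<beta> (b i) (Am (b j)))) (h i j)"
      using eqn bV ij unfolding h_def by simp
    also have "\<dots> = g (\<beta> (Am (b i)) (b j)) (h i j) + g (\<beta> (b i) (Am (b j))) (h i j)"
      using bin AV bV ij hij by simp
    also have "g (\<beta> (Am (b i)) (b j)) (h i j) = (\<Sum>k<m. a i k * g (h k j) (h i j))"
      unfolding e1[OF ij] by (rule g_vsum1) (simp_all add: hV ij hij)
    also have "g (\<beta> (b i) (Am (b j))) (h i j) = (\<Sum>k<m. a j k * g (h i k) (h i j))"
      unfolding e2[OF ij] by (rule g_vsum1) (simp_all add: hV ij hij)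
    finally show "lam * g (h i j) (h i j) = (\<Sum>k<m. a i k * g (h k j) (h i j)) + (\<Sum>k<m. a j k * g (h i k) (h i j))" .
  qed
  define a' where "a' i k = (if i < m \<and> k < m then a i k else 0)" for i k
  have a'_anti: "\<And>i k. a' i k = - a' k i"
  proof -
    fix i k show "a' i k = - a' k i"
    proof (cases "i < m \<and> k < m")
      case True thus ?thesis unfolding a'_def using a_anti[of i k] by simp
    next
      case False thus ?thesis unfolding a'_def by auto
    qed
  qed
  have "lam * (\<Sum>i<m. \<Sum>j<m. g (h i j) (h i j)) =
      (\<Sum>j<m. \<Sum>i<m. \<Sum>k<m. a' i k * g (h k j) (h i j)) + (\<Sum>i<m. \<Sum>j<m. \<Sum>k<m. a' j k * g (h i k) (h i j))"
  proof -
    have "lam * (\<Sum>i<m. \<Sum>j<m. g (h i j) (h i j)) = (\<Sum>i<m. \<Sum>j<m. lam * g (h i j) (h i j))"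
      by (simp add: sum_distrib_left)
    also have "\<dots> = (\<Sum>i<m. \<Sum>j<m. (\<Sum>k<m. a' i k * g (h k j) (h i j)) + (\<Sum>k<m. a' j k * g (h i k) (h i j)))"
      by (intro sum.cong refl) (simp add: key a'_def)
    also have "\<dots> = (\<Sum>i<m. \<Sum>j<m. \<Sum>k<m. a' i k * g (h k j) (h i j)) + (\<Sum>i<m. \<Sum>j<m. \<Sum>k<m. a' j k * g (h i k) (h i j))"
      by (simp add: sum.distrib)
    also have "(\<Sum>i<m. \<Sum>j<m. \<Sum>k<m. a' i k * g (h k j) (h i j)) = (\<Sum>j<m. \<Sum>i<m. \<Sum>k<m. a' i k * g (h k j) (h i j))"
      by (rule sum.swap)
    finally show ?thesis .
  qed
  also have "(\<Sum>j<m. \<Sum>i<m. \<Sum>k<m. a' i k * g (h k j) (h i j)) = 0"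
  proof (rule sum.neutral, intro ballI)
    fix j assume j: "j \<in> {..<m}"
    define H where "H k i = (if k < m \<and> i < m then g (h k j) (h i j) else 0)" for k i
    have "(\<Sum>i<m. \<Sum>k<m. a' i k * g (h k j) (h i j)) = (\<Sum>i<m. \<Sum>k<m. a' i k * H k i)"
      unfolding H_def by (intro sum.cong refl) simp
    also have "\<dots> = 0"
    proof (rule antisym_sum[OF a'_anti])
      fix i k show "H i k = H k i" unfolding H_def using g_sym hV j by auto
    qed
    finally show "(\<Sum>i<m. \<Sum>k<m. a' i k * g (h k j) (h i j)) = 0" .
  qed
  also have "(\<Sum>i<m. \<Sum>j<m. \<Sum>k<m. a' j k * g (h i k) (h i j)) = 0"
  proof (rule sum.neutral, intro ballI)
    fix i assume i: "i \<in> {..<m}"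
    define H where "H k j = (if k < m \<and> j < m then g (h i k) (h i j) else 0)" for k j
    have "(\<Sum>j<m. \<Sum>k<m. a' j k * g (h i k) (h i j)) = (\<Sum>j<m. \<Sum>k<m. a' j k * H k j)"
      unfolding H_def by (intro sum.cong refl) simp
    also have "\<dots> = 0"
    proof (rule antisym_sum[OF a'_anti])
      fix j k show "H j k = H k j" unfolding H_def using g_sym hV i by auto
    qed
    finally show "(\<Sum>j<m. \<Sum>k<m. a' j k * g (h i k) (h i j)) = 0" .
  qed
  finally have "lam * (\<Sum>i<m. \<Sum>j<m. g (h i j) (h i j)) = 0" by simp
  hence N0: "(\<Sum>i<m. \<Sum>j<m. g (h i j) (h i j)) = 0" using lam by simp
  have nn: "\<And>i j. i < m \<Longrightarrow> j < m \<Longrightarrow> g (h i j) (h i j) \<ge> 0" using g_nn hV by blast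
  have nn2: "\<forall>i\<in>{..<m}. 0 \<le> (\<Sum>j<m. g (h i j) (h i j))" using nn by (auto intro!: sum_nonneg)
  have "\<forall>i\<in>{..<m}. (\<Sum>j<m. g (h i j) (h i j)) = 0"
    using sum_nonneg_eq_0_iff[OF finite_lessThan, of m "\<lambda>i. \<Sum>j<m. g (h i j) (h i j)"] N0 nn2 by blast
  hence s0: "\<And>i. i < m \<Longrightarrow> (\<Sum>j<m. g (h i j) (h i j)) = 0" by simp
  have "\<And>i j. i < m \<Longrightarrow> j < m \<Longrightarrow> g (h i j) (h i j) = 0"
  proof -
    fix i j assume i: "i < m" and j: "j < m"
    have "\<forall>j\<in>{..<m}. g (h i j) (h i j) = 0"
      using sum_nonneg_eq_0_iff[OF finite_lessThan, of m "\<lambda>j. g (h i j) (h i j)"] s0[OF i] nn i by blast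
    thus "g (h i j) (h i j) = 0" using j by simp
  qed
  hence h0: "\<And>i j. i < m \<Longrightarrow> j < m \<Longrightarrow> h i j = vzero" using g_eq0 hV by blast
  show ?thesis
  proof (intro ballI)
    fix x y assume x: "x \<in> V" and y: "y \<in> V"
    have "\<And>i. i < m \<Longrightarrow> \<beta> (b i) y = vzero"
    proof -
      fix i assume i: "i < m"
      have "\<beta> (b i) y = \<beta> (b i) (vsum {..<m} (\<lambda>k. g y (b k)) b)" using exp[OF y] by simp
      also have "\<dots> = vsum {..<m} (\<lambda>k. g y (b k)) (\<lambda>k. \<beta> (b i) (b k))"
        by (rule lin_vsum[OF b2[rule_format, OF bV[OF i]]]) (simp_all add: bV)
      also have "\<dots> = vzero" using h0 i unfolding h_def by (simp add: vsum_def vzero_def)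
      finally show "\<beta> (b i) y = vzero" .
    qed
    moreover have "\<beta> x y = vsum {..<m} (\<lambda>k. g x (b k)) (\<lambda>k. \<beta> (b k) y)"
    proof -
      have "\<beta> x y = \<beta> (vsum {..<m} (\<lambda>k. g x (b k)) b) y" using exp[OF x] by simp
      also have "\<dots> = vsum {..<m} (\<lambda>k. g x (b k)) (\<lambda>k. \<beta> (b k) y)"
        by (rule lin_vsum[OF b1[rule_format, OF y], of "{..<m}" b, simplified]) (simp add: bV)
      finally show ?thesis .
    qed
    ultimately show "\<beta> x y = vzero" by (simp add: vsum_def vzero_def)
  qed
qed


end


context hl begin
lemma brlin1: "w \<in> V \<Longrightarrow> lin_on n n (\<lambda>z. br z w)" unfolding lin_on_def by simp
end

locale hsolc = hsol + assumes cnz: "c \<noteq> 0"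
begin

definition Pi :: "vec \<Rightarrow> vec" where "Pi x = vadd x (vsmul (1/c) (Sy x))"
definition Q :: "vec \<Rightarrow> vec" where "Q x = vsmul (- (1/c)) (Sy x)"

lemma Pi_in[simp]: "x \<in> V \<Longrightarrow> Pi x \<in> V" unfolding Pi_def by simp
lemma Q_in[simp]: "x \<in> V \<Longrightarrow> Q x \<in> V" unfolding Q_def by simp
lemma Pi_add[simp]: "x \<in> V \<Longrightarrow> y \<in> V \<Longrightarrow> Pi (vadd x y) = vadd (Pi x) (Pi y)"
  unfolding Pi_def by simp (simp add: vdefs algebra_simps)
lemma Pi_smul[simp]: "x \<in> V \<Longrightarrow> Pi (vsmul a x) = vsmul a (Pi x)"
  unfolding Pi_def by simp (simp add: vdefs algebra_simps)
lemma Q_add[simp]: "x \<in> V \<Longrightarrow> y \<in> V \<Longrightarrow> Q (vadd x y) = vadd (Q x) (Q y)"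
  unfolding Q_def by simp (simp add: vdefs algebra_simps)
lemma Q_smul[simp]: "x \<in> V \<Longrightarrow> Q (vsmul a x) = vsmul a (Q x)"
  unfolding Q_def by simp (simp add: vdefs algebra_simps)
lemma Pi_sub[simp]: "x \<in> V \<Longrightarrow> y \<in> V \<Longrightarrow> Pi (vsub x y) = vsub (Pi x) (Pi y)" by (simp add: vsub_eq)
lemma Q_sub[simp]: "x \<in> V \<Longrightarrow> y \<in> V \<Longrightarrow> Q (vsub x y) = vsub (Q x) (Q y)" by (simp add: vsub_eq)
lemma Pilin: "lin_on n n Pi" unfolding lin_on_def by simp
lemma Qlin: "lin_on n n Q" unfolding lin_on_def by simp
lemma Pi_zero[simp]: "Pi vzero = vzero" using Pilin lin_zero by blast
lemma Q_zero[simp]: "Q vzero = vzero" using Qlin lin_zero by blast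

lemma PQ: "x \<in> V \<Longrightarrow> vadd (Pi x) (Q x) = x" unfolding Pi_def Q_def by (simp add: vdefs)
lemma Sy_Q_eq: "x \<in> V \<Longrightarrow> Sy x = vsmul (-c) (Q x)" unfolding Q_def using cnz by (simp add: vdefs)
lemma Sy_Pi[simp]: "x \<in> V \<Longrightarrow> Sy (Pi x) = vzero"
  unfolding Pi_def using cnz by (simp add: SySy) (simp add: vdefs)
lemma Sy_Q[simp]: "x \<in> V \<Longrightarrow> Sy (Q x) = vsmul (-c) (Q x)"
  unfolding Q_def using cnz by (simp add: SySy) (simp add: vdefs)
lemma Pi_Pi[simp]: "x \<in> V \<Longrightarrow> Pi (Pi x) = Pi x" by (subst Pi_def) (simp del: Sy_Pi add: Sy_Pi)
lemma Q_Pi[simp]: "x \<in> V \<Longrightarrow> Q (Pi x) = vzero" by (subst Q_def) (simp add: vdefs)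
lemma Pi_Q[simp]: "x \<in> V \<Longrightarrow> Pi (Q x) = vzero"
  using cnz by (subst Pi_def) (simp, simp add: vdefs)
lemma Q_Q[simp]: "x \<in> V \<Longrightarrow> Q (Q x) = Q x"
  using cnz by (subst Q_def) (simp, simp add: vdefs)
lemma Sk_Pi: "x \<in> V \<Longrightarrow> Sk (Pi x) = Pi (Sk x)" unfolding Pi_def by (simp add: SkSy)
lemma Sk_Q: "x \<in> V \<Longrightarrow> Sk (Q x) = Q (Sk x)" unfolding Q_def by (simp add: SkSy)
lemma J_Pi: "x \<in> V \<Longrightarrow> J (Pi x) = Pi (J x)" unfolding Pi_def by (simp add: SyJ)
lemma J_Q: "x \<in> V \<Longrightarrow> J (Q x) = Q (J x)" unfolding Q_def by (simp add: SyJ)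
lemma Pi_sym: "x \<in> V \<Longrightarrow> y \<in> V \<Longrightarrow> g (Pi x) y = g x (Pi y)" unfolding Pi_def by (simp add: Sy_sym)
lemma Q_sym: "x \<in> V \<Longrightarrow> y \<in> V \<Longrightarrow> g (Q x) y = g x (Q y)" unfolding Q_def by (simp add: Sy_sym)
lemma g_PiQ: "x \<in> V \<Longrightarrow> y \<in> V \<Longrightarrow> g (Pi x) (Q y) = 0" using Pi_sym[of x "Q y"] by simp
lemma D_Pi: "x \<in> V \<Longrightarrow> D (Pi x) = Pi (Sk x)" using D_split[of "Pi x"] by (simp add: Sk_Pi)
lemma D_Q: "x \<in> V \<Longrightarrow> D (Q x) = vadd (vsmul (-c) (Q x)) (Q (Sk x))" using D_split[of "Q x"] by (simp add: Sk_Q)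
lemma P_Pi: "x \<in> V \<Longrightarrow> P x = vsmul c (Pi x)"
  unfolding Pi_def using PE' cnz by (simp add: Sy_def) (simp add: vdefs algebra_simps)

lemma Sk_skew': "\<forall>x\<in>V. \<forall>y\<in>V. g (Sk x) y = - g x (Sk y)" using Sk_skew by blast

lemma brPP: assumes x: "x \<in> V" and y: "y \<in> V" shows "Q (br (Pi x) (Pi y)) = vzero"
proof -
  obtain bs where sp: "G.spans bs" using exists_spans by blast
  define \<beta> where "\<beta> x y = Q (br (Pi x) (Pi y))" for x y
  have "\<forall>x\<in>V. \<forall>y\<in>V. \<beta> x y = vzero"
  proof (rule G.GL[OF sp Sklin Sk_skew'])
    show "\<forall>y\<in>V. lin_on n n (\<lambda>x. \<beta> x y)" unfolding \<beta>_def lin_on_def by simp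
    show "\<forall>x\<in>V. lin_on n n (\<beta> x)" unfolding \<beta>_def lin_on_def by simp
    show "- c \<noteq> 0" using cnz by simp
    show "\<forall>x\<in>V. \<forall>y\<in>V. vadd (Sk (\<beta> x y)) (vsmul (- c) (\<beta> x y)) = vadd (\<beta> (Sk x) y) (\<beta> x (Sk y))"
    proof (intro ballI)
      fix x y assume x: "x \<in> V" and y: "y \<in> V"
      define w where "w = br (Pi x) (Pi y)"
      have w: "w \<in> V" unfolding w_def using x y by simp
      have Dw: "D w = vadd (br (Pi (Sk x)) (Pi y)) (br (Pi x) (Pi (Sk y)))"
        unfolding w_def using x y by (simp add: Dder D_Pi)
      have "Sk (Q w) = Q (Sk w)" by (rule Sk_Q[OF w])
      also have "Sk w = vsub (D w) (Sy w)" using D_split[OF w] by (simp add: vdefs)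
      also have "Q (vsub (D w) (Sy w)) = vsub (Q (D w)) (vsmul (-c) (Q w))" using w by (simp add: Sy_Q_eq)
      finally have "Sk (Q w) = vsub (vadd (\<beta> (Sk x) y) (\<beta> x (Sk y))) (vsmul (-c) (Q w))"
        unfolding Dw \<beta>_def using x y by simp
      thus "vadd (Sk (\<beta> x y)) (vsmul (- c) (\<beta> x y)) = vadd (\<beta> (Sk x) y) (\<beta> x (Sk y))"
        unfolding \<beta>_def w_def[symmetric] by (simp add: vdefs)
    qed
  qed
  thus ?thesis using x y unfolding \<beta>_def by blast
qed

lemma brQQ: assumes x: "x \<in> V" and y: "y \<in> V" shows "br (Q x) (Q y) = vzero"
proof -
  obtain bs where sp: "G.spans bs" using exists_spans by blast
  have Dw: "\<And>x y. x \<in> V \<Longrightarrow> y \<in> V \<Longrightarrow> D (br (Q x) (Q y)) =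
     vadd (vadd (vsmul (-c) (br (Q x) (Q y))) (br (Q (Sk x)) (Q y))) (vadd (vsmul (-c) (br (Q x) (Q y))) (br (Q x) (Q (Sk y))))"
    by (simp add: Dder D_Q)
  have Skw: "\<And>x y. x \<in> V \<Longrightarrow> y \<in> V \<Longrightarrow> Sk (br (Q x) (Q y)) = vsub (D (br (Q x) (Q y))) (vsmul (-c) (Q (br (Q x) (Q y))))"
    using D_split Sy_Q_eq by (simp add: vdefs)
  define \<beta>q where "\<beta>q x y = Q (br (Q x) (Q y))" for x y
  have q: "\<forall>x\<in>V. \<forall>y\<in>V. \<beta>q x y = vzero"
  proof (rule G.GL[OF sp Sklin Sk_skew'])
    show "\<forall>y\<in>V. lin_on n n (\<lambda>x. \<beta>q x y)" unfolding \<beta>q_def lin_on_def by simp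
    show "\<forall>x\<in>V. lin_on n n (\<beta>q x)" unfolding \<beta>q_def lin_on_def by simp
    show "c \<noteq> 0" using cnz by simp
    show "\<forall>x\<in>V. \<forall>y\<in>V. vadd (Sk (\<beta>q x y)) (vsmul c (\<beta>q x y)) = vadd (\<beta>q (Sk x) y) (\<beta>q x (Sk y))"
    proof (intro ballI)
      fix x y assume x: "x \<in> V" and y: "y \<in> V"
      have "Sk (\<beta>q x y) = Q (Sk (br (Q x) (Q y)))" unfolding \<beta>q_def using x y by (simp add: Sk_Q)
      also have "\<dots> = vsub (vadd (vadd (vsmul (-c) (\<beta>q x y)) (\<beta>q (Sk x) y)) (vadd (vsmul (-c) (\<beta>q x y)) (\<beta>q x (Sk y)))) (vsmul (-c) (\<beta>q x y))"
        unfolding Skw[OF x y] Dw[OF x y] \<beta>q_def using x y by simp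
      finally show "vadd (Sk (\<beta>q x y)) (vsmul c (\<beta>q x y)) = vadd (\<beta>q (Sk x) y) (\<beta>q x (Sk y))"
        by (simp add: vdefs fun_eq_iff algebra_simps)
    qed
  qed
  define \<beta>p where "\<beta>p x y = Pi (br (Q x) (Q y))" for x y
  have p: "\<forall>x\<in>V. \<forall>y\<in>V. \<beta>p x y = vzero"
  proof (rule G.GL[OF sp Sklin Sk_skew'])
    show "\<forall>y\<in>V. lin_on n n (\<lambda>x. \<beta>p x y)" unfolding \<beta>p_def lin_on_def by simp
    show "\<forall>x\<in>V. lin_on n n (\<beta>p x)" unfolding \<beta>p_def lin_on_def by simp
    show "2 * c \<noteq> 0" using cnz by simp
    show "\<forall>x\<in>V. \<forall>y\<in>V. vadd (Sk (\<beta>p x y)) (vsmul (2 * c) (\<beta>p x y)) = vadd (\<beta>p (Sk x) y) (\<beta>p x (Sk y))"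
    proof (intro ballI)
      fix x y assume x: "x \<in> V" and y: "y \<in> V"
      have "Sk (\<beta>p x y) = Pi (Sk (br (Q x) (Q y)))" unfolding \<beta>p_def using x y by (simp add: Sk_Pi)
      also have "\<dots> = vadd (vadd (vsmul (-c) (\<beta>p x y)) (\<beta>p (Sk x) y)) (vadd (vsmul (-c) (\<beta>p x y)) (\<beta>p x (Sk y)))"
        unfolding Skw[OF x y] Dw[OF x y] \<beta>p_def using x y by simp
      finally show "vadd (Sk (\<beta>p x y)) (vsmul (2 * c) (\<beta>p x y)) = vadd (\<beta>p (Sk x) y) (\<beta>p x (Sk y))"
        by (simp add: vdefs fun_eq_iff algebra_simps)
    qed
  qed
  have "br (Q x) (Q y) = vadd (Pi (br (Q x) (Q y))) (Q (br (Q x) (Q y)))" using PQ x y by simp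
  thus ?thesis using p q x y unfolding \<beta>p_def \<beta>q_def by simp
qed

lemma brPQ: assumes x: "x \<in> V" and y: "y \<in> V" shows "Pi (br (Pi x) (Q y)) = vzero"
proof -
  obtain bs where sp: "G.spans bs" using exists_spans by blast
  have Dw: "\<And>x y. x \<in> V \<Longrightarrow> y \<in> V \<Longrightarrow> D (br (Pi x) (Q y)) =
     vadd (br (Pi (Sk x)) (Q y)) (vadd (vsmul (-c) (br (Pi x) (Q y))) (br (Pi x) (Q (Sk y))))"
    by (simp add: Dder D_Q D_Pi)
  have Skw: "\<And>x y. x \<in> V \<Longrightarrow> y \<in> V \<Longrightarrow> Sk (br (Pi x) (Q y)) = vsub (D (br (Pi x) (Q y))) (vsmul (-c) (Q (br (Pi x) (Q y))))"
    using D_split Sy_Q_eq by (simp add: vdefs)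
  define \<beta>p where "\<beta>p x y = Pi (br (Pi x) (Q y))" for x y
  have p: "\<forall>x\<in>V. \<forall>y\<in>V. \<beta>p x y = vzero"
  proof (rule G.GL[OF sp Sklin Sk_skew'])
    show "\<forall>y\<in>V. lin_on n n (\<lambda>x. \<beta>p x y)" unfolding \<beta>p_def lin_on_def by simp
    show "\<forall>x\<in>V. lin_on n n (\<beta>p x)" unfolding \<beta>p_def lin_on_def by simp
    show "c \<noteq> 0" using cnz by simp
    show "\<forall>x\<in>V. \<forall>y\<in>V. vadd (Sk (\<beta>p x y)) (vsmul c (\<beta>p x y)) = vadd (\<beta>p (Sk x) y) (\<beta>p x (Sk y))"
    proof (intro ballI)
      fix x y assume x: "x \<in> V" and y: "y \<in> V"
      have "Sk (\<beta>p x y) = Pi (Sk (br (Pi x) (Q y)))" unfolding \<beta>p_def using x y by (simp add: Sk_Pi)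
      also have "\<dots> = vadd (\<beta>p (Sk x) y) (vadd (vsmul (-c) (\<beta>p x y)) (\<beta>p x (Sk y)))"
        unfolding Skw[OF x y] Dw[OF x y] \<beta>p_def using x y by simp
      finally show "vadd (Sk (\<beta>p x y)) (vsmul c (\<beta>p x y)) = vadd (\<beta>p (Sk x) y) (\<beta>p x (Sk y))"
        by (simp add: vdefs fun_eq_iff algebra_simps)
    qed
  qed
  thus ?thesis using x y unfolding \<beta>p_def by blast
qed

end



context ip begin
lemma ON_append_gen: assumes "ON bs" "ON cs" "\<And>i j. i < length bs \<Longrightarrow> j < length cs \<Longrightarrow> g (bs!i) (cs!j) = 0"
  shows "ON (bs @ cs)"
  unfolding ON_def
proof (intro conjI allI impI)
  show "set (bs @ cs) \<subseteq> V" using assms(1,2) unfolding ON_def by auto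
  fix i j assume ij: "i < length (bs @ cs)" "j < length (bs @ cs)"
  have bV: "\<And>k. k < length bs \<Longrightarrow> bs!k \<in> V" using ON_in assms(1) by blast
  have cV: "\<And>k. k < length cs \<Longrightarrow> cs!k \<in> V" using ON_in assms(2) by blast
  show "g ((bs @ cs) ! i) ((bs @ cs) ! j) = (if i = j then 1 else 0)"
  proof (cases "i < length bs"; cases "j < length bs")
    assume "i < length bs" "j < length bs" thus ?thesis using ON_g[OF assms(1)] by (simp add: nth_append)
  next
    assume a: "i < length bs" "\<not> j < length bs" thus ?thesis using assms(3)[of i "j - length bs"] ij by (simp add: nth_append)
  next
    assume a: "\<not> i < length bs" "j < length bs"
    thus ?thesis using assms(3)[of j "i - length bs"] ij g_sym[OF bV[of j] cV[of "i - length bs"]] by (simp add: nth_append)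
  next
    assume a: "\<not> i < length bs" "\<not> j < length bs"
    thus ?thesis using ON_g[OF assms(2), of "i - length bs" "j - length bs"] ij by (auto simp: nth_append)
  qed
qed

lemma recon_zero_orth: assumes "ON bs" "x \<in> V" "\<And>k. k < length bs \<Longrightarrow> g x (bs!k) = 0"
  shows "recon bs x = vzero"
  unfolding recon_def vsum_def vzero_def using assms by simp

lemma sp_ext2: assumes ON: "ON (bs @ cs)" and x: "x \<in> V" "recon cs x = x"
  and orth: "\<And>k. k < length bs \<Longrightarrow> g x (bs!k) = 0" shows "recon (bs @ cs) x = x"
proof -
  have ONb: "ON bs" using ON unfolding ON_def
  proof (intro conjI allI impI)
    fix i j assume "i < length bs" "j < length bs"
    thus "g (bs!i) (bs!j) = (if i = j then 1 else 0)" using ON_g[OF ON, of i j] by (simp add: nth_append)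
  qed (auto)
  have "recon bs x = vzero" by (rule recon_zero_orth[OF ONb x(1) orth])
  thus ?thesis using recon_append[of bs cs x] x by simp
qed
end

context hl begin

definition fcr0 :: "vec \<Rightarrow> real" where
  "fcr0 U = - (1/2) * tr n (J \<circ> br U) + (1/2) * tr n (br (J U))"

lemma cr_fcr0: "cr_form n br J x y = fcr0 (br x y)" unfolding cr_form_def fcr0_def by simp

lemma fcr0_add: assumes "U \<in> V" "U' \<in> V" shows "fcr0 (vadd U U') = fcr0 U + fcr0 U'"
proof -
  have "tr n (J \<circ> br (vadd U U')) = tr n (\<lambda>z. vadd ((J \<circ> br U) z) ((J \<circ> br U') z))"
    by (rule tr_cong) (use assms in simp)
  also have "\<dots> = tr n (J \<circ> br U) + tr n (J \<circ> br U')" by (rule tr_add)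
  finally have 1: "tr n (J \<circ> br (vadd U U')) = tr n (J \<circ> br U) + tr n (J \<circ> br U')" .
  have "tr n (br (J (vadd U U'))) = tr n (\<lambda>z. vadd (br (J U) z) (br (J U') z))"
    by (rule tr_cong) (use assms in simp)
  also have "\<dots> = tr n (br (J U)) + tr n (br (J U'))" by (rule tr_add)
  finally have 2: "tr n (br (J (vadd U U'))) = tr n (br (J U)) + tr n (br (J U'))" .
  show ?thesis unfolding fcr0_def 1 2 by (simp add: algebra_simps)
qed

lemma fcr0_smul: assumes "U \<in> V" shows "fcr0 (vsmul a U) = a * fcr0 U"
proof -
  have "tr n (J \<circ> br (vsmul a U)) = tr n (\<lambda>z. vsmul a ((J \<circ> br U) z))"
    by (rule tr_cong) (use assms in simp)
  also have "\<dots> = a * tr n (J \<circ> br U)" by (rule tr_smul)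
  finally have 1: "tr n (J \<circ> br (vsmul a U)) = a * tr n (J \<circ> br U)" .
  have "tr n (br (J (vsmul a U))) = tr n (\<lambda>z. vsmul a (br (J U) z))"
    by (rule tr_cong) (use assms in simp)
  also have "\<dots> = a * tr n (br (J U))" by (rule tr_smul)
  finally have 2: "tr n (br (J (vsmul a U))) = a * tr n (br (J U))" .
  show ?thesis unfolding fcr0_def 1 2 by (simp add: algebra_simps)
qed

lemma cr_op_exists: "\<exists>P. cr_operator n br J \<omega> P"
proof -
  have "\<exists>P. lin_on n n P \<and> (\<forall>x\<in>V. \<forall>y\<in>V. \<omega> (P x) y = cr_form n br J x y)"
    by (rule riesz) (simp_all add: cr_fcr0 fcr0_add fcr0_smul)
  thus ?thesis unfolding cr_operator_def by blast
qed

end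

locale built = hsolc +
  fixes bs1 bs2 :: "vec list"
  assumes ON1: "G.ON bs1" and in1: "\<And>k. k < length bs1 \<Longrightarrow> Pi (bs1!k) = bs1!k"
    and ev1: "even (length bs1)" and fix1: "\<And>w. w \<in> fvec n \<Longrightarrow> Pi w = w \<Longrightarrow> G.recon bs1 w = w"
    and ON2: "G.ON bs2" and in2: "\<And>k. k < length bs2 \<Longrightarrow> Pi (bs2!k) = vzero"
    and ev2: "even (length bs2)" and fix2: "\<And>w. w \<in> fvec n \<Longrightarrow> Pi w = vzero \<Longrightarrow> G.recon bs2 w = w"
begin

abbreviation "n1 \<equiv> length bs1"
abbreviation "n2 \<equiv> length bs2"
abbreviation "bs \<equiv> bs1 @ bs2"
abbreviation "\<iota>1 \<equiv> G.uncoord bs1"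
abbreviation "\<iota>2 \<equiv> G.uncoord bs2"
abbreviation "\<kappa>1 \<equiv> G.coord bs1"
abbreviation "\<kappa>2 \<equiv> G.coord bs2"
abbreviation "\<phi> \<equiv> G.coord bs"
abbreviation "\<psi> \<equiv> G.uncoord bs"

lemma b1V: "k < n1 \<Longrightarrow> bs1!k \<in> V" using G.ON_in ON1 by blast
lemma b2V: "k < n2 \<Longrightarrow> bs2!k \<in> V" using G.ON_in ON2 by blast

lemma g12: "x \<in> V \<Longrightarrow> y \<in> V \<Longrightarrow> Pi x = x \<Longrightarrow> Pi y = vzero \<Longrightarrow> g x y = 0"
  using Pi_sym[of x y] by simp

lemma ON12: "G.ON bs"
  by (rule G.ON_append_gen[OF ON1 ON2]) (use g12 b1V b2V in1 in2 in simp)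

lemma i1lin: "lin_on n1 n \<iota>1" using G.uncoord_lin[OF ON1] .
lemma i2lin: "lin_on n2 n \<iota>2" using G.uncoord_lin[OF ON2] .
lemma k1lin: "lin_on n n1 \<kappa>1" using G.coord_lin[OF ON1] .
lemma k2lin: "lin_on n n2 \<kappa>2" using G.coord_lin[OF ON2] .
lemma i1_in[simp]: "X \<in> fvec n1 \<Longrightarrow> \<iota>1 X \<in> V" using i1lin lin_in by blast
lemma i2_in[simp]: "X \<in> fvec n2 \<Longrightarrow> \<iota>2 X \<in> V" using i2lin lin_in by blast
lemma k1_in[simp]: "x \<in> V \<Longrightarrow> \<kappa>1 x \<in> fvec n1" using k1lin lin_in by blast
lemma k2_in[simp]: "x \<in> V \<Longrightarrow> \<kappa>2 x \<in> fvec n2" using k2lin lin_in by blast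
lemma i1_add[simp]: "X \<in> fvec n1 \<Longrightarrow> Y \<in> fvec n1 \<Longrightarrow> \<iota>1 (vadd X Y) = vadd (\<iota>1 X) (\<iota>1 Y)" using i1lin lin_add by blast
lemma i1_smul[simp]: "X \<in> fvec n1 \<Longrightarrow> \<iota>1 (vsmul a X) = vsmul a (\<iota>1 X)" using i1lin lin_smul by blast
lemma i2_add[simp]: "X \<in> fvec n2 \<Longrightarrow> Y \<in> fvec n2 \<Longrightarrow> \<iota>2 (vadd X Y) = vadd (\<iota>2 X) (\<iota>2 Y)" using i2lin lin_add by blast
lemma i2_smul[simp]: "X \<in> fvec n2 \<Longrightarrow> \<iota>2 (vsmul a X) = vsmul a (\<iota>2 X)" using i2lin lin_smul by blast
lemma i1_sub[simp]: "X \<in> fvec n1 \<Longrightarrow> Y \<in> fvec n1 \<Longrightarrow> \<iota>1 (vsub X Y) = vsub (\<iota>1 X) (\<iota>1 Y)" using i1lin lin_sub by blast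
lemma i2_sub[simp]: "X \<in> fvec n2 \<Longrightarrow> Y \<in> fvec n2 \<Longrightarrow> \<iota>2 (vsub X Y) = vsub (\<iota>2 X) (\<iota>2 Y)" using i2lin lin_sub by blast
lemma i1_zero[simp]: "\<iota>1 vzero = vzero" using i1lin lin_zero by blast
lemma i2_zero[simp]: "\<iota>2 vzero = vzero" using i2lin lin_zero by blast
lemma k1_add[simp]: "x \<in> V \<Longrightarrow> y \<in> V \<Longrightarrow> \<kappa>1 (vadd x y) = vadd (\<kappa>1 x) (\<kappa>1 y)" using k1lin lin_add by blast
lemma k1_smul[simp]: "x \<in> V \<Longrightarrow> \<kappa>1 (vsmul a x) = vsmul a (\<kappa>1 x)" using k1lin lin_smul by blast
lemma k2_add[simp]: "x \<in> V \<Longrightarrow> y \<in> V \<Longrightarrow> \<kappa>2 (vadd x y) = vadd (\<kappa>2 x) (\<kappa>2 y)" using k2lin lin_add by blast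
lemma k2_smul[simp]: "x \<in> V \<Longrightarrow> \<kappa>2 (vsmul a x) = vsmul a (\<kappa>2 x)" using k2lin lin_smul by blast
lemma k1_sub[simp]: "x \<in> V \<Longrightarrow> y \<in> V \<Longrightarrow> \<kappa>1 (vsub x y) = vsub (\<kappa>1 x) (\<kappa>1 y)" using k1lin lin_sub by blast
lemma k2_sub[simp]: "x \<in> V \<Longrightarrow> y \<in> V \<Longrightarrow> \<kappa>2 (vsub x y) = vsub (\<kappa>2 x) (\<kappa>2 y)" using k2lin lin_sub by blast

lemma k1i1[simp]: "X \<in> fvec n1 \<Longrightarrow> \<kappa>1 (\<iota>1 X) = X" using G.coord_uncoord[OF ON1] by simp
lemma k2i2[simp]: "X \<in> fvec n2 \<Longrightarrow> \<kappa>2 (\<iota>2 X) = X" using G.coord_uncoord[OF ON2] by simp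

lemma W1_i1: "X \<in> fvec n1 \<Longrightarrow> Pi (\<iota>1 X) = \<iota>1 X"
  unfolding G.uncoord_def by (rule recon_vsum_gen[OF Pilin]) (auto simp: b1V in1)
lemma W2_i2: "X \<in> fvec n2 \<Longrightarrow> Pi (\<iota>2 X) = vzero"
proof -
  assume X: "X \<in> fvec n2"
  have "Pi (\<iota>2 X) = vsum {..<n2} X (\<lambda>k. Pi (bs2!k))" unfolding G.uncoord_def
    by (rule lin_vsum[OF Pilin]) (auto simp: b2V)
  also have "\<dots> = vzero" using in2 by (simp add: vsum_def vzero_def)
  finally show ?thesis .
qed
lemma Q_i2: "X \<in> fvec n2 \<Longrightarrow> Q (\<iota>2 X) = \<iota>2 X" using PQ[of "\<iota>2 X"] W2_i2 by simp
lemma Q_i1: "X \<in> fvec n1 \<Longrightarrow> Q (\<iota>1 X) = vzero" using PQ[of "\<iota>1 X"] W1_i1[of X]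
  by (metis Q_Pi i1_in)

lemma i1k1: "w \<in> V \<Longrightarrow> Pi w = w \<Longrightarrow> \<iota>1 (\<kappa>1 w) = w" using G.uncoord_coord fix1 by simp
lemma i2k2: "w \<in> V \<Longrightarrow> Pi w = vzero \<Longrightarrow> \<iota>2 (\<kappa>2 w) = w" using G.uncoord_coord fix2 by simp

lemma k2_W1: "w \<in> V \<Longrightarrow> Pi w = w \<Longrightarrow> \<kappa>2 w = vzero"
  unfolding G.coord_def vzero_def using g12 b2V in2 by (auto simp: fun_eq_iff)
lemma k1_W2: assumes w: "w \<in> V" "Pi w = vzero" shows "\<kappa>1 w = vzero"
proof -
  have "\<And>k. k < n1 \<Longrightarrow> g w (bs1!k) = 0"
  proof -
    fix k assume k: "k < n1"
    have "g (bs1!k) w = 0" by (rule g12) (use w b1V[OF k] in1[OF k] in auto)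
    thus "g w (bs1!k) = 0" using G.g_sym[of w "bs1!k"] w b1V[OF k] by simp
  qed
  thus ?thesis unfolding G.coord_def vzero_def by (auto simp: fun_eq_iff)
qed

lemma spans12: "G.spans bs"
  unfolding G.spans_def
proof (intro conjI ballI ON12)
  fix x assume x: "x \<in> V"
  have p: "G.recon bs (Pi x) = Pi x" by (rule G.sp_ext[OF ON12]) (simp_all add: x fix1)
  have q: "G.recon bs (Q x) = Q x"
  proof (rule G.sp_ext2[OF ON12])
    show "Q x \<in> V" "G.recon bs2 (Q x) = Q x" using x fix2 by simp_all
    fix k assume k: "k < n1"
    show "g (Q x) (bs1!k) = 0" using g12[of "bs1!k" "Q x"] G.g_sym[of "Q x" "bs1!k"] b1V[OF k] in1[OF k] x by simp
  qed
  have "G.recon bs x = G.recon bs (vadd (Pi x) (Q x))" using PQ x by simp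
  also have "\<dots> = vadd (Pi x) (Q x)" using G.recon_add[OF ON12] p q x by simp
  finally show "G.recon bs x = x" using PQ x by simp
qed

lemma decomp: "x \<in> V \<Longrightarrow> x = vadd (\<iota>1 (\<kappa>1 x)) (\<iota>2 (\<kappa>2 x))"
proof -
  assume x: "x \<in> V"
  have "x = G.recon bs x" using spans12 x unfolding G.spans_def by simp
  also have "\<dots> = vadd (G.recon bs1 x) (G.recon bs2 x)" by (rule G.recon_append)
  finally show ?thesis using G.uncoord_coord by simp
qed

lemma phi_join: assumes X: "X \<in> fvec n1" and Z: "Z \<in> fvec n2"
  shows "\<phi> (vadd (\<iota>1 X) (\<iota>2 Z)) = join n1 X Z"
proof
  fix k
  have a1: "\<And>j. j < n1 \<Longrightarrow> g (\<iota>1 X) (bs1!j) = X j"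
  proof -
    fix j assume j: "j < n1"
    have "G.coord bs1 (\<iota>1 X) j = X j" using G.coord_uncoord[OF ON1 X] by simp
    thus "g (\<iota>1 X) (bs1!j) = X j" using j by (simp add: G.coord_def)
  qed
  have a2: "\<And>j. j < n2 \<Longrightarrow> g (\<iota>2 Z) (bs2!j) = Z j"
  proof -
    fix j assume j: "j < n2"
    have "G.coord bs2 (\<iota>2 Z) j = Z j" using G.coord_uncoord[OF ON2 Z] by simp
    thus "g (\<iota>2 Z) (bs2!j) = Z j" using j by (simp add: G.coord_def)
  qed
  have c1: "\<And>j. j < n2 \<Longrightarrow> g (\<iota>1 X) (bs2!j) = 0"
  proof -
    fix j assume j: "j < n2"
    show "g (\<iota>1 X) (bs2!j) = 0" by (rule g12) (use X W1_i1 b2V[OF j] in2[OF j] in auto)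
  qed
  have c2: "\<And>j. j < n1 \<Longrightarrow> g (\<iota>2 Z) (bs1!j) = 0"
  proof -
    fix j assume j: "j < n1"
    have "g (bs1!j) (\<iota>2 Z) = 0" by (rule g12) (use Z W2_i2 b1V[OF j] in1[OF j] in auto)
    thus "g (\<iota>2 Z) (bs1!j) = 0" using G.g_sym[of "\<iota>2 Z" "bs1!j"] Z b1V[OF j] by simp
  qed
  show "\<phi> (vadd (\<iota>1 X) (\<iota>2 Z)) k = join n1 X Z k"
  proof (cases "k < n1")
    case True thus ?thesis using a1 c2 X Z b1V by (simp add: G.coord_def join_def nth_append)
  next
    case False
    show ?thesis
    proof (cases "k < n1 + n2")
      case True thus ?thesis using False a2 c1 X Z b2V by (simp add: G.coord_def join_def nth_append)
    next
      case F2: False thus ?thesis using False Z by (simp add: G.coord_def join_def fvec_def)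
    qed
  qed
qed

lemma phi_decomp: "x \<in> V \<Longrightarrow> \<phi> x = join n1 (\<kappa>1 x) (\<kappa>2 x)"
  using phi_join[of "\<kappa>1 x" "\<kappa>2 x"] decomp[of x] by simp


lemma Pi_of_Q0: "w \<in> V \<Longrightarrow> Q w = vzero \<Longrightarrow> Pi w = w" using PQ[of w] by simp

definition br1 :: "vec \<Rightarrow> vec \<Rightarrow> vec" where "br1 X Y = \<kappa>1 (br (\<iota>1 X) (\<iota>1 Y))"
definition J1 :: "vec \<Rightarrow> vec" where "J1 X = \<kappa>1 (J (\<iota>1 X))"
definition \<omega>1 :: "vec \<Rightarrow> vec \<Rightarrow> real" where "\<omega>1 = (\<lambda>X Y. \<omega> (\<iota>1 X) (\<iota>1 Y))"
definition J2 :: "vec \<Rightarrow> vec" where "J2 Z = \<kappa>2 (J (\<iota>2 Z))"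
definition \<omega>2 :: "vec \<Rightarrow> vec \<Rightarrow> real" where "\<omega>2 = (\<lambda>X Y. \<omega> (\<iota>2 X) (\<iota>2 Y))"
definition th :: "vec \<Rightarrow> vec \<Rightarrow> vec" where "th X Z = \<kappa>2 (br (\<iota>1 X) (\<iota>2 Z))"

lemma W1_br: "X \<in> fvec n1 \<Longrightarrow> Y \<in> fvec n1 \<Longrightarrow> Pi (br (\<iota>1 X) (\<iota>1 Y)) = br (\<iota>1 X) (\<iota>1 Y)"
  using brPP[of "\<iota>1 X" "\<iota>1 Y"] W1_i1 by (intro Pi_of_Q0) simp_all
lemma W1_J: "X \<in> fvec n1 \<Longrightarrow> Pi (J (\<iota>1 X)) = J (\<iota>1 X)" using J_Pi[of "\<iota>1 X"] W1_i1 by simp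
lemma W2_J: "Z \<in> fvec n2 \<Longrightarrow> Pi (J (\<iota>2 Z)) = vzero" using J_Pi[of "\<iota>2 Z"] W2_i2 by simp
lemma W2_th: "X \<in> fvec n1 \<Longrightarrow> Z \<in> fvec n2 \<Longrightarrow> Pi (br (\<iota>1 X) (\<iota>2 Z)) = vzero"
  using brPQ[of "\<iota>1 X" "\<iota>2 Z"] W1_i1 Q_i2 by simp
lemma br22: "Z \<in> fvec n2 \<Longrightarrow> W \<in> fvec n2 \<Longrightarrow> br (\<iota>2 Z) (\<iota>2 W) = vzero"
  using brQQ[of "\<iota>2 Z" "\<iota>2 W"] Q_i2 by simp

lemma br1_in[simp]: "X \<in> fvec n1 \<Longrightarrow> Y \<in> fvec n1 \<Longrightarrow> br1 X Y \<in> fvec n1" unfolding br1_def by simp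
lemma J1_in[simp]: "X \<in> fvec n1 \<Longrightarrow> J1 X \<in> fvec n1" unfolding J1_def by simp
lemma J2_in[simp]: "Z \<in> fvec n2 \<Longrightarrow> J2 Z \<in> fvec n2" unfolding J2_def by simp
lemma th_in[simp]: "X \<in> fvec n1 \<Longrightarrow> Z \<in> fvec n2 \<Longrightarrow> th X Z \<in> fvec n2" unfolding th_def by simp

lemma i1_br1: "X \<in> fvec n1 \<Longrightarrow> Y \<in> fvec n1 \<Longrightarrow> \<iota>1 (br1 X Y) = br (\<iota>1 X) (\<iota>1 Y)"
  unfolding br1_def using i1k1 W1_br by simp
lemma i1_J1: "X \<in> fvec n1 \<Longrightarrow> \<iota>1 (J1 X) = J (\<iota>1 X)"
  unfolding J1_def using i1k1 W1_J by simp
lemma i2_J2: "Z \<in> fvec n2 \<Longrightarrow> \<iota>2 (J2 Z) = J (\<iota>2 Z)"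
  unfolding J2_def using i2k2 W2_J by simp
lemma i2_th: "X \<in> fvec n1 \<Longrightarrow> Z \<in> fvec n2 \<Longrightarrow> \<iota>2 (th X Z) = br (\<iota>1 X) (\<iota>2 Z)"
  unfolding th_def using i2k2 W2_th by simp

lemma inj1: "inj_on \<iota>1 (fvec n1)" by (rule inj_on_inverseI[of _ \<kappa>1]) simp
lemma inj2: "inj_on \<iota>2 (fvec n2)" by (rule inj_on_inverseI[of _ \<kappa>2]) simp
lemma eq2: "X \<in> fvec n2 \<Longrightarrow> Y \<in> fvec n2 \<Longrightarrow> \<iota>2 X = \<iota>2 Y \<Longrightarrow> X = Y"
  using inj2 unfolding inj_on_def by blast

lemma H1': "hermitian_lie n1 br1 J1 \<omega>1"
  unfolding \<omega>1_def by (rule transport[OF i1lin inj1 ev1]) (simp_all add: i1_br1 i1_J1)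

lemma H2': "hermitian_lie n2 zero_br J2 \<omega>2"
  unfolding \<omega>2_def by (rule transport[OF i2lin inj2 ev2]) (simp_all add: zero_br_def br22 i2_J2)

lemma R': "representation n1 n2 br1 th"
  unfolding representation_def
proof (intro conjI ballI allI)
  fix X assume X: "X \<in> fvec n1"
  show "lin_on n2 n2 (th X)" unfolding lin_on_def th_def using X by simp
next
  fix X Y Z assume X: "X \<in> fvec n1" "Y \<in> fvec n1" and Z: "Z \<in> fvec n2"
  show "th (vadd X Y) Z = vadd (th X Z) (th Y Z)" unfolding th_def using X Z by simp
  show "th (br1 X Y) Z = vsub (th X (th Y Z)) (th Y (th X Z))"
  proof (rule eq2)
    show "th (br1 X Y) Z \<in> fvec n2" "vsub (th X (th Y Z)) (th Y (th X Z)) \<in> fvec n2" using X Z by simp_all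
    define a where "a = \<iota>1 X"
    define b where "b = \<iota>1 Y"
    define z where "z = \<iota>2 Z"
    have abz: "a \<in> V" "b \<in> V" "z \<in> V" unfolding a_def b_def z_def using X Z by simp_all
    have jac: "vadd (br a (br b z)) (vadd (br b (br z a)) (br z (br a b))) = vzero" using A.br_jac[of a b z] abz by simp
    have e1: "br z (br a b) = vsmul (-1) (br (br a b) z)" using A.br_anti[of z "br a b"] abz by simp
    have e2: "br z a = vsmul (-1) (br a z)" using A.br_anti[of z a] abz by simp
    have "br (br a b) z = vsub (br a (br b z)) (br b (br a z))"
      using jac abz unfolding e1 e2 by simp (simp add: vdefs fun_eq_iff algebra_simps)
    thus "\<iota>2 (th (br1 X Y) Z) = \<iota>2 (vsub (th X (th Y Z)) (th Y (th X Z)))"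
      using X Z by (simp add: i2_th i1_br1 a_def b_def z_def)
  qed
next
  fix a X Z assume X: "X \<in> fvec n1" and Z: "Z \<in> fvec n2"
  show "th (vsmul a X) Z = vsmul a (th X Z)" unfolding th_def using X Z by simp
qed

lemma C1': "cond1 n1 n2 J1 J2 th"
  unfolding cond1_def
proof (intro ballI)
  fix X Z assume X: "X \<in> fvec n1" and Z: "Z \<in> fvec n2"
  show "vsub (th (J1 X) (J2 Z)) (J2 (th (J1 X) Z)) = J2 (vsub (th X (J2 Z)) (J2 (th X Z)))"
  proof (rule eq2)
    show "vsub (th (J1 X) (J2 Z)) (J2 (th (J1 X) Z)) \<in> fvec n2" "J2 (vsub (th X (J2 Z)) (J2 (th X Z))) \<in> fvec n2"
      using X Z by simp_all
    define a where "a = \<iota>1 X"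
    define z where "z = \<iota>2 Z"
    have az: "a \<in> V" "z \<in> V" unfolding a_def z_def using X Z by simp_all
    have int: "br (J a) (J z) = vadd (br a z) (vadd (J (br (J a) z)) (J (br a (J z))))" using A.J1int[of a z] az by simp
    have jj: "J (J (br a z)) = vsmul (-1) (br a z)" using A.J1J1[of "br a z"] az by simp
    have "vsub (br (J a) (J z)) (J (br (J a) z)) = vsub (J (br a (J z))) (J (J (br a z)))"
      unfolding int jj using az by (simp add: vdefs fun_eq_iff)
    moreover have "\<iota>2 (vsub (th (J1 X) (J2 Z)) (J2 (th (J1 X) Z))) = vsub (br (J a) (J z)) (J (br (J a) z))"
      using X Z by (simp add: i2_th i2_J2 i1_J1 a_def z_def)
    moreover have "\<iota>2 (J2 (vsub (th X (J2 Z)) (J2 (th X Z)))) = vsub (J (br a (J z))) (J (J (br a z)))"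
      using X Z by (simp add: i2_th i2_J2 i1_J1 a_def z_def)
    ultimately show "\<iota>2 (vsub (th (J1 X) (J2 Z)) (J2 (th (J1 X) Z))) = \<iota>2 (J2 (vsub (th X (J2 Z)) (J2 (th X Z))))"
      by simp
  qed
qed


sublocale S: sdata n1 n2 br1 J1 \<omega>1 J2 \<omega>2 th
  by unfold_locales (rule H1', rule H2', rule R')

lemma cross: assumes X: "X \<in> fvec n1" and W: "W \<in> fvec n2" shows "\<omega> (\<iota>1 X) (\<iota>2 W) = 0" "\<omega> (\<iota>2 W) (\<iota>1 X) = 0"
proof -
  have "g (\<iota>1 X) (J (\<iota>2 W)) = 0" by (rule g12) (use X W W1_i1 W2_J in simp_all)
  thus "\<omega> (\<iota>1 X) (\<iota>2 W) = 0" using om_g X W by simp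
  thus "\<omega> (\<iota>2 W) (\<iota>1 X) = 0" using A.om1_anti[of "\<iota>2 W" "\<iota>1 X"] X W by simp
qed

lemma br_decomp: assumes X: "X \<in> fvec n1" "Y \<in> fvec n1" and Z: "Z \<in> fvec n2" "W \<in> fvec n2"
  shows "br (vadd (\<iota>1 X) (\<iota>2 Z)) (vadd (\<iota>1 Y) (\<iota>2 W)) = vadd (\<iota>1 (br1 X Y)) (\<iota>2 (vsub (th X W) (th Y Z)))"
proof -
  have a: "br (\<iota>2 Z) (\<iota>1 Y) = vsmul (-1) (br (\<iota>1 Y) (\<iota>2 Z))" using A.br_anti[of "\<iota>2 Z" "\<iota>1 Y"] X Z by simp
  show ?thesis using X Z by (simp add: a br22 i1_br1 i2_th) (simp add: vdefs fun_eq_iff)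
qed

lemma hiso: "herm_iso n br J \<omega> (n1+n2) (sd_br n1 br1 th) (sd_J n1 J1 J2) (sd_\<omega> n1 \<omega>1 \<omega>2) \<phi>"
  unfolding herm_iso_def
proof (intro conjI ballI)
  show "lin_on n (n1 + n2) \<phi>" using G.coord_lin[OF ON12] by simp
  show "bij_betw \<phi> V (fvec (n1 + n2))" using G.coord_bij[OF spans12] by simp
next
  fix x y assume x: "x \<in> V" and y: "y \<in> V"
  have dx: "x = vadd (\<iota>1 (\<kappa>1 x)) (\<iota>2 (\<kappa>2 x))" and dy: "y = vadd (\<iota>1 (\<kappa>1 y)) (\<iota>2 (\<kappa>2 y))"
    using decomp x y by blast+
  have "\<phi> (br x y) = \<phi> (vadd (\<iota>1 (br1 (\<kappa>1 x) (\<kappa>1 y))) (\<iota>2 (vsub (th (\<kappa>1 x) (\<kappa>2 y)) (th (\<kappa>1 y) (\<kappa>2 x)))))"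
    using br_decomp[of "\<kappa>1 x" "\<kappa>1 y" "\<kappa>2 x" "\<kappa>2 y"] x y dx dy by simp
  also have "\<dots> = join n1 (br1 (\<kappa>1 x) (\<kappa>1 y)) (vsub (th (\<kappa>1 x) (\<kappa>2 y)) (th (\<kappa>1 y) (\<kappa>2 x)))"
    using x y by (intro phi_join) simp_all
  also have "\<dots> = sd_br n1 br1 th (\<phi> x) (\<phi> y)" using x y by (simp add: phi_decomp)
  finally show "\<phi> (br x y) = sd_br n1 br1 th (\<phi> x) (\<phi> y)" .
  have "\<omega> x y = \<omega> (vadd (\<iota>1 (\<kappa>1 x)) (\<iota>2 (\<kappa>2 x))) (vadd (\<iota>1 (\<kappa>1 y)) (\<iota>2 (\<kappa>2 y)))" using dx dy by simp
  also have "\<dots> = \<omega>1 (\<kappa>1 x) (\<kappa>1 y) + \<omega>2 (\<kappa>2 x) (\<kappa>2 y)"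
    using x y cross[of "\<kappa>1 x" "\<kappa>2 y"] cross[of "\<kappa>1 y" "\<kappa>2 x"] unfolding \<omega>1_def \<omega>2_def by simp
  also have "\<dots> = sd_\<omega> n1 \<omega>1 \<omega>2 (\<phi> x) (\<phi> y)" using x y by (simp add: phi_decomp)
  finally show "sd_\<omega> n1 \<omega>1 \<omega>2 (\<phi> x) (\<phi> y) = \<omega> x y" by simp
next
  fix x assume x: "x \<in> V"
  have dx: "x = vadd (\<iota>1 (\<kappa>1 x)) (\<iota>2 (\<kappa>2 x))" using decomp x by blast
  have "J x = vadd (\<iota>1 (J1 (\<kappa>1 x))) (\<iota>2 (J2 (\<kappa>2 x)))"
    using x by (subst dx) (simp add: i1_J1 i2_J2)
  hence "\<phi> (J x) = join n1 (J1 (\<kappa>1 x)) (J2 (\<kappa>2 x))" using x phi_join by simp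
  thus "\<phi> (J x) = sd_J n1 J1 J2 (\<phi> x)" using x by (simp add: phi_decomp)
qed


lemma phi_i1: "X \<in> fvec n1 \<Longrightarrow> \<phi> (\<iota>1 X) = join n1 X vzero"
  using phi_join[of X vzero] by simp

lemma cr_id: assumes X: "X \<in> fvec n1" and Y: "Y \<in> fvec n1"
  shows "cr_form n1 br1 J1 X Y + S.pth X Y = c * \<omega>1 X Y"
proof -
  have iso: "herm_iso n br J \<omega> (n1+n2) (sd_br n1 br1 th) (sd_J n1 J1 J2) (sd_\<omega> n1 \<omega>1 \<omega>2) \<phi>" by (rule hiso)
  have ON: "G.ON bs" by (rule ON12)
  have "cr_form n1 br1 J1 X Y + S.pth X Y = cr_form (n1+n2) (sd_br n1 br1 th) (sd_J n1 J1 J2) (join n1 X vzero) (join n1 Y vzero)"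
    using S.cr_sd[of X Y vzero vzero] X Y by simp
  also have "\<dots> = cr_form (n1+n2) (sd_br n1 br1 th) (sd_J n1 J1 J2) (\<phi> (\<iota>1 X)) (\<phi> (\<iota>1 Y))"
    using phi_i1 X Y by simp
  also have "\<dots> = cr_form n br J (\<iota>1 X) (\<iota>1 Y)"
  proof (rule cr_form_iso)
    show "lin_on n (n1 + n2) \<phi>" using G.coord_lin[OF ON] by simp
    show "lin_on (n1 + n2) n \<psi>" using G.uncoord_lin[OF ON] by simp
    show "\<forall>x\<in>V. \<psi> (\<phi> x) = x" using spans12 G.uncoord_coord unfolding G.spans_def by simp
    show "\<forall>z\<in>fvec (n1 + n2). \<phi> (\<psi> z) = z" using G.coord_uncoord[OF ON] by simp
    show "\<forall>x\<in>V. \<forall>y\<in>V. \<phi> (br x y) = sd_br n1 br1 th (\<phi> x) (\<phi> y)" using iso unfolding herm_iso_def by blast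
    show "\<forall>x\<in>V. \<phi> (J x) = sd_J n1 J1 J2 (\<phi> x)" using iso unfolding herm_iso_def by blast
  qed (use X Y in simp_all)
  also have "\<dots> = \<omega> (P (\<iota>1 X)) (\<iota>1 Y)" using Pcr X Y by simp
  also have "\<dots> = c * \<omega>1 X Y" using P_Pi[of "\<iota>1 X"] W1_i1 X Y unfolding \<omega>1_def by simp
  finally show ?thesis .
qed

lemma C2': "cond2 n1 n2 br1 J1 \<omega>1 J2 th c"
proof -
  interpret H1: hl n1 br1 J1 \<omega>1 by unfold_locales (rule H1')
  obtain P1 where P1: "cr_operator n1 br1 J1 \<omega>1 P1" using H1.cr_op_exists by blast
  have P1l: "lin_on n1 n1 P1" using P1 unfolding cr_operator_def by blast
  define Pt where "Pt X = vsub (vsmul c X) (P1 X)" for X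
  have Pt: "P_theta_op n1 n2 br1 J1 \<omega>1 J2 th Pt"
    unfolding P_theta_op_def
  proof (intro conjI ballI)
    show "lin_on n1 n1 Pt" unfolding lin_on_def Pt_def using P1l lin_in[OF P1l]
      by (auto simp: lin_add[OF P1l] lin_smul[OF P1l]) (simp_all add: vdefs algebra_simps)
    fix X Y assume X: "X \<in> fvec n1" and Y: "Y \<in> fvec n1"
    have "\<omega>1 (Pt X) Y = c * \<omega>1 X Y - \<omega>1 (P1 X) Y" unfolding Pt_def using X Y lin_in[OF P1l X] by simp
    also have "\<omega>1 (P1 X) Y = cr_form n1 br1 J1 X Y" using P1 X Y unfolding cr_operator_def by blast
    finally show "\<omega>1 (Pt X) Y = - (1 / 2) * tr n2 (J2 \<circ> th (br1 X Y)) + 1 / 2 * tr n2 (th (J1 (br1 X Y)))"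
      using cr_id[OF X Y] unfolding S.pth_def by simp
  qed
  have "\<forall>X\<in>fvec n1. P1 X = vsub (vsmul c X) (Pt X)" unfolding Pt_def by (simp add: vdefs)
  thus ?thesis unfolding cond2_def using P1 Pt by blast
qed

end



context hsolc begin

lemma exists_built: "\<exists>bs1 bs2. built n br J \<omega> P c D Dt bs1 bs2"
proof -
  let ?W1 = "{x \<in> V. Pi x = x}"
  let ?W2 = "{x \<in> V. Pi x = vzero}"
  have "\<exists>bs. G.ON bs \<and> set bs \<subseteq> ?W1 \<and> even (length bs) \<and> (\<forall>v\<in>set (map (\<lambda>k. Pi (ebas k)) [0..<n]). G.recon bs v = v)
     \<and> (\<forall>k<length bs. G.recon bs (J (bs!k)) = J (bs!k))"
    by (rule G.GS) (auto simp: J_Pi[symmetric])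
  then obtain bs1 where b1: "G.ON bs1" "set bs1 \<subseteq> ?W1" "even (length bs1)"
    "\<forall>v\<in>set (map (\<lambda>k. Pi (ebas k)) [0..<n]). G.recon bs1 v = v" by blast
  have "\<exists>bs. G.ON bs \<and> set bs \<subseteq> ?W2 \<and> even (length bs) \<and> (\<forall>v\<in>set (map (\<lambda>k. Q (ebas k)) [0..<n]). G.recon bs v = v)
     \<and> (\<forall>k<length bs. G.recon bs (J (bs!k)) = J (bs!k))"
    by (rule G.GS) (auto simp: J_Pi[symmetric])
  then obtain bs2 where b2: "G.ON bs2" "set bs2 \<subseteq> ?W2" "even (length bs2)"
    "\<forall>v\<in>set (map (\<lambda>k. Q (ebas k)) [0..<n]). G.recon bs2 v = v" by blast
  have fix1: "\<And>w. w \<in> V \<Longrightarrow> Pi w = w \<Longrightarrow> G.recon bs1 w = w"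
  proof -
    fix w assume w: "w \<in> V" "Pi w = w"
    have "Pi w = Pi (vsum {..<n} w ebas)" using fvec_expand[OF w(1)] by simp
    also have "\<dots> = vsum {..<n} w (\<lambda>k. Pi (ebas k))" by (rule lin_vsum[OF Pilin]) auto
    finally have e: "w = vsum {..<n} w (\<lambda>k. Pi (ebas k))" using w by simp
    have "G.recon bs1 (vsum {..<n} w (\<lambda>k. Pi (ebas k))) = vsum {..<n} w (\<lambda>k. Pi (ebas k))"
      by (rule recon_vsum_gen[OF G.recon_lin[OF b1(1)]]) (use b1(4) in auto)
    thus "G.recon bs1 w = w" using e by simp
  qed
  have fix2: "\<And>w. w \<in> V \<Longrightarrow> Pi w = vzero \<Longrightarrow> G.recon bs2 w = w"
  proof -
    fix w assume w: "w \<in> V" "Pi w = vzero"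
    have "w = Q w" using PQ[OF w(1)] w by simp
    also have "Q w = Q (vsum {..<n} w ebas)" using fvec_expand[OF w(1)] by simp
    also have "\<dots> = vsum {..<n} w (\<lambda>k. Q (ebas k))" by (rule lin_vsum[OF Qlin]) auto
    finally have e: "w = vsum {..<n} w (\<lambda>k. Q (ebas k))" .
    have "G.recon bs2 (vsum {..<n} w (\<lambda>k. Q (ebas k))) = vsum {..<n} w (\<lambda>k. Q (ebas k))"
      by (rule recon_vsum_gen[OF G.recon_lin[OF b2(1)]]) (use b2(4) in auto)
    thus "G.recon bs2 w = w" using e by simp
  qed
  have "built n br J \<omega> P c D Dt bs1 bs2"
  proof unfold_locales
    show "G.ON bs1" "G.ON bs2" "even (length bs1)" "even (length bs2)" using b1 b2 by auto
    show "\<And>k. k < length bs1 \<Longrightarrow> Pi (bs1 ! k) = bs1 ! k" using b1(2) nth_mem by blast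
    show "\<And>k. k < length bs2 \<Longrightarrow> Pi (bs2 ! k) = vzero" using b2(2) nth_mem by blast
  qed (use fix1 fix2 in auto)
  thus ?thesis by blast
qed

lemma conv_c: "\<exists>n1 n2 br1 J1 \<omega>1 J2 \<omega>2 \<theta> c \<phi>.
         hermitian_lie n1 br1 J1 \<omega>1 \<and> hermitian_lie n2 zero_br J2 \<omega>2 \<and>
         representation n1 n2 br1 \<theta> \<and> cond1 n1 n2 J1 J2 \<theta> \<and> cond2 n1 n2 br1 J1 \<omega>1 J2 \<theta> c \<and>
         herm_iso n br J \<omega> (n1+n2) (sd_br n1 br1 \<theta>) (sd_J n1 J1 J2) (sd_\<omega> n1 \<omega>1 \<omega>2) \<phi>"
proof -
  obtain bs1 bs2 where B: "built n br J \<omega> P c D Dt bs1 bs2" using exists_built by blast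
  interpret B: built n br J \<omega> P c D Dt bs1 bs2 by (rule B)
  show ?thesis using B.H1' B.H2' B.R' B.C1' B.C2' B.hiso by blast
qed

end

context hsol begin

lemma pr1_id: "x \<in> V \<Longrightarrow> pr1 n x = x" by (auto simp: pr1_def fvec_def fun_eq_iff)
lemma join_id: "x \<in> V \<Longrightarrow> join n x vzero = x" by (auto simp: join_def fvec_def fun_eq_iff vzero_def)

lemma conv_0: assumes c0: "c = 0" shows "\<exists>n1 n2 br1 J1 \<omega>1 J2 \<omega>2 \<theta> c \<phi>.
         hermitian_lie n1 br1 J1 \<omega>1 \<and> hermitian_lie n2 zero_br J2 \<omega>2 \<and>
         representation n1 n2 br1 \<theta> \<and> cond1 n1 n2 J1 J2 \<theta> \<and> cond2 n1 n2 br1 J1 \<omega>1 J2 \<theta> c \<and>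
         herm_iso n br J \<omega> (n1+n2) (sd_br n1 br1 \<theta>) (sd_J n1 J1 J2) (sd_\<omega> n1 \<omega>1 \<omega>2) \<phi>"
proof (intro exI conjI)
  show "hermitian_lie n br J \<omega>" by (rule H)
  show "hermitian_lie 0 zero_br tJ2 t\<omega>2" by (rule triv_herm)
  show "representation n 0 br tth" by (rule triv_rep[OF Lie])
  show "cond1 n 0 J tJ2 tth" unfolding cond1_def tJ2_def tth_def by simp
  show "cond2 n 0 br J \<omega> tJ2 tth 0" unfolding cond2_def
  proof (intro exI conjI)
    show "cr_operator n br J \<omega> P" by (rule PO)
    show "P_theta_op n 0 br J \<omega> tJ2 tth (\<lambda>x. vzero)" unfolding P_theta_op_def lin_on_def by (simp add: tr_def)
    show "\<forall>X\<in>V. P X = vsub (vsmul 0 X) vzero" using c0_P[OF c0] by (simp add: vdefs)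
  qed
  show "herm_iso n br J \<omega> (n + 0) (sd_br n br tth) (sd_J n J tJ2) (sd_\<omega> n \<omega> t\<omega>2) id"
    unfolding herm_iso_def
  proof (intro conjI ballI)
    show "lin_on n (n + 0) id" unfolding lin_on_def by simp
    show "bij_betw id V (fvec (n + 0))" by simp
    fix x y assume x: "x \<in> V" and y: "y \<in> V"
    show "id (br x y) = sd_br n br tth (id x) (id y)" unfolding sd_br_def tth_def using x y by (simp add: pr1_id join_id)
    show "sd_\<omega> n \<omega> t\<omega>2 (id x) (id y) = \<omega> x y" unfolding sd_\<omega>_def t\<omega>2_def using x y by (simp add: pr1_id)
  next
    fix x assume x: "x \<in> V"
    show "id (J x) = sd_J n J tJ2 (id x)" unfolding sd_J_def tJ2_def using x by (simp add: pr1_id join_id)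
  qed
qed

lemma conv: "\<exists>n1 n2 br1 J1 \<omega>1 J2 \<omega>2 \<theta> c \<phi>.
         hermitian_lie n1 br1 J1 \<omega>1 \<and> hermitian_lie n2 zero_br J2 \<omega>2 \<and>
         representation n1 n2 br1 \<theta> \<and> cond1 n1 n2 J1 J2 \<theta> \<and> cond2 n1 n2 br1 J1 \<omega>1 J2 \<theta> c \<and>
         herm_iso n br J \<omega> (n1+n2) (sd_br n1 br1 \<theta>) (sd_J n1 J1 J2) (sd_\<omega> n1 \<omega>1 \<omega>2) \<phi>"
proof (cases "c = 0")
  case True thus ?thesis by (rule conv_0)
next
  case False
  interpret C: hsolc n br J \<omega> P c D Dt by unfold_locales (rule False)
  show ?thesis by (rule C.conv_c)
qed

end

theorem corollary4p3:
  shows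
  "(\<forall>n1 n2 br1 J1 \<omega>1 J2 \<omega>2 \<theta> c.
      hermitian_lie n1 br1 J1 \<omega>1 \<and> hermitian_lie n2 zero_br J2 \<omega>2 \<and>
      representation n1 n2 br1 \<theta> \<and> cond1 n1 n2 J1 J2 \<theta> \<and> cond2 n1 n2 br1 J1 \<omega>1 J2 \<theta> c \<longrightarrow>
        hermitian_lie (n1+n2) (sd_br n1 br1 \<theta>) (sd_J n1 J1 J2) (sd_\<omega> n1 \<omega>1 \<omega>2) \<and>
        cr_soliton (n1+n2) (sd_br n1 br1 \<theta>) (sd_J n1 J1 J2) (sd_\<omega> n1 \<omega>1 \<omega>2) \<and>
        (\<forall>P. cr_operator (n1+n2) (sd_br n1 br1 \<theta>) (sd_J n1 J1 J2) (sd_\<omega> n1 \<omega>1 \<omega>2) P \<longrightarrow>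
           (\<forall>X\<in>fvec n1. P (join n1 X vzero) = vsmul c (join n1 X vzero)) \<and>
           (\<forall>Z\<in>fvec n2. P (join n1 vzero Z) = vzero)) \<and>
        (kaehler (n1+n2) (sd_br n1 br1 \<theta>) (sd_J n1 J1 J2) (sd_\<omega> n1 \<omega>1 \<omega>2) \<longleftrightarrow>
           closed_form n1 br1 \<omega>1 \<and> (\<forall>X\<in>fvec n1. in_sp n2 \<omega>2 (\<theta> X))) \<and>
        ((\<forall>X\<in>fvec n1. in_sp n2 \<omega>2 (\<theta> X)) \<longleftrightarrow>
           (\<forall>X\<in>fvec n1. is_transpose n2 (metric \<omega>2 J2) (\<theta> X) (J2 \<circ> \<theta> X \<circ> J2))))
   \<and>
   (\<forall>n br J \<omega>. hermitian_lie n br J \<omega> \<and> cr_soliton n br J \<omega> \<longrightarrow>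
      (\<exists>n1 n2 br1 J1 \<omega>1 J2 \<omega>2 \<theta> c \<phi>.
         hermitian_lie n1 br1 J1 \<omega>1 \<and> hermitian_lie n2 zero_br J2 \<omega>2 \<and>
         representation n1 n2 br1 \<theta> \<and> cond1 n1 n2 J1 J2 \<theta> \<and> cond2 n1 n2 br1 J1 \<omega>1 J2 \<theta> c \<and>
         herm_iso n br J \<omega> (n1+n2) (sd_br n1 br1 \<theta>) (sd_J n1 J1 J2) (sd_\<omega> n1 \<omega>1 \<omega>2) \<phi>))"
proof (intro conjI allI impI)
  fix n1 n2 br1 J1 \<omega>1 J2 \<omega>2 \<theta> c
  assume h: "hermitian_lie n1 br1 J1 \<omega>1 \<and> hermitian_lie n2 zero_br J2 \<omega>2 \<and>
      representation n1 n2 br1 \<theta> \<and> cond1 n1 n2 J1 J2 \<theta> \<and> cond2 n1 n2 br1 J1 \<omega>1 J2 \<theta> c"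
  interpret S: sdata n1 n2 br1 J1 \<omega>1 J2 \<omega>2 \<theta> using h by unfold_locales blast+
  have c1: "cond1 n1 n2 J1 J2 \<theta>" and c2: "cond2 n1 n2 br1 J1 \<omega>1 J2 \<theta> c" using h by blast+
  show "hermitian_lie (n1+n2) (sd_br n1 br1 \<theta>) (sd_J n1 J1 J2) (sd_\<omega> n1 \<omega>1 \<omega>2)" by (rule S.sd_herm[OF c1])
  show "cr_soliton (n1+n2) (sd_br n1 br1 \<theta>) (sd_J n1 J1 J2) (sd_\<omega> n1 \<omega>1 \<omega>2)" by (rule S.sd_soliton[OF c1 c2])
  show "kaehler (n1+n2) (sd_br n1 br1 \<theta>) (sd_J n1 J1 J2) (sd_\<omega> n1 \<omega>1 \<omega>2) \<longleftrightarrow>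
           closed_form n1 br1 \<omega>1 \<and> (\<forall>X\<in>fvec n1. in_sp n2 \<omega>2 (\<theta> X))" by (rule S.kaehler_sd[OF c1])
  show "(\<forall>X\<in>fvec n1. in_sp n2 \<omega>2 (\<theta> X)) \<longleftrightarrow>
           (\<forall>X\<in>fvec n1. is_transpose n2 (metric \<omega>2 J2) (\<theta> X) (J2 \<circ> \<theta> X \<circ> J2))" by (rule S.sp_transpose)
  show "\<forall>X\<in>fvec n1. P (join n1 X vzero) = vsmul c (join n1 X vzero)"
    if P: "cr_operator (n1+n2) (sd_br n1 br1 \<theta>) (sd_J n1 J1 J2) (sd_\<omega> n1 \<omega>1 \<omega>2) P" for P
  proof
    fix X assume X: "X \<in> fvec n1"
    show "P (join n1 X vzero) = vsmul c (join n1 X vzero)"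
      using S.P_unique[OF c2 P, of "join n1 X vzero"] X unfolding S.Psd_def by (simp add: join_smul)
  qed
  show "\<forall>Z\<in>fvec n2. P (join n1 vzero Z) = vzero"
    if P: "cr_operator (n1+n2) (sd_br n1 br1 \<theta>) (sd_J n1 J1 J2) (sd_\<omega> n1 \<omega>1 \<omega>2) P" for P
  proof
    fix Z assume Z: "Z \<in> fvec n2"
    show "P (join n1 vzero Z) = vzero"
      using S.P_unique[OF c2 P, of "join n1 vzero Z"] Z unfolding S.Psd_def by (simp add: join_zero)
  qed
next
  fix n br J \<omega>
  assume h: "hermitian_lie n br J \<omega> \<and> cr_soliton n br J \<omega>"
  then obtain P c D Dt where s: "cr_operator n br J \<omega> P" "derivation n br D"
    "\<forall>x\<in>fvec n. D (J x) = J (D x)" "is_transpose n (metric \<omega> J) D Dt"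
    "\<forall>x\<in>fvec n. P x = vadd (vsmul c x) (vsmul (1/2) (vadd (D x) (Dt x)))"
    unfolding cr_soliton_def by blast
  interpret hsol n br J \<omega> P c D Dt using h s by unfold_locales blast+
  show "\<exists>n1 n2 br1 J1 \<omega>1 J2 \<omega>2 \<theta> c \<phi>.
         hermitian_lie n1 br1 J1 \<omega>1 \<and> hermitian_lie n2 zero_br J2 \<omega>2 \<and>
         representation n1 n2 br1 \<theta> \<and> cond1 n1 n2 J1 J2 \<theta> \<and> cond2 n1 n2 br1 J1 \<omega>1 J2 \<theta> c \<and>
         herm_iso n br J \<omega> (n1+n2) (sd_br n1 br1 \<theta>) (sd_J n1 J1 J2) (sd_\<omega> n1 \<omega>1 \<omega>2) \<phi>"
    by (rule conv)
qed



end
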